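(* Let $\Gamma$ be a quantum graph with an action of a finite group $G$ such that no element of $G$ maps a vertex to an adjacent vertex, let $H\le G$ be a subgroup and $R$ a finite-dimensional complex representation of $H$. Let $\Gamma_1$ be any quantum graph $\Gamma/R$ obtained by the recipe below applied to the restricted action of $K=H$ and the representation $R$, and let $\Gamma_2$ be any quantum graph $\Gamma/\mathrm{Ind}_H^G R$ obtained by the recipe applied to $K=G$ and $\mathrm{Ind}_H^G R$. Then $\Gamma_1$ and $\Gamma_2$ are transplantable.
   Context: Quantum graphs. A quantum graph $\Gamma$ has a finite vertex set $V$ and finite edge set $E$; each edge $e$ has length $l_e>0$ and a coordinate identifying it with $[0,l_e]$. Functions are tuples $f=(f|_e)$, $f|_e\in W^{2,2}([0,l_e])$. At a vertex $v$ of degree $d_v$ the conditions are $A_vf|_v+B_vf'|_v=0$, where $A_v,B_v$ are complex matrices with $d_v$ columns indexed by the incident edges, $f|_v$ is the vector of values at $v$ and $f'|_v$ the vector of outgoing derivatives at $v$. $\Phi_\Gamma(\lambda)$ denotes the space of functions satisfying all vertex conditions with $-f''=\lambda f$ on each edge. Transplantation. Quantum graphs $\Gamma_1,\Gamma_2$ are transplantable if there is a complex matrix $T=(T_{e,e'})_{e\in E(\Gamma_2),\,e'\in E(\Gamma_1)}$ with $T_{e,e'}=0$ whenever $l_e\ne l_{e'}$ such that for every $\lambda\in\mathbb{C}$ the map $f\mapsto\varphi$, $\varphi|_e=\sum_{e'}T_{e,e'}f|_{e'}$ (as functions on $[0,l_e]$ in the edge coordinates), is a linear bijection $\Phi_{\Gamma_1}(\lambda)\to\Phi_{\Gamma_2}(\lambda)$.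 Setting. $K$ is a finite group acting on $\Gamma$ (permuting vertices and edges, preserving incidence and lengths, mapping edges isometrically, preserving vertex conditions), acting on functions by $(gf)(x)=f(g^{-1}x)$; assume no element of $K$ maps a vertex to a vertex adjacent to it. $K_x$ denotes the stabilizer of a vertex or edge $x$. $R$ is a $d$-dimensional complex representation of $K$ with homomorphism $\rho_R:K\to GL(V^R)$. For bases $C=(c_1,\dots,c_d)$, $C'$ of $V^R$ and linear $T$, $[T]^{C}_{C'}$ is the matrix whose $j$-th column is the $C'$-coordinate vector of $T(c_j)$. Recipe for $\Gamma/R$. Choose: a global basis $B$ of $V^R$; representatives $\tilde e^1,\dots,\tilde e^I$ of the $K$-orbits on $E$ and $\tilde v_1,\dots,\tilde v_N$ of the $K$-orbits on $V$; for each $i$ a basis $B^i=(b^i_1,\dots,b^i_d)$ of $V^R$ such that $b^i_1,\dots,b^i_{d_i}$ is a basis of the subspace of vectors fixed by $\rho_R(K_{\tilde e^i})$ and $b^i_{d_i+1},\dots,b^i_d$ is a basis of the sum of the nontrivial isotypic components of $R$ restricted to $K_{\tilde e^i}$. The quotient has vertices $v_1,\dots,v_N$ and edges $e^i_j$ ($1\le i\le I$, $1\le j\le d_i$), $e^i_j$ of length $l_{\tilde e^i}$ with the coordinate of $\tilde e^i$; if $\tilde e^i$ joins a vertex of the orbit of $\tilde v_k$ to one of the orbit of $\tilde v_{k'}$, then each $e^i_j$ joins $v_k$ to $v_{k'}$, endpoints corresponding. Vertex conditions at $v_k$: write the edges at $\tilde v_k$ as $g_1\tilde e^{\nu_1},\dots,g_n\tilde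 e^{\nu_n}$ ($g_l\in K$, $n=d_{\tilde v_k}$) and let $A_{\tilde v_k},B_{\tilde v_k}$ be its condition matrices with columns in this order; let $\mu_1,\dots,\mu_m$ be the distinct values among the $\nu_l$; let $\Theta'$ be the $n\times m$ matrix with $\Theta'_{l,l'}=1$ if $\nu_l=\mu_{l'}$ and $0$ otherwise; let $\Theta$ be obtained from $\Theta'\otimes I_d$ by deleting the columns $(l'-1)d+j$ with $d_{\mu_{l'}}<j\le d$ (the remaining columns, indexed by $(l',j)$ with $j\le d_{\mu_{l'}}$, correspond to the edges $e^{\mu_{l'}}_j$ at $v_k$). With $D=\mathrm{diag}\big(([\rho_R(g_1^{-1})]^{B}_{B^{\nu_1}})^T,\dots,([\rho_R(g_n^{-1})]^{B}_{B^{\nu_n}})^T\big)$, set $A_{v_k}=(A_{\tilde v_k}\otimes I_d)D\Theta$, $B_{v_k}=(B_{\tilde v_k}\otimes I_d)D\Theta$ (possibly non-square); the conditions at $v_k$ are $A_{v_k}f|_{v_k}+B_{v_k}f'|_{v_k}=0$. *)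

theory Defs
  imports Complex_Main "HOL-Algebra.Group" "Jordan_Normal_Form.Matrix"
begin

section \<open>Quantum graphs\<close>

text \<open>A quantum graph. Vertices of type 'v, edges of type 'e. Edge e is identified with
  the interval [0, qlen e]; coordinate 0 is at vertex qsrc e, coordinate qlen e at qtgt e.
  The vertex conditions at v are the rows r in qrows v of the matrices qA v, qB v, whose
  columns are indexed by the edges incident to v.\<close>

record ('v, 'e, 'r) qgraph =
  qverts :: "'v set"
  qedges :: "'e set"
  qsrc :: "'e \<Rightarrow> 'v"
  qtgt :: "'e \<Rightarrow> 'v"
  qlen :: "'e \<Rightarrow> real"
  qrows :: "'v \<Rightarrow> 'r set"
  qA :: "'v \<Rightarrow> 'r \<Rightarrow> 'e \<Rightarrow> complex"
  qB :: "'v \<Rightarrow> 'r \<Rightarrow> 'e \<Rightarrow> complex"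

definition qgraph_wf :: "('v, 'e, 'r) qgraph \<Rightarrow> bool" where
  "qgraph_wf \<Gamma> \<longleftrightarrow> finite (qverts \<Gamma>) \<and> finite (qedges \<Gamma>) \<and>
     (\<forall>e\<in>qedges \<Gamma>. qsrc \<Gamma> e \<in> qverts \<Gamma> \<and> qtgt \<Gamma> e \<in> qverts \<Gamma> \<and> qlen \<Gamma> e > 0) \<and>
     (\<forall>v\<in>qverts \<Gamma>. finite (qrows \<Gamma> v))"

definition inc :: "('v, 'e, 'r) qgraph \<Rightarrow> 'v \<Rightarrow> 'e set" where
  "inc \<Gamma> v = {e \<in> qedges \<Gamma>. qsrc \<Gamma> e = v \<or> qtgt \<Gamma> e = v}"

text \<open>Value of f at vertex v along the incident edge e.\<close>
definition vval :: "('v, 'e, 'r) qgraph \<Rightarrow> ('e \<Rightarrow> real \<Rightarrow> complex) \<Rightarrow> 'v \<Rightarrow> 'e \<Rightarrow> complex" where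
  "vval \<Gamma> f v e = (if qsrc \<Gamma> e = v then f e 0 else f e (qlen \<Gamma> e))"

text \<open>Outgoing derivative at v along e, given the derivatives f1 of the edge functions.\<close>
definition vdval :: "('v, 'e, 'r) qgraph \<Rightarrow> ('e \<Rightarrow> real \<Rightarrow> complex) \<Rightarrow> 'v \<Rightarrow> 'e \<Rightarrow> complex" where
  "vdval \<Gamma> f1 v e = (if qsrc \<Gamma> e = v then f1 e 0 else - f1 e (qlen \<Gamma> e))"

text \<open>x = vector of values, y = vector of outgoing derivatives at v: A_v x + B_v y = 0.\<close>
definition vc_holds :: "('v, 'e, 'r) qgraph \<Rightarrow> 'v \<Rightarrow> ('e \<Rightarrow> complex) \<Rightarrow> ('e \<Rightarrow> complex) \<Rightarrow> bool" where
  "vc_holds \<Gamma> v x y \<longleftrightarrow>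
     (\<forall>r\<in>qrows \<Gamma> v. (\<Sum>e\<in>inc \<Gamma> v. qA \<Gamma> v r e * x e + qB \<Gamma> v r e * y e) = 0)"

text \<open>Phi_Gamma(lam): functions on the edges (normalised to vanish off [0, l_e] and off the
  edge set) solving -f'' = lam f on every edge and satisfying all vertex conditions.\<close>
definition Phi :: "('v, 'e, 'r) qgraph \<Rightarrow> complex \<Rightarrow> ('e \<Rightarrow> real \<Rightarrow> complex) set" where
  "Phi \<Gamma> lam = {f.
     (\<forall>e. e \<notin> qedges \<Gamma> \<longrightarrow> f e = (\<lambda>_. 0)) \<and>
     (\<forall>e\<in>qedges \<Gamma>. \<forall>x. x \<notin> {0..qlen \<Gamma> e} \<longrightarrow> f e x = 0) \<and>
     (\<exists>f1 f2.
        (\<forall>e\<in>qedges \<Gamma>. \<forall>x\<in>{0..qlen \<Gamma> e}.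
            (f e has_vector_derivative f1 e x) (at x within {0..qlen \<Gamma> e}) \<and>
            (f1 e has_vector_derivative f2 e x) (at x within {0..qlen \<Gamma> e}) \<and>
            - f2 e x = lam * f e x) \<and>
        (\<forall>v\<in>qverts \<Gamma>. vc_holds \<Gamma> v (vval \<Gamma> f v) (vdval \<Gamma> f1 v)))}"

definition transplant_map ::
  "('v1, 'e1, 'r1) qgraph \<Rightarrow> ('v2, 'e2, 'r2) qgraph \<Rightarrow> ('e2 \<Rightarrow> 'e1 \<Rightarrow> complex)
     \<Rightarrow> ('e1 \<Rightarrow> real \<Rightarrow> complex) \<Rightarrow> ('e2 \<Rightarrow> real \<Rightarrow> complex)" where
  "transplant_map \<Gamma>1 \<Gamma>2 T f =
     (\<lambda>e x. if e \<in> qedges \<Gamma>2 then (\<Sum>e'\<in>qedges \<Gamma>1. T e e' * f e' x) else 0)"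

definition transplantable :: "('v1, 'e1, 'r1) qgraph \<Rightarrow> ('v2, 'e2, 'r2) qgraph \<Rightarrow> bool" where
  "transplantable \<Gamma>1 \<Gamma>2 \<longleftrightarrow>
     (\<exists>T :: 'e2 \<Rightarrow> 'e1 \<Rightarrow> complex.
        (\<forall>e\<in>qedges \<Gamma>2. \<forall>e'\<in>qedges \<Gamma>1. qlen \<Gamma>2 e \<noteq> qlen \<Gamma>1 e' \<longrightarrow> T e e' = 0) \<and>
        (\<forall>lam. bij_betw (transplant_map \<Gamma>1 \<Gamma>2 T) (Phi \<Gamma>1 lam) (Phi \<Gamma>2 lam)))"

section \<open>Group actions on quantum graphs\<close>

text \<open>Action of a finite group K; g maps the point with coordinate x on e to the point with
  coordinate x on g e (so edges are mapped isometrically and coordinates are respected).\<close>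
definition qg_action :: "'g monoid \<Rightarrow> ('v, 'e, 'r) qgraph \<Rightarrow> ('g \<Rightarrow> 'v \<Rightarrow> 'v) \<Rightarrow> ('g \<Rightarrow> 'e \<Rightarrow> 'e) \<Rightarrow> bool" where
  "qg_action K \<Gamma> aV aE \<longleftrightarrow> group K \<and> finite (carrier K) \<and>
     (\<forall>g\<in>carrier K. bij_betw (aV g) (qverts \<Gamma>) (qverts \<Gamma>) \<and> bij_betw (aE g) (qedges \<Gamma>) (qedges \<Gamma>)) \<and>
     (\<forall>v\<in>qverts \<Gamma>. aV \<one>\<^bsub>K\<^esub> v = v) \<and> (\<forall>e\<in>qedges \<Gamma>. aE \<one>\<^bsub>K\<^esub> e = e) \<and>
     (\<forall>g\<in>carrier K. \<forall>h\<in>carrier K.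
        (\<forall>v\<in>qverts \<Gamma>. aV (g \<otimes>\<^bsub>K\<^esub> h) v = aV g (aV h v)) \<and>
        (\<forall>e\<in>qedges \<Gamma>. aE (g \<otimes>\<^bsub>K\<^esub> h) e = aE g (aE h e))) \<and>
     (\<forall>g\<in>carrier K. \<forall>e\<in>qedges \<Gamma>.
        qsrc \<Gamma> (aE g e) = aV g (qsrc \<Gamma> e) \<and> qtgt \<Gamma> (aE g e) = aV g (qtgt \<Gamma> e) \<and>
        qlen \<Gamma> (aE g e) = qlen \<Gamma> e) \<and>
     (\<forall>g\<in>carrier K. \<forall>v\<in>qverts \<Gamma>. \<forall>x y.
        vc_holds \<Gamma> v x y \<longleftrightarrow>
        vc_holds \<Gamma> (aV g v) (\<lambda>e. x (aE (inv\<^bsub>K\<^esub> g) e)) (\<lambda>e. y (aE (inv\<^bsub>K\<^esub> g) e)))"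

text \<open>No element maps a vertex to an adjacent vertex.\<close>
definition no_adjacent_move :: "'g monoid \<Rightarrow> ('v, 'e, 'r) qgraph \<Rightarrow> ('g \<Rightarrow> 'v \<Rightarrow> 'v) \<Rightarrow> bool" where
  "no_adjacent_move K \<Gamma> aV \<longleftrightarrow>
     (\<forall>g\<in>carrier K. \<forall>e\<in>qedges \<Gamma>. aV g (qsrc \<Gamma> e) \<noteq> qtgt \<Gamma> e \<and> aV g (qtgt \<Gamma> e) \<noteq> qsrc \<Gamma> e)"

definition orb :: "'g monoid \<Rightarrow> ('g \<Rightarrow> 'a \<Rightarrow> 'a) \<Rightarrow> 'a \<Rightarrow> 'a set" where
  "orb K a x = {a g x | g. g \<in> carrier K}"

definition stab :: "'g monoid \<Rightarrow> ('g \<Rightarrow> 'a \<Rightarrow> 'a) \<Rightarrow> 'a \<Rightarrow> 'g set" where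
  "stab K a x = {g \<in> carrier K. a g x = x}"

section \<open>Representations (on V^R = C^d, matrices w.r.t. the standard basis)\<close>

definition is_rep :: "'g monoid \<Rightarrow> nat \<Rightarrow> ('g \<Rightarrow> complex mat) \<Rightarrow> bool" where
  "is_rep K d \<rho> \<longleftrightarrow> (\<forall>g\<in>carrier K. \<rho> g \<in> carrier_mat d d) \<and> \<rho> \<one>\<^bsub>K\<^esub> = 1\<^sub>m d \<and>
     (\<forall>g\<in>carrier K. \<forall>h\<in>carrier K. \<rho> (g \<otimes>\<^bsub>K\<^esub> h) = \<rho> g * \<rho> h)"

text \<open>Complex linear span in C^d (finite linear combinations).\<close>
definition vspan :: "nat \<Rightarrow> complex vec set \<Rightarrow> complex vec set" where
  "vspan d S = {v. \<exists>ws cs. set ws \<subseteq> S \<and>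
      v = vec d (\<lambda>k. \<Sum>i<length ws. cs i * (ws ! i) $ k)}"

definition is_subspace :: "nat \<Rightarrow> complex vec set \<Rightarrow> bool" where
  "is_subspace d W \<longleftrightarrow> W \<subseteq> carrier_vec d \<and> vspan d W = W"

definition invariant_sub :: "nat \<Rightarrow> ('g \<Rightarrow> complex mat) \<Rightarrow> 'g set \<Rightarrow> complex vec set \<Rightarrow> bool" where
  "invariant_sub d \<rho> S W \<longleftrightarrow> is_subspace d W \<and> (\<forall>h\<in>S. \<forall>w\<in>W. \<rho> h *\<^sub>v w \<in> W)"

definition irreducible_sub :: "nat \<Rightarrow> ('g \<Rightarrow> complex mat) \<Rightarrow> 'g set \<Rightarrow> complex vec set \<Rightarrow> bool" where
  "irreducible_sub d \<rho> S W \<longleftrightarrow> invariant_sub d \<rho> S W \<and> W \<noteq> {0\<^sub>v d} \<and>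
     (\<forall>W'. invariant_sub d \<rho> S W' \<and> W' \<subseteq> W \<longrightarrow> W' = {0\<^sub>v d} \<or> W' = W)"

text \<open>Vectors fixed by rho(S).\<close>
definition fixed_space :: "nat \<Rightarrow> ('g \<Rightarrow> complex mat) \<Rightarrow> 'g set \<Rightarrow> complex vec set" where
  "fixed_space d \<rho> S = {v \<in> carrier_vec d. \<forall>h\<in>S. \<rho> h *\<^sub>v v = v}"

text \<open>Sum of the nontrivial isotypic components of the restriction of rho to S:
  the span of all irreducible invariant subspaces on which S acts nontrivially.\<close>
definition nontriv_iso :: "nat \<Rightarrow> ('g \<Rightarrow> complex mat) \<Rightarrow> 'g set \<Rightarrow> complex vec set" where
  "nontriv_iso d \<rho> S = vspan d (\<Union>{W. irreducible_sub d \<rho> S W \<and> (\<exists>h\<in>S. \<exists>w\<in>W. \<rho> h *\<^sub>v w \<noteq> w)})"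

text \<open>[T]^C_{C'}: bases given as matrices whose columns are the basis vectors; the j-th
  column of the result is the C'-coordinate vector of T(c_j).\<close>
definition coord_mat :: "nat \<Rightarrow> complex mat \<Rightarrow> complex mat \<Rightarrow> complex mat \<Rightarrow> complex mat" where
  "coord_mat d C' T C = (THE X. X \<in> carrier_mat d d \<and> C' * X = T * C)"

section \<open>Induced representation\<close>

text \<open>t 0, ..., t (m-1) is a set of representatives of the left cosets g H of H in G.\<close>
definition transversal :: "'g monoid \<Rightarrow> 'g set \<Rightarrow> nat \<Rightarrow> (nat \<Rightarrow> 'g) \<Rightarrow> bool" where
  "transversal G H m t \<longleftrightarrow> (\<forall>i<m. t i \<in> carrier G) \<and>
     (\<forall>g\<in>carrier G. \<exists>!i. i < m \<and> inv\<^bsub>G\<^esub> (t i) \<otimes>\<^bsub>G\<^esub> g \<in> H)"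

text \<open>Ind_H^G R on C^(m d) = direct sum of the t_a V^R; block (a,b) of Ind(g) is
  rho(t_a^-1 g t_b) if this lies in H and 0 otherwise.\<close>
definition ind_rep :: "'g monoid \<Rightarrow> 'g set \<Rightarrow> nat \<Rightarrow> ('g \<Rightarrow> complex mat) \<Rightarrow> nat \<Rightarrow> (nat \<Rightarrow> 'g) \<Rightarrow> 'g \<Rightarrow> complex mat" where
  "ind_rep G H d \<rho> m t g = mat (m * d) (m * d) (\<lambda>(p, q).
     (let x = inv\<^bsub>G\<^esub> (t (p div d)) \<otimes>\<^bsub>G\<^esub> g \<otimes>\<^bsub>G\<^esub> t (q div d)
      in if x \<in> H then \<rho> x $$ (p mod d, q mod d) else 0))"

section \<open>The quotient recipe Gamma/R\<close>

text \<open>Q is a quantum graph Gamma/R obtained from the recipe for some admissible choices.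
  Indexing is 0-based: vertices k < N, edges (i,j) with i < I, j < d_i; rows of the
  condition matrices at v_k are indexed by (r,t), r a row at the representative vertex,
  t < d (the Kronecker factor I_d). The entry formula is the entry of
  (A tensor I_d) D Theta written out.\<close>
definition is_quotient ::
  "('v, 'e, 'r) qgraph \<Rightarrow> 'g monoid \<Rightarrow> ('g \<Rightarrow> 'v \<Rightarrow> 'v) \<Rightarrow> ('g \<Rightarrow> 'e \<Rightarrow> 'e) \<Rightarrow>
   nat \<Rightarrow> ('g \<Rightarrow> complex mat) \<Rightarrow> (nat, nat \<times> nat, 'r \<times> nat) qgraph \<Rightarrow> bool" where
  "is_quotient \<Gamma> K aV aE d \<rho> Q \<longleftrightarrow>
   (\<exists>(Bg :: complex mat) (I :: nat) (erep :: nat \<Rightarrow> 'e) (N :: nat) (vrep :: nat \<Rightarrow> 'v)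
      (Bi :: nat \<Rightarrow> complex mat) (dd :: nat \<Rightarrow> nat) (gsel :: nat \<Rightarrow> 'e \<Rightarrow> 'g).
     Bg \<in> carrier_mat d d \<and> invertible_mat Bg \<and>
     (\<forall>i<I. erep i \<in> qedges \<Gamma>) \<and>
     (\<forall>i<I. \<forall>i'<I. erep i' \<in> orb K aE (erep i) \<longrightarrow> i = i') \<and>
     (\<forall>e\<in>qedges \<Gamma>. \<exists>i<I. e \<in> orb K aE (erep i)) \<and>
     (\<forall>k<N. vrep k \<in> qverts \<Gamma>) \<and>
     (\<forall>k<N. \<forall>k'<N. vrep k' \<in> orb K aV (vrep k) \<longrightarrow> k = k') \<and>
     (\<forall>v\<in>qverts \<Gamma>. \<exists>k<N. v \<in> orb K aV (vrep k)) \<and>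
     (\<forall>i<I. Bi i \<in> carrier_mat d d \<and> invertible_mat (Bi i) \<and> dd i \<le> d \<and>
        (\<forall>j<dd i. col (Bi i) j \<in> fixed_space d \<rho> (stab K aE (erep i))) \<and>
        fixed_space d \<rho> (stab K aE (erep i)) \<subseteq> vspan d (col (Bi i) ` {..<dd i}) \<and>
        (\<forall>j. dd i \<le> j \<and> j < d \<longrightarrow> col (Bi i) j \<in> nontriv_iso d \<rho> (stab K aE (erep i))) \<and>
        nontriv_iso d \<rho> (stab K aE (erep i)) \<subseteq> vspan d (col (Bi i) ` {dd i..<d})) \<and>
     (\<forall>k<N. \<forall>i<I. \<forall>e\<in>inc \<Gamma> (vrep k). e \<in> orb K aE (erep i) \<longrightarrow>
        gsel k e \<in> carrier K \<and> aE (gsel k e) (erep i) = e) \<and>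
     qverts Q = {..<N} \<and>
     qedges Q = {(i, j). i < I \<and> j < dd i} \<and>
     (\<forall>i<I. \<forall>j<dd i.
        qsrc Q (i, j) < N \<and> qsrc \<Gamma> (erep i) \<in> orb K aV (vrep (qsrc Q (i, j))) \<and>
        qtgt Q (i, j) < N \<and> qtgt \<Gamma> (erep i) \<in> orb K aV (vrep (qtgt Q (i, j))) \<and>
        qlen Q (i, j) = qlen \<Gamma> (erep i)) \<and>
     (\<forall>k<N. qrows Q k = qrows \<Gamma> (vrep k) \<times> {..<d} \<and>
        (\<forall>r\<in>qrows \<Gamma> (vrep k). \<forall>t<d. \<forall>i<I. \<forall>j<dd i.
           qA Q k (r, t) (i, j) =
             (\<Sum>e\<in>{e \<in> inc \<Gamma> (vrep k). e \<in> orb K aE (erep i)}.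
                qA \<Gamma> (vrep k) r e * coord_mat d (Bi i) (\<rho> (inv\<^bsub>K\<^esub> (gsel k e))) Bg $$ (j, t)) \<and>
           qB Q k (r, t) (i, j) =
             (\<Sum>e\<in>{e \<in> inc \<Gamma> (vrep k). e \<in> orb K aE (erep i)}.
                qB \<Gamma> (vrep k) r e * coord_mat d (Bi i) (\<rho> (inv\<^bsub>K\<^esub> (gsel k e))) Bg $$ (j, t)))))"

end

theory Submission
  imports Defs
begin

(* ---- part 1 ---- *)
lemma tmap_ode:
  fixes \<Gamma>1 :: "('v1,'e1,'r1) qgraph" and \<Gamma>2 :: "('v2,'e2,'r2) qgraph"
  assumes lens: "\<forall>e\<in>qedges \<Gamma>2. \<forall>e'\<in>qedges \<Gamma>1. T e e' \<noteq> 0 \<longrightarrow> qlen \<Gamma>2 e = qlen \<Gamma>1 e'"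
  and ode: "\<forall>e\<in>qedges \<Gamma>1. \<forall>x\<in>{0..qlen \<Gamma>1 e}.
            (f e has_vector_derivative f1 e x) (at x within {0..qlen \<Gamma>1 e}) \<and>
            (f1 e has_vector_derivative f2 e x) (at x within {0..qlen \<Gamma>1 e}) \<and>
            - f2 e x = lam * f e x"
  shows "\<forall>e\<in>qedges \<Gamma>2. \<forall>x\<in>{0..qlen \<Gamma>2 e}.
            (transplant_map \<Gamma>1 \<Gamma>2 T f e has_vector_derivative transplant_map \<Gamma>1 \<Gamma>2 T f1 e x) (at x within {0..qlen \<Gamma>2 e}) \<and>
            (transplant_map \<Gamma>1 \<Gamma>2 T f1 e has_vector_derivative transplant_map \<Gamma>1 \<Gamma>2 T f2 e x) (at x within {0..qlen \<Gamma>2 e}) \<and>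
            - transplant_map \<Gamma>1 \<Gamma>2 T f2 e x = lam * transplant_map \<Gamma>1 \<Gamma>2 T f e x"
proof (intro ballI conjI)
  fix e x assume e: "e \<in> qedges \<Gamma>2" and x: "x \<in> {0..qlen \<Gamma>2 e}"
  have tm: "transplant_map \<Gamma>1 \<Gamma>2 T g e = (\<lambda>x. \<Sum>e'\<in>qedges \<Gamma>1. T e e' * g e' x)" for g
    using e by (auto simp: transplant_map_def)
  have D: "((\<lambda>x. T e e' * g e' x) has_vector_derivative T e e' * g' e' x) (at x within {0..qlen \<Gamma>2 e})"
    if e': "e' \<in> qedges \<Gamma>1" and gd: "\<forall>e\<in>qedges \<Gamma>1. \<forall>x\<in>{0..qlen \<Gamma>1 e}. (g e has_vector_derivative g' e x) (at x within {0..qlen \<Gamma>1 e})" for g g' e'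
  proof (cases "T e e' = 0")
    case True then show ?thesis by simp
  next
    case False
    then have "qlen \<Gamma>2 e = qlen \<Gamma>1 e'" using lens e e' by blast
    then show ?thesis using gd e' x by (auto intro!: has_vector_derivative_mult_right)
  qed
  show "(transplant_map \<Gamma>1 \<Gamma>2 T f e has_vector_derivative transplant_map \<Gamma>1 \<Gamma>2 T f1 e x) (at x within {0..qlen \<Gamma>2 e})"
    unfolding tm using D[of _ f f1] ode by (auto intro!: has_vector_derivative_sum)
  show "(transplant_map \<Gamma>1 \<Gamma>2 T f1 e has_vector_derivative transplant_map \<Gamma>1 \<Gamma>2 T f2 e x) (at x within {0..qlen \<Gamma>2 e})"
    unfolding tm using D[of _ f1 f2] ode by (auto intro!: has_vector_derivative_sum)
  have "T e e' * f2 e' x = - lam * (T e e' * f e' x)" if e': "e' \<in> qedges \<Gamma>1" for e'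
  proof (cases "T e e' = 0")
    case False
    then have "qlen \<Gamma>2 e = qlen \<Gamma>1 e'" using lens e e' by blast
    then have "- f2 e' x = lam * f e' x" using ode e' x by auto
    then show ?thesis by (simp add: algebra_simps) (metis minus_equation_iff mult.left_commute mult_minus_right)
  qed simp
  then show "- transplant_map \<Gamma>1 \<Gamma>2 T f2 e x = lam * transplant_map \<Gamma>1 \<Gamma>2 T f e x"
    unfolding tm by (simp add: sum_distrib_left sum_negf[symmetric])
qed

lemma tmap_supp:
  fixes \<Gamma>1 :: "('v1,'e1,'r1) qgraph" and \<Gamma>2 :: "('v2,'e2,'r2) qgraph"
  assumes lens: "\<forall>e\<in>qedges \<Gamma>2. \<forall>e'\<in>qedges \<Gamma>1. T e e' \<noteq> 0 \<longrightarrow> qlen \<Gamma>2 e = qlen \<Gamma>1 e'"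
  and supp: "\<forall>e\<in>qedges \<Gamma>1. \<forall>x. x \<notin> {0..qlen \<Gamma>1 e} \<longrightarrow> f e x = 0"
  shows "(\<forall>e. e \<notin> qedges \<Gamma>2 \<longrightarrow> transplant_map \<Gamma>1 \<Gamma>2 T f e = (\<lambda>_. 0)) \<and>
         (\<forall>e\<in>qedges \<Gamma>2. \<forall>x. x \<notin> {0..qlen \<Gamma>2 e} \<longrightarrow> transplant_map \<Gamma>1 \<Gamma>2 T f e x = 0)"
proof (intro conjI allI impI ballI)
  fix e assume "e \<notin> qedges \<Gamma>2" then show "transplant_map \<Gamma>1 \<Gamma>2 T f e = (\<lambda>_. 0)"
    by (auto simp: transplant_map_def)
next
  fix e x assume e: "e \<in> qedges \<Gamma>2" and x: "x \<notin> {0..qlen \<Gamma>2 e}"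
  have "T e e' * f e' x = 0" if "e' \<in> qedges \<Gamma>1" for e'
    using lens e that supp x by (cases "T e e' = 0") auto
  then have "(\<Sum>e'\<in>qedges \<Gamma>1. T e e' * f e' x) = 0" by (intro sum.neutral) blast
  then show "transplant_map \<Gamma>1 \<Gamma>2 T f e x = 0" using e by (simp add: transplant_map_def)
qed

(* ---- part 2 ---- *)
lemma vc_cong:
  assumes "\<And>e. e \<in> inc \<Gamma> v \<Longrightarrow> x e = x' e" "\<And>e. e \<in> inc \<Gamma> v \<Longrightarrow> y e = y' e"
  shows "vc_holds \<Gamma> v x y = vc_holds \<Gamma> v x' y'"
  unfolding vc_holds_def using assms by (simp cong: sum.cong)

lemma vc_lin:
  assumes "\<And>s. s \<in> S \<Longrightarrow> vc_holds \<Gamma> v (X s) (Y s)"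
  shows "vc_holds \<Gamma> v (\<lambda>e. \<Sum>s\<in>S. c s * X s e) (\<lambda>e. \<Sum>s\<in>S. c s * Y s e)"
  unfolding vc_holds_def
proof
  fix r assume r: "r \<in> qrows \<Gamma> v"
  have "(\<Sum>e\<in>inc \<Gamma> v. qA \<Gamma> v r e * (\<Sum>s\<in>S. c s * X s e) + qB \<Gamma> v r e * (\<Sum>s\<in>S. c s * Y s e))
      = (\<Sum>s\<in>S. c s * (\<Sum>e\<in>inc \<Gamma> v. qA \<Gamma> v r e * X s e + qB \<Gamma> v r e * Y s e))"
    by (simp add: sum_distrib_left sum.distrib algebra_simps sum.swap[of _ "inc \<Gamma> v"])
  also have "\<dots> = 0" using assms r by (simp add: vc_holds_def)
  finally show "(\<Sum>e\<in>inc \<Gamma> v. qA \<Gamma> v r e * (\<Sum>s\<in>S. c s * X s e) + qB \<Gamma> v r e * (\<Sum>s\<in>S. c s * Y s e)) = 0" .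
qed

lemma act_group: "qg_action K \<Gamma> aV aE \<Longrightarrow> group K"
  by (simp add: qg_action_def)

lemma act_inv_v:
  assumes act: "qg_action K \<Gamma> aV aE" and g: "g \<in> carrier K" and w: "w \<in> qverts \<Gamma>"
  shows "aV (inv\<^bsub>K\<^esub> g) (aV g w) = w" "aV g (aV (inv\<^bsub>K\<^esub> g) w) = w"
proof -
  interpret group K using act by (simp add: qg_action_def)
  from act have comp: "\<forall>g\<in>carrier K. \<forall>h\<in>carrier K. \<forall>v\<in>qverts \<Gamma>. aV (g \<otimes>\<^bsub>K\<^esub> h) v = aV g (aV h v)"
    and one: "\<forall>v\<in>qverts \<Gamma>. aV \<one>\<^bsub>K\<^esub> v = v" by (auto simp: qg_action_def)
  show "aV (inv\<^bsub>K\<^esub> g) (aV g w) = w" using comp[rule_format, of "inv\<^bsub>K\<^esub> g" g w] g w one by simp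
  show "aV g (aV (inv\<^bsub>K\<^esub> g) w) = w" using comp[rule_format, of g "inv\<^bsub>K\<^esub> g" w] g w one by simp
qed

lemma act_inv_e:
  assumes act: "qg_action K \<Gamma> aV aE" and g: "g \<in> carrier K" and w: "e \<in> qedges \<Gamma>"
  shows "aE (inv\<^bsub>K\<^esub> g) (aE g e) = e" "aE g (aE (inv\<^bsub>K\<^esub> g) e) = e"
proof -
  interpret group K using act by (simp add: qg_action_def)
  from act have comp: "\<forall>g\<in>carrier K. \<forall>h\<in>carrier K. \<forall>v\<in>qedges \<Gamma>. aE (g \<otimes>\<^bsub>K\<^esub> h) v = aE g (aE h v)"
    and one: "\<forall>v\<in>qedges \<Gamma>. aE \<one>\<^bsub>K\<^esub> v = v" by (auto simp: qg_action_def)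
  show "aE (inv\<^bsub>K\<^esub> g) (aE g e) = e" using comp[rule_format, of "inv\<^bsub>K\<^esub> g" g e] g w one by simp
  show "aE g (aE (inv\<^bsub>K\<^esub> g) e) = e" using comp[rule_format, of g "inv\<^bsub>K\<^esub> g" e] g w one by simp
qed

lemma act_props:
  assumes act: "qg_action K \<Gamma> aV aE" and g: "g \<in> carrier K"
  shows "e \<in> qedges \<Gamma> \<Longrightarrow> aE g e \<in> qedges \<Gamma>" "v \<in> qverts \<Gamma> \<Longrightarrow> aV g v \<in> qverts \<Gamma>"
    "e \<in> qedges \<Gamma> \<Longrightarrow> qsrc \<Gamma> (aE g e) = aV g (qsrc \<Gamma> e)"
    "e \<in> qedges \<Gamma> \<Longrightarrow> qtgt \<Gamma> (aE g e) = aV g (qtgt \<Gamma> e)"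
    "e \<in> qedges \<Gamma> \<Longrightarrow> qlen \<Gamma> (aE g e) = qlen \<Gamma> e"
  using act g unfolding qg_action_def bij_betw_def by (blast+)

lemma vc_transport:
  assumes act: "qg_action K \<Gamma> aV aE" and wf: "qgraph_wf \<Gamma>" and g: "g \<in> carrier K"
    and w: "w \<in> qverts \<Gamma>"
    and vc: "vc_holds \<Gamma> w (vval \<Gamma> \<phi> w) (vdval \<Gamma> \<phi>1 w)"
  shows "vc_holds \<Gamma> (aV g w) (vval \<Gamma> (\<lambda>e. \<phi> (aE (inv\<^bsub>K\<^esub> g) e)) (aV g w))
                               (vdval \<Gamma> (\<lambda>e. \<phi>1 (aE (inv\<^bsub>K\<^esub> g) e)) (aV g w))"
proof -
  interpret group K using act by (simp add: qg_action_def)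
  have ig: "inv\<^bsub>K\<^esub> g \<in> carrier K" using g by simp
  have inv1: "vc_holds \<Gamma> w x y \<longleftrightarrow>
        vc_holds \<Gamma> (aV g w) (\<lambda>e. x (aE (inv\<^bsub>K\<^esub> g) e)) (\<lambda>e. y (aE (inv\<^bsub>K\<^esub> g) e))" for x y
    using act g w unfolding qg_action_def by blast
  have key: "(qsrc \<Gamma> (aE (inv\<^bsub>K\<^esub> g) e) = w) = (qsrc \<Gamma> e = aV g w)" if e: "e \<in> inc \<Gamma> (aV g w)" for e
  proof -
    have eE: "e \<in> qedges \<Gamma>" using e by (simp add: inc_def)
    have sv: "qsrc \<Gamma> e \<in> qverts \<Gamma>" using wf eE by (simp add: qgraph_wf_def)
    show ?thesis using act_props(3)[OF act ig eE] act_inv_v[OF act g w] act_inv_v[OF act g sv] by auto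
  qed
  have "vc_holds \<Gamma> (aV g w) (\<lambda>e. vval \<Gamma> \<phi> w (aE (inv\<^bsub>K\<^esub> g) e)) (\<lambda>e. vdval \<Gamma> \<phi>1 w (aE (inv\<^bsub>K\<^esub> g) e))"
    using vc inv1 by blast
  moreover have "vc_holds \<Gamma> (aV g w) (\<lambda>e. vval \<Gamma> \<phi> w (aE (inv\<^bsub>K\<^esub> g) e)) (\<lambda>e. vdval \<Gamma> \<phi>1 w (aE (inv\<^bsub>K\<^esub> g) e))
     = vc_holds \<Gamma> (aV g w) (vval \<Gamma> (\<lambda>e. \<phi> (aE (inv\<^bsub>K\<^esub> g) e)) (aV g w))
                               (vdval \<Gamma> (\<lambda>e. \<phi>1 (aE (inv\<^bsub>K\<^esub> g) e)) (aV g w))"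
  proof (rule vc_cong)
    fix e assume e: "e \<in> inc \<Gamma> (aV g w)"
    have eE: "e \<in> qedges \<Gamma>" using e by (simp add: inc_def)
    have l: "qlen \<Gamma> (aE (inv\<^bsub>K\<^esub> g) e) = qlen \<Gamma> e" using act_props(5)[OF act ig eE] .
    show "vval \<Gamma> \<phi> w (aE (inv\<^bsub>K\<^esub> g) e) = vval \<Gamma> (\<lambda>e. \<phi> (aE (inv\<^bsub>K\<^esub> g) e)) (aV g w) e"
      using key[OF e] l by (simp add: vval_def)
    show "vdval \<Gamma> \<phi>1 w (aE (inv\<^bsub>K\<^esub> g) e) = vdval \<Gamma> (\<lambda>e. \<phi>1 (aE (inv\<^bsub>K\<^esub> g) e)) (aV g w) e"
      using key[OF e] l by (simp add: vdval_def)
  qed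
  ultimately show ?thesis by simp
qed

(* ---- part 3 ---- *)
lemma mult_entry:
  assumes "A \<in> carrier_mat a b" "B \<in> carrier_mat b c" "i < a" "j < c"
  shows "(A * B) $$ (i,j) = (\<Sum>k<b. A $$ (i,k) * B $$ (k,j))"
  using assms by (simp add: scalar_prod_def lessThan_atLeast0)

lemma mv_entry:
  assumes "A \<in> carrier_mat a b" "v \<in> carrier_vec b" "i < a"
  shows "(A *\<^sub>v v) $ i = (\<Sum>k<b. A $$ (i,k) * v $ k)"
  using assms by (simp add: scalar_prod_def lessThan_atLeast0)

lemma inv_exists:
  assumes "invertible_mat A" "A \<in> carrier_mat n n"
  shows "\<exists>B. B \<in> carrier_mat n n \<and> A * B = 1\<^sub>m n \<and> B * A = 1\<^sub>m n"
proof -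
  obtain B where AB: "A * B = 1\<^sub>m (dim_row A)" "B * A = 1\<^sub>m (dim_row B)"
    using assms(1) by (auto simp: invertible_mat_def inverts_mat_def)
  have "dim_col B = n" using AB(1) assms(2) by (metis carrier_matD(1) index_mult_mat(3) index_one_mat(3))
  moreover have "dim_row B = n" using AB(2) assms(2) by (metis carrier_matD(2) index_mult_mat(3) index_one_mat(3))
  ultimately show ?thesis using AB assms(2) by (intro exI[of _ B]) auto
qed

definition dotv :: "nat \<Rightarrow> (nat \<Rightarrow> complex) \<Rightarrow> complex vec \<Rightarrow> complex" where
  "dotv n w v = (\<Sum>c<n. w c * v $ c)"

lemma dotv_vspan:
  "dotv n w (vec n (\<lambda>k. \<Sum>l<length ws. cs l * ws ! l $ k)) = (\<Sum>l<length ws. cs l * dotv n w (ws ! l))"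
  unfolding dotv_def by (simp add: sum_distrib_left sum_distrib_right sum.swap[of _ "{..<n}"] algebra_simps)

lemma mult_vspan:
  fixes A :: "complex mat"
  assumes "A \<in> carrier_mat n n" "\<forall>y\<in>set ws. y \<in> carrier_vec n"
  shows "A *\<^sub>v vec n (\<lambda>k. \<Sum>l<length ws. cs l * ws ! l $ k)
       = vec n (\<lambda>k. \<Sum>l<length (map ((*\<^sub>v) A) ws). cs l * (map ((*\<^sub>v) A) ws) ! l $ k)"
proof (rule eq_vecI)
  show "dim_vec (A *\<^sub>v vec n (\<lambda>k. \<Sum>l<length ws. cs l * ws ! l $ k)) =
        dim_vec (vec n (\<lambda>k. \<Sum>l<length (map ((*\<^sub>v) A) ws). cs l * map ((*\<^sub>v) A) ws ! l $ k))"
    using assms by simp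
  fix i assume i: "i < dim_vec (vec n (\<lambda>k. \<Sum>l<length (map ((*\<^sub>v) A) ws). cs l * map ((*\<^sub>v) A) ws ! l $ k))"
  then have i: "i < n" by simp
  have "(A *\<^sub>v vec n (\<lambda>k. \<Sum>l<length ws. cs l * ws ! l $ k)) $ i
      = (\<Sum>k<n. A $$ (i,k) * (\<Sum>l<length ws. cs l * ws ! l $ k))"
    using assms i by (subst mv_entry[of A n n]) auto
  also have "\<dots> = (\<Sum>l<length ws. cs l * (\<Sum>k<n. A $$ (i,k) * ws ! l $ k))"
    apply (simp add: sum_distrib_left sum.swap[of _ "{..<length ws}"]) apply (intro sum.cong refl) by (simp add: ac_simps)
  also have "\<dots> = (\<Sum>l<length ws. cs l * (A *\<^sub>v ws ! l) $ i)"
    using assms i by (intro sum.cong refl) (subst mv_entry[of A n n], auto)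
  finally show "(A *\<^sub>v vec n (\<lambda>k. \<Sum>l<length ws. cs l * ws ! l $ k)) $ i =
       vec n (\<lambda>k. \<Sum>l<length (map ((*\<^sub>v) A) ws). cs l * map ((*\<^sub>v) A) ws ! l $ k) $ i"
    using i by simp
qed

(* ---- part 4 ---- *)
locale quot =
  fixes \<Gamma> :: "('v, 'e, 'r) qgraph" and K :: "'g monoid" and aV :: "'g \<Rightarrow> 'v \<Rightarrow> 'v"
    and aE :: "'g \<Rightarrow> 'e \<Rightarrow> 'e" and n :: nat and \<rho> :: "'g \<Rightarrow> complex mat"
    and Q :: "(nat, nat \<times> nat, 'r \<times> nat) qgraph"
    and Bg :: "complex mat" and I :: nat and erep :: "nat \<Rightarrow> 'e" and N :: nat and vrep :: "nat \<Rightarrow> 'v"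
    and Bi :: "nat \<Rightarrow> complex mat" and dd :: "nat \<Rightarrow> nat" and gsel :: "nat \<Rightarrow> 'e \<Rightarrow> 'g"
  assumes wf: "qgraph_wf \<Gamma>" and act: "qg_action K \<Gamma> aV aE" and noadj: "no_adjacent_move K \<Gamma> aV"
    and rep: "is_rep K n \<rho>"
    and Bg: "Bg \<in> carrier_mat n n" "invertible_mat Bg"
    and erep_in: "\<forall>i<I. erep i \<in> qedges \<Gamma>"
    and erep_uniq: "\<forall>i<I. \<forall>i'<I. erep i' \<in> orb K aE (erep i) \<longrightarrow> i = i'"
    and erep_cov: "\<forall>e\<in>qedges \<Gamma>. \<exists>i<I. e \<in> orb K aE (erep i)"
    and vrep_in: "\<forall>k<N. vrep k \<in> qverts \<Gamma>"
    and vrep_uniq: "\<forall>k<N. \<forall>k'<N. vrep k' \<in> orb K aV (vrep k) \<longrightarrow> k = k'"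
    and vrep_cov: "\<forall>v\<in>qverts \<Gamma>. \<exists>k<N. v \<in> orb K aV (vrep k)"
    and Bi: "\<forall>i<I. Bi i \<in> carrier_mat n n \<and> invertible_mat (Bi i) \<and> dd i \<le> n \<and>
        (\<forall>j<dd i. col (Bi i) j \<in> fixed_space n \<rho> (stab K aE (erep i))) \<and>
        fixed_space n \<rho> (stab K aE (erep i)) \<subseteq> vspan n (col (Bi i) ` {..<dd i}) \<and>
        (\<forall>j. dd i \<le> j \<and> j < n \<longrightarrow> col (Bi i) j \<in> nontriv_iso n \<rho> (stab K aE (erep i))) \<and>
        nontriv_iso n \<rho> (stab K aE (erep i)) \<subseteq> vspan n (col (Bi i) ` {dd i..<n})"
    and gsel: "\<forall>k<N. \<forall>i<I. \<forall>e\<in>inc \<Gamma> (vrep k). e \<in> orb K aE (erep i) \<longrightarrow>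
        gsel k e \<in> carrier K \<and> aE (gsel k e) (erep i) = e"
    and QV: "qverts Q = {..<N}"
    and QE: "qedges Q = {(i, j). i < I \<and> j < dd i}"
    and Qse: "\<forall>i<I. \<forall>j<dd i.
        qsrc Q (i, j) < N \<and> qsrc \<Gamma> (erep i) \<in> orb K aV (vrep (qsrc Q (i, j))) \<and>
        qtgt Q (i, j) < N \<and> qtgt \<Gamma> (erep i) \<in> orb K aV (vrep (qtgt Q (i, j))) \<and>
        qlen Q (i, j) = qlen \<Gamma> (erep i)"
    and Qrows: "\<forall>k<N. qrows Q k = qrows \<Gamma> (vrep k) \<times> {..<n} \<and>
        (\<forall>r\<in>qrows \<Gamma> (vrep k). \<forall>t<n. \<forall>i<I. \<forall>j<dd i.
           qA Q k (r, t) (i, j) =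
             (\<Sum>e\<in>{e \<in> inc \<Gamma> (vrep k). e \<in> orb K aE (erep i)}.
                qA \<Gamma> (vrep k) r e * coord_mat n (Bi i) (\<rho> (inv\<^bsub>K\<^esub> (gsel k e))) Bg $$ (j, t)) \<and>
           qB Q k (r, t) (i, j) =
             (\<Sum>e\<in>{e \<in> inc \<Gamma> (vrep k). e \<in> orb K aE (erep i)}.
                qB \<Gamma> (vrep k) r e * coord_mat n (Bi i) (\<rho> (inv\<^bsub>K\<^esub> (gsel k e))) Bg $$ (j, t)))"
begin

sublocale grp: group K using act by (simp add: qg_action_def)

lemma finK: "finite (carrier K)" using act by (simp add: qg_action_def)

lemma rho_carrier: "g \<in> carrier K \<Longrightarrow> \<rho> g \<in> carrier_mat n n"
  using rep by (simp add: is_rep_def)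
lemma rho_mult: "g \<in> carrier K \<Longrightarrow> h \<in> carrier K \<Longrightarrow> \<rho> (g \<otimes>\<^bsub>K\<^esub> h) = \<rho> g * \<rho> h"
  using rep by (simp add: is_rep_def)
lemma rho_one: "\<rho> \<one>\<^bsub>K\<^esub> = 1\<^sub>m n"
  using rep by (simp add: is_rep_def)

lemma aE_one: "e \<in> qedges \<Gamma> \<Longrightarrow> aE \<one>\<^bsub>K\<^esub> e = e" using act by (simp add: qg_action_def)
lemma aE_mult: "g \<in> carrier K \<Longrightarrow> h \<in> carrier K \<Longrightarrow> e \<in> qedges \<Gamma> \<Longrightarrow> aE (g \<otimes>\<^bsub>K\<^esub> h) e = aE g (aE h e)"
  using act by (simp add: qg_action_def)
lemma aV_one: "v \<in> qverts \<Gamma> \<Longrightarrow> aV \<one>\<^bsub>K\<^esub> v = v" using act by (simp add: qg_action_def)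
lemma aV_mult: "g \<in> carrier K \<Longrightarrow> h \<in> carrier K \<Longrightarrow> v \<in> qverts \<Gamma> \<Longrightarrow> aV (g \<otimes>\<^bsub>K\<^esub> h) v = aV g (aV h v)"
  using act by (simp add: qg_action_def)

lemma stab_sub: "stab K aE e \<subseteq> carrier K" by (auto simp: stab_def)
lemma stab_fin: "finite (stab K aE e)" using finK stab_sub finite_subset by blast
lemma stab_one: "e \<in> qedges \<Gamma> \<Longrightarrow> \<one>\<^bsub>K\<^esub> \<in> stab K aE e" by (simp add: stab_def aE_one)
lemma stab_mult: "e \<in> qedges \<Gamma> \<Longrightarrow> a \<in> stab K aE e \<Longrightarrow> b \<in> stab K aE e \<Longrightarrow> a \<otimes>\<^bsub>K\<^esub> b \<in> stab K aE e"
  by (simp add: stab_def aE_mult)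
lemma stab_inv: "e \<in> qedges \<Gamma> \<Longrightarrow> a \<in> stab K aE e \<Longrightarrow> inv\<^bsub>K\<^esub> a \<in> stab K aE e"
  using act_inv_e(1)[OF act, of a e] by (auto simp: stab_def)

lemma schur:
  assumes e0: "e0 \<in> qedges \<Gamma>" and S: "S = stab K aE e0"
    and winv: "\<forall>s\<in>S. \<forall>v\<in>carrier_vec n. dotv n w (\<rho> s *\<^sub>v v) = dotv n w v"
    and W: "irreducible_sub n \<rho> S W" and nt: "\<exists>h\<in>S. \<exists>x\<in>W. \<rho> h *\<^sub>v x \<noteq> x" and u: "u \<in> W"
  shows "dotv n w u = 0"
proof -
  have Wsub: "is_subspace n W" and Winv: "\<forall>h\<in>S. \<forall>x\<in>W. \<rho> h *\<^sub>v x \<in> W"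
    using W by (auto simp: irreducible_sub_def invariant_sub_def)
  have Wc: "W \<subseteq> carrier_vec n" and Wsp: "vspan n W = W" using Wsub by (auto simp: is_subspace_def)
  have uc: "u \<in> carrier_vec n" using u Wc by auto
  have Sc: "S \<subseteq> carrier K" using S stab_sub by simp
  have Sf: "finite S" using S stab_fin by simp
  define P where "P = vec n (\<lambda>c. \<Sum>s\<in>S. (\<rho> s *\<^sub>v u) $ c)"
  have Pc: "P \<in> carrier_vec n" by (simp add: P_def)
  obtain xs where xs: "set xs = S" "distinct xs" using finite_distinct_list[OF Sf] by blast
  have PW: "P \<in> W"
  proof -
    let ?ws = "map (\<lambda>s. \<rho> s *\<^sub>v u) xs"
    have "set ?ws \<subseteq> W" using xs Winv u by auto
    moreover have "P = vec n (\<lambda>k. \<Sum>l<length ?ws. (\<lambda>_. 1) l * ?ws ! l $ k)"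
    proof -
      have "(\<Sum>l<length xs. (\<rho> (xs ! l) *\<^sub>v u) $ k) = (\<Sum>s\<in>S. (\<rho> s *\<^sub>v u) $ k)" for k
        using sum_list_distinct_conv_sum_set[OF xs(2), of "\<lambda>s. (\<rho> s *\<^sub>v u) $ k"] xs(1)
        by (simp add: sum_list_sum_nth atLeast0LessThan)
      then show ?thesis by (simp add: P_def)
    qed
    ultimately have "P \<in> vspan n W" unfolding vspan_def
      by (intro CollectI exI[of _ ?ws] exI[of _ "\<lambda>_. 1"] conjI)
    then show ?thesis using Wsp by simp
  qed
  have Pfix: "\<rho> a *\<^sub>v P = P" if a: "a \<in> S" for a
  proof (rule eq_vecI)
    have ac: "a \<in> carrier K" using a Sc by auto
    show "dim_vec (\<rho> a *\<^sub>v P) = dim_vec P" using rho_carrier[OF ac] by (simp add: P_def)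
    fix c assume "c < dim_vec P" then have c: "c < n" by (simp add: P_def)
    have "(\<rho> a *\<^sub>v P) $ c = (\<Sum>k<n. \<rho> a $$ (c,k) * (\<Sum>s\<in>S. (\<rho> s *\<^sub>v u) $ k))"
      using rho_carrier[OF ac] c by (subst mv_entry[of _ n n]) (auto simp: P_def)
    also have "\<dots> = (\<Sum>s\<in>S. (\<Sum>k<n. \<rho> a $$ (c,k) * (\<rho> s *\<^sub>v u) $ k))"
      by (simp add: sum_distrib_left sum.swap[of _ "{..<n}"])
    also have "\<dots> = (\<Sum>s\<in>S. (\<rho> a *\<^sub>v (\<rho> s *\<^sub>v u)) $ c)"
    proof (intro sum.cong refl)
      fix s assume "s \<in> S"
      then have sc: "s \<in> carrier K" using Sc by auto
      have "\<rho> s *\<^sub>v u \<in> carrier_vec n" using rho_carrier[OF sc] uc by simp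
      then show "(\<Sum>k<n. \<rho> a $$ (c,k) * (\<rho> s *\<^sub>v u) $ k) = (\<rho> a *\<^sub>v (\<rho> s *\<^sub>v u)) $ c"
        using mv_entry[OF rho_carrier[OF ac] _ c] by simp
    qed
    also have "\<dots> = (\<Sum>s\<in>S. (\<rho> (a \<otimes>\<^bsub>K\<^esub> s) *\<^sub>v u) $ c)"
    proof (intro sum.cong refl)
      fix s assume "s \<in> S"
      then have sc: "s \<in> carrier K" using Sc by auto
      show "(\<rho> a *\<^sub>v (\<rho> s *\<^sub>v u)) $ c = (\<rho> (a \<otimes>\<^bsub>K\<^esub> s) *\<^sub>v u) $ c"
        using rho_mult[OF ac sc] assoc_mult_mat_vec[OF rho_carrier[OF ac] rho_carrier[OF sc] uc] by simp
    qed
    also have "\<dots> = (\<Sum>s\<in>S. (\<rho> s *\<^sub>v u) $ c)"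
    proof -
      have "bij_betw (\<lambda>s. a \<otimes>\<^bsub>K\<^esub> s) S S"
      proof (rule bij_betwI[where g = "\<lambda>s. inv\<^bsub>K\<^esub> a \<otimes>\<^bsub>K\<^esub> s"])
        show "(\<lambda>s. a \<otimes>\<^bsub>K\<^esub> s) \<in> S \<rightarrow> S" using stab_mult[OF e0] a S by auto
        show "(\<lambda>s. inv\<^bsub>K\<^esub> a \<otimes>\<^bsub>K\<^esub> s) \<in> S \<rightarrow> S" using stab_mult[OF e0] stab_inv[OF e0] a S by auto
        show "inv\<^bsub>K\<^esub> a \<otimes>\<^bsub>K\<^esub> (a \<otimes>\<^bsub>K\<^esub> x) = x" if "x \<in> S" for x
          using that ac Sc by (simp add: grp.m_assoc[symmetric] subsetD)
        show "a \<otimes>\<^bsub>K\<^esub> (inv\<^bsub>K\<^esub> a \<otimes>\<^bsub>K\<^esub> y) = y" if "y \<in> S" for y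
          using that ac Sc by (simp add: grp.m_assoc[symmetric] subsetD)
      qed
      then show ?thesis by (rule sum.reindex_bij_betw)
    qed
    finally show "(\<rho> a *\<^sub>v P) $ c = P $ c" using c by (simp add: P_def)
  qed
  define W0 where "W0 = {x \<in> W. \<forall>h\<in>S. \<rho> h *\<^sub>v x = x}"
  have W0inv: "invariant_sub n \<rho> S W0"
  proof -
    have "vspan n W0 \<subseteq> W0"
    proof
      fix y assume "y \<in> vspan n W0"
      then obtain ws cs where ws: "set ws \<subseteq> W0" and y: "y = vec n (\<lambda>k. \<Sum>i<length ws. cs i * ws ! i $ k)"
        by (auto simp: vspan_def)
      have "set ws \<subseteq> W" using ws W0_def by auto
      then have "y \<in> vspan n W" using y unfolding vspan_def by (intro CollectI exI[of _ ws] exI[of _ cs] conjI)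
      then have yW: "y \<in> W" using Wsp by simp
      have "\<rho> h *\<^sub>v y = y" if h: "h \<in> S" for h
      proof -
        have wsc: "\<forall>y\<in>set ws. y \<in> carrier_vec n" using ws Wc W0_def by auto
        have "map ((*\<^sub>v) (\<rho> h)) ws = ws"
          using ws h by (intro map_idI) (auto simp: W0_def)
        then show ?thesis using mult_vspan[OF rho_carrier wsc, of h cs] h Sc y by auto
      qed
      then show "y \<in> W0" using yW by (simp add: W0_def)
    qed
    moreover have "W0 \<subseteq> vspan n W0"
    proof
      fix y assume y: "y \<in> W0"
      then have yc: "y \<in> carrier_vec n" using Wc W0_def by auto
      have "y = vec n (\<lambda>k. \<Sum>i<length [y]. (\<lambda>_. 1) i * [y] ! i $ k)"
        using yc by (intro eq_vecI) auto
      then show "y \<in> vspan n W0" unfolding vspan_def using y by (intro CollectI exI[of _ "[y]"] exI[of _ "\<lambda>_. 1"] conjI) auto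
    qed
    ultimately show ?thesis using Wc by (auto simp: invariant_sub_def is_subspace_def W0_def)
  qed
  have "W0 \<subseteq> W" by (auto simp: W0_def)
  then have "W0 = {0\<^sub>v n} \<or> W0 = W" using W W0inv by (auto simp: irreducible_sub_def)
  moreover have "W0 \<noteq> W" using nt by (auto simp: W0_def)
  ultimately have W0z: "W0 = {0\<^sub>v n}" by blast
  have "P \<in> W0" using PW Pfix by (simp add: W0_def)
  then have P0: "P = 0\<^sub>v n" using W0z by simp
  have "dotv n w P = (\<Sum>s\<in>S. dotv n w (\<rho> s *\<^sub>v u))"
  proof -
    have "dotv n w P = (\<Sum>c<n. \<Sum>s\<in>S. w c * (\<rho> s *\<^sub>v u) $ c)"
      unfolding dotv_def P_def by (simp add: sum_distrib_left)
    also have "\<dots> = (\<Sum>s\<in>S. \<Sum>c<n. w c * (\<rho> s *\<^sub>v u) $ c)" by (rule sum.swap)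
    finally show ?thesis by (simp add: dotv_def)
  qed
  also have "\<dots> = (\<Sum>s\<in>S. dotv n w u)" using winv uc by simp
  also have "\<dots> = of_nat (card S) * dotv n w u" by simp
  finally have "of_nat (card S) * dotv n w u = 0" using P0 by (simp add: dotv_def)
  moreover have "card S \<noteq> 0" using stab_one[OF e0] S Sf by auto
  ultimately show ?thesis by simp
qed

end

(* ---- part 5 ---- *)
context quot begin

lemma Bi_c: "i < I \<Longrightarrow> Bi i \<in> carrier_mat n n" using Bi by blast
lemma dd_le: "i < I \<Longrightarrow> dd i \<le> n" using Bi by blast

definition Binv where "Binv i = (SOME B. B \<in> carrier_mat n n \<and> Bi i * B = 1\<^sub>m n \<and> B * Bi i = 1\<^sub>m n)"

lemma Binv: assumes "i < I"
  shows "Binv i \<in> carrier_mat n n" "Bi i * Binv i = 1\<^sub>m n" "Binv i * Bi i = 1\<^sub>m n"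
proof -
  have "\<exists>B. B \<in> carrier_mat n n \<and> Bi i * B = 1\<^sub>m n \<and> B * Bi i = 1\<^sub>m n"
    using inv_exists[of "Bi i" n] Bi assms by blast
  from someI_ex[OF this] show "Binv i \<in> carrier_mat n n" "Bi i * Binv i = 1\<^sub>m n" "Binv i * Bi i = 1\<^sub>m n"
    unfolding Binv_def by auto
qed

lemma dot_coord:
  assumes w: "\<forall>c<n. (\<Sum>c'<n. \<rho> s $$ (c',c) * w c') = w c" and s: "s \<in> carrier K"
    and v: "v \<in> carrier_vec n"
  shows "dotv n w (\<rho> s *\<^sub>v v) = dotv n w v"
proof -
  have "dotv n w (\<rho> s *\<^sub>v v) = (\<Sum>c'<n. w c' * (\<Sum>c<n. \<rho> s $$ (c',c) * v $ c))"
    unfolding dotv_def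
  proof (intro sum.cong refl)
    fix c' assume "c' \<in> {..<n}"
    then show "w c' * (\<rho> s *\<^sub>v v) $ c' = w c' * (\<Sum>c<n. \<rho> s $$ (c',c) * v $ c)"
      using mv_entry[OF rho_carrier[OF s] v, of c'] by simp
  qed
  also have "\<dots> = (\<Sum>c'<n. \<Sum>c<n. w c' * \<rho> s $$ (c',c) * v $ c)"
    by (simp add: sum_distrib_left mult.assoc)
  also have "\<dots> = (\<Sum>c<n. \<Sum>c'<n. w c' * \<rho> s $$ (c',c) * v $ c)" by (rule sum.swap)
  also have "\<dots> = (\<Sum>c<n. (\<Sum>c'<n. \<rho> s $$ (c',c) * w c') * v $ c)"
    by (intro sum.cong refl) (simp add: sum_distrib_left mult.commute mult.left_commute)
  also have "\<dots> = (\<Sum>c<n. w c * v $ c)" using w by simp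
  finally show ?thesis by (simp add: dotv_def)
qed

lemma dot_coord_rev:
  assumes w: "\<forall>v\<in>carrier_vec n. dotv n w (\<rho> s *\<^sub>v v) = dotv n w v" and s: "s \<in> carrier K"
    and c: "c < n"
  shows "(\<Sum>c'<n. \<rho> s $$ (c',c) * w c') = w c"
proof -
  have uc: "unit_vec n c \<in> carrier_vec n" by simp
  have e: "(\<rho> s *\<^sub>v unit_vec n c) $ c' = \<rho> s $$ (c',c)" if "c' < n" for c'
  proof -
    have "(\<rho> s *\<^sub>v unit_vec n c) $ c' = (\<Sum>k<n. \<rho> s $$ (c',k) * unit_vec n c $ k)"
      using mv_entry[OF rho_carrier[OF s] uc that] .
    also have "\<dots> = (\<Sum>k<n. if k = c then \<rho> s $$ (c',k) else 0)"
      by (intro sum.cong refl) (simp add: unit_vec_def)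
    also have "\<dots> = \<rho> s $$ (c',c)" using c by (simp add: sum.delta)
    finally show ?thesis .
  qed
  have "dotv n w (\<rho> s *\<^sub>v unit_vec n c) = (\<Sum>c'<n. \<rho> s $$ (c',c) * w c')"
    unfolding dotv_def using e by (simp add: mult.commute)
  moreover have "dotv n w (unit_vec n c) = w c"
  proof -
    have "dotv n w (unit_vec n c) = (\<Sum>k<n. if k = c then w k else 0)"
      unfolding dotv_def by (intro sum.cong refl) (simp add: unit_vec_def)
    then show ?thesis using c by (simp add: sum.delta)
  qed
  ultimately show ?thesis using w uc by metis
qed

lemma nontriv_iso_elem:
  assumes "x \<in> nontriv_iso n \<rho> S"
  obtains ws cs where "set ws \<subseteq> \<Union>{W. irreducible_sub n \<rho> S W \<and> (\<exists>h\<in>S. \<exists>w\<in>W. \<rho> h *\<^sub>v w \<noteq> w)}"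
    "x = vec n (\<lambda>k. \<Sum>i<length ws. cs i * ws ! i $ k)"
  using assms unfolding nontriv_iso_def vspan_def by blast

lemma nontriv_zero:
  assumes i: "i < I" and w: "\<forall>s\<in>stab K aE (erep i). \<forall>c<n. (\<Sum>c'<n. \<rho> s $$ (c',c) * w c') = w c"
    and j: "dd i \<le> j" "j < n"
  shows "(\<Sum>c<n. Bi i $$ (c,j) * w c) = 0"
proof -
  let ?S = "stab K aE (erep i)"
  have e0: "erep i \<in> qedges \<Gamma>" using erep_in i by auto
  have winv: "\<forall>s\<in>?S. \<forall>v\<in>carrier_vec n. dotv n w (\<rho> s *\<^sub>v v) = dotv n w v"
    using dot_coord w stab_sub by blast
  have "col (Bi i) j \<in> nontriv_iso n \<rho> ?S" using Bi i j by blast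
  then obtain ws cs where ws: "set ws \<subseteq> \<Union>{W. irreducible_sub n \<rho> ?S W \<and> (\<exists>h\<in>?S. \<exists>w\<in>W. \<rho> h *\<^sub>v w \<noteq> w)}"
    and x: "col (Bi i) j = vec n (\<lambda>k. \<Sum>i<length ws. cs i * ws ! i $ k)" by (rule nontriv_iso_elem)
  have "dotv n w (ws ! l) = 0" if "l < length ws" for l
  proof -
    from that ws obtain W where "irreducible_sub n \<rho> ?S W" "\<exists>h\<in>?S. \<exists>w\<in>W. \<rho> h *\<^sub>v w \<noteq> w" "ws ! l \<in> W"
      using nth_mem by blast
    then show ?thesis using schur[OF e0 refl winv] by blast
  qed
  then have "dotv n w (col (Bi i) j) = 0" unfolding x dotv_vspan by simp
  moreover have "dotv n w (col (Bi i) j) = (\<Sum>c<n. Bi i $$ (c,j) * w c)"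
    unfolding dotv_def using Bi_c[OF i] j by (intro sum.cong refl) (simp add: mult.commute)
  ultimately show ?thesis by simp
qed

lemma dot_decomp:
  assumes i: "i < I" and M: "M \<in> carrier_mat n n" and a: "\<alpha> \<in> carrier_vec n"
  shows "dotv n w (M *\<^sub>v (Bi i *\<^sub>v \<alpha>)) = (\<Sum>j<n. \<alpha> $ j * dotv n w (M *\<^sub>v col (Bi i) j))"
proof -
  have Bc: "Bi i \<in> carrier_mat n n" using Bi_c[OF i] .
  have colc: "col (Bi i) j \<in> carrier_vec n" for j using Bc carrier_vecI[of "col (Bi i) j" n] by simp
  have ent: "(M *\<^sub>v (Bi i *\<^sub>v \<alpha>)) $ c = (\<Sum>j<n. \<alpha> $ j * (M *\<^sub>v col (Bi i) j) $ c)" if c: "c < n" for c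
  proof -
    have "(M *\<^sub>v (Bi i *\<^sub>v \<alpha>)) $ c = ((M * Bi i) *\<^sub>v \<alpha>) $ c"
      using assoc_mult_mat_vec[OF M Bc a] by simp
    also have "\<dots> = (\<Sum>j<n. (M * Bi i) $$ (c,j) * \<alpha> $ j)"
      using mv_entry[of "M * Bi i" n n \<alpha> c] M Bc a c by simp
    also have "\<dots> = (\<Sum>j<n. \<alpha> $ j * (M *\<^sub>v col (Bi i) j) $ c)"
    proof (intro sum.cong refl)
      fix j assume j: "j \<in> {..<n}"
      have "(M * Bi i) $$ (c,j) = (\<Sum>k<n. M $$ (c,k) * Bi i $$ (k,j))"
        using mult_entry[OF M Bc c] j by simp
      also have "\<dots> = (M *\<^sub>v col (Bi i) j) $ c"
        using mv_entry[OF M colc c] j Bc by simp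
      finally show "(M * Bi i) $$ (c,j) * \<alpha> $ j = \<alpha> $ j * (M *\<^sub>v col (Bi i) j) $ c" by simp
    qed
    finally show ?thesis .
  qed
  have "dotv n w (M *\<^sub>v (Bi i *\<^sub>v \<alpha>)) = (\<Sum>c<n. \<Sum>j<n. w c * (\<alpha> $ j * (M *\<^sub>v col (Bi i) j) $ c))"
    unfolding dotv_def using ent by (simp add: sum_distrib_left)
  also have "\<dots> = (\<Sum>j<n. \<Sum>c<n. w c * (\<alpha> $ j * (M *\<^sub>v col (Bi i) j) $ c))" by (rule sum.swap)
  also have "\<dots> = (\<Sum>j<n. \<alpha> $ j * dotv n w (M *\<^sub>v col (Bi i) j))"
    unfolding dotv_def by (simp add: sum_distrib_left mult.left_commute)
  finally show ?thesis .
qed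

lemma indep:
  assumes i: "i < I" and s: "s \<in> stab K aE (erep i)" and c: "c < n"
  shows "(\<Sum>c'<n. \<rho> s $$ (c',c) * (\<Sum>j<dd i. Binv i $$ (j,c') * u j)) = (\<Sum>j<dd i. Binv i $$ (j,c) * u j)"
proof -
  let ?S = "stab K aE (erep i)"
  define w where "w c = (\<Sum>j<dd i. Binv i $$ (j,c) * u j)" for c
  have sc: "s \<in> carrier K" using s stab_sub by auto
  have Bc: "Bi i \<in> carrier_mat n n" using Bi_c[OF i] .
  have Bic: "Binv i \<in> carrier_mat n n" using Binv[OF i] by simp
  have ddn: "dd i \<le> n" using dd_le[OF i] .
  have a: "dotv n w (col (Bi i) j) = (if j < dd i then u j else 0)" if j: "j < n" for j
  proof -
    have "dotv n w (col (Bi i) j) = (\<Sum>c<n. \<Sum>j'<dd i. Binv i $$ (j',c) * u j' * Bi i $$ (c,j))"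
      unfolding dotv_def w_def using Bc j by (intro sum.cong refl) (simp add: sum_distrib_right)
    also have "\<dots> = (\<Sum>j'<dd i. \<Sum>c<n. Binv i $$ (j',c) * u j' * Bi i $$ (c,j))" by (rule sum.swap)
    also have "\<dots> = (\<Sum>j'<dd i. u j' * (Binv i * Bi i) $$ (j',j))"
    proof (intro sum.cong refl)
      fix j' assume "j' \<in> {..<dd i}"
      then have j': "j' < n" using ddn by auto
      show "(\<Sum>c<n. Binv i $$ (j',c) * u j' * Bi i $$ (c,j)) = u j' * (Binv i * Bi i) $$ (j',j)"
        using mult_entry[OF Bic Bc j' j] by (simp add: sum_distrib_left mult.commute mult.left_commute)
    qed
    also have "\<dots> = (\<Sum>j'<dd i. if j' = j then u j' else 0)"
      using Binv(3)[OF i] j ddn by (intro sum.cong refl) auto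
    also have "\<dots> = (if j < dd i then u j else 0)" by (simp add: sum.delta)
    finally show ?thesis .
  qed
  have b: "dotv n w x = 0" if "x \<in> vspan n (col (Bi i) ` {dd i..<n})" for x
  proof -
    from that obtain ws cs where ws: "set ws \<subseteq> col (Bi i) ` {dd i..<n}"
      and x: "x = vec n (\<lambda>k. \<Sum>i<length ws. cs i * ws ! i $ k)" by (auto simp: vspan_def)
    have "dotv n w (ws ! l) = 0" if "l < length ws" for l
    proof -
      from that ws obtain j where "j \<in> {dd i..<n}" "ws ! l = col (Bi i) j" using nth_mem by blast
      then show ?thesis using a by auto
    qed
    then show ?thesis unfolding x dotv_vspan by simp
  qed
  have cc: "\<rho> s *\<^sub>v col (Bi i) j \<in> vspan n (col (Bi i) ` {dd i..<n})" if j: "dd i \<le> j" "j < n" for j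
  proof -
    have "col (Bi i) j \<in> nontriv_iso n \<rho> ?S" using Bi i j by blast
    then obtain ws cs where ws: "set ws \<subseteq> \<Union>{W. irreducible_sub n \<rho> ?S W \<and> (\<exists>h\<in>?S. \<exists>w\<in>W. \<rho> h *\<^sub>v w \<noteq> w)}"
      and x: "col (Bi i) j = vec n (\<lambda>k. \<Sum>i<length ws. cs i * ws ! i $ k)" by (rule nontriv_iso_elem)
    have wsc: "\<forall>y\<in>set ws. y \<in> carrier_vec n"
      using ws by (force simp: irreducible_sub_def invariant_sub_def is_subspace_def)
    have sub: "set (map ((*\<^sub>v) (\<rho> s)) ws) \<subseteq> \<Union>{W. irreducible_sub n \<rho> ?S W \<and> (\<exists>h\<in>?S. \<exists>w\<in>W. \<rho> h *\<^sub>v w \<noteq> w)}"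
    proof
      fix y assume "y \<in> set (map ((*\<^sub>v) (\<rho> s)) ws)"
      then obtain z where z: "z \<in> set ws" "y = \<rho> s *\<^sub>v z" by auto
      then obtain W where W: "irreducible_sub n \<rho> ?S W" "\<exists>h\<in>?S. \<exists>w\<in>W. \<rho> h *\<^sub>v w \<noteq> w" "z \<in> W" using ws by blast
      then have "y \<in> W" using z s by (auto simp: irreducible_sub_def invariant_sub_def)
      then show "y \<in> \<Union>{W. irreducible_sub n \<rho> ?S W \<and> (\<exists>h\<in>?S. \<exists>w\<in>W. \<rho> h *\<^sub>v w \<noteq> w)}" using W by blast
    qed
    have "\<rho> s *\<^sub>v col (Bi i) j \<in> nontriv_iso n \<rho> ?S"
      unfolding x mult_vspan[OF rho_carrier[OF sc] wsc] nontriv_iso_def vspan_def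
      apply (rule CollectI) apply (rule exI[of _ "map ((*\<^sub>v) (\<rho> s)) ws"]) apply (rule exI[of _ cs])
      apply (rule conjI) apply (rule sub) apply (rule refl) done


    then show ?thesis using Bi i by blast
  qed
  have d: "\<rho> s *\<^sub>v col (Bi i) j = col (Bi i) j" if j: "j < dd i" for j
    using Bi i j s by (auto simp: fixed_space_def)
  have e: "dotv n w (\<rho> s *\<^sub>v v) = dotv n w v" if v: "v \<in> carrier_vec n" for v
  proof -
    define \<alpha> where "\<alpha> = Binv i *\<^sub>v v"
    have ac: "\<alpha> \<in> carrier_vec n" using Bic by (auto simp: \<alpha>_def intro!: carrier_vecI)

    have vv: "v = Bi i *\<^sub>v \<alpha>"
      using assoc_mult_mat_vec[OF Bc Bic v] Binv(2)[OF i] v by (simp add: \<alpha>_def)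
    have one: "1\<^sub>m n *\<^sub>v x = x" if "x \<in> carrier_vec n" for x :: "complex vec" using that by (rule one_mult_mat_vec)


    have "dotv n w (\<rho> s *\<^sub>v v) = (\<Sum>j<n. \<alpha> $ j * dotv n w (\<rho> s *\<^sub>v col (Bi i) j))"
      unfolding vv by (rule dot_decomp[OF i rho_carrier[OF sc] ac])
    also have "\<dots> = (\<Sum>j<n. \<alpha> $ j * dotv n w (1\<^sub>m n *\<^sub>v col (Bi i) j))"
    proof (intro sum.cong refl)
      fix j assume "j \<in> {..<n}"
      then have j: "j < n" by simp
      have cj: "col (Bi i) j \<in> carrier_vec n" using Bc carrier_vecI[of "col (Bi i) j" n] by simp

      show "\<alpha> $ j * dotv n w (\<rho> s *\<^sub>v col (Bi i) j) = \<alpha> $ j * dotv n w (1\<^sub>m n *\<^sub>v col (Bi i) j)"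
      proof (cases "j < dd i")
        case True then show ?thesis using d one[OF cj] by simp
      next
        case False
        then have "dotv n w (\<rho> s *\<^sub>v col (Bi i) j) = 0" using b cc j by simp
        moreover have "dotv n w (col (Bi i) j) = 0" using a j False by simp
        ultimately show ?thesis using one[OF cj] by simp
      qed
    qed
    also have "\<dots> = dotv n w (1\<^sub>m n *\<^sub>v (Bi i *\<^sub>v \<alpha>))"
      by (rule dot_decomp[OF i _ ac, symmetric]) simp
    also have "\<dots> = dotv n w v" using vv v by simp
    finally show ?thesis .
  qed
  show ?thesis using dot_coord_rev[OF _ sc c, of w] e by (simp add: w_def)
qed

end

(* ---- part 6 ---- *)
context quot begin

lemma rho_mult_entry:
  "a \<in> carrier K \<Longrightarrow> b \<in> carrier K \<Longrightarrow> c < n \<Longrightarrow> s < n \<Longrightarrow>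
   \<rho> (a \<otimes>\<^bsub>K\<^esub> b) $$ (c,s) = (\<Sum>k<n. \<rho> a $$ (c,k) * \<rho> b $$ (k,s))"
  using rho_mult mult_entry[OF rho_carrier rho_carrier] by simp

lemma orb_mem: "g \<in> carrier K \<Longrightarrow> aE g x \<in> orb K aE x" by (auto simp: orb_def)

lemma orb_edge: "x \<in> qedges \<Gamma> \<Longrightarrow> e \<in> orb K aE x \<Longrightarrow> e \<in> qedges \<Gamma>"
  using act_props(1)[OF act] by (auto simp: orb_def)

lemma orb_sym: assumes "x \<in> qedges \<Gamma>" "e \<in> orb K aE x" shows "x \<in> orb K aE e"
proof -
  from assms(2) obtain g where g: "g \<in> carrier K" "e = aE g x" by (auto simp: orb_def)
  then have "aE (inv\<^bsub>K\<^esub> g) e = x" using act_inv_e(1)[OF act g(1) assms(1)] by simp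
  then show ?thesis using g by (auto simp: orb_def intro!: exI[of _ "inv\<^bsub>K\<^esub> g"])
qed

lemma orb_trans: assumes "x \<in> qedges \<Gamma>" "y \<in> orb K aE x" "z \<in> orb K aE y" shows "z \<in> orb K aE x"
proof -
  from assms(2) obtain g where g: "g \<in> carrier K" "y = aE g x" by (auto simp: orb_def)
  from assms(3) obtain h where h: "h \<in> carrier K" "z = aE h y" by (auto simp: orb_def)
  have "z = aE (h \<otimes>\<^bsub>K\<^esub> g) x" using g h aE_mult assms(1) by simp
  then show ?thesis using g h by (auto simp: orb_def)
qed

lemma sum_swap_mult: "(\<Sum>c<n. (\<Sum>k<n. a c k) * (w c :: complex)) = (\<Sum>k<n. \<Sum>c<n. a c k * w c)"
  by (simp add: sum_distrib_right) (rule sum.swap)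

definition idx where "idx e = (THE i. i < I \<and> e \<in> orb K aE (erep i))"

lemma idx_unique: assumes "e \<in> qedges \<Gamma>" "i < I" "e \<in> orb K aE (erep i)" "i' < I" "e \<in> orb K aE (erep i')"
  shows "i = i'"
proof -
  have "erep i' \<in> orb K aE e" using orb_sym[OF erep_in[rule_format, OF assms(4)] assms(5)] .
  then have "erep i' \<in> orb K aE (erep i)" using orb_trans[OF erep_in[rule_format, OF assms(2)] assms(3)] by simp
  then show ?thesis using erep_uniq assms(2,4) by blast
qed

lemma idx: assumes "e \<in> qedges \<Gamma>" shows "idx e < I" "e \<in> orb K aE (erep (idx e))"
proof -
  obtain i where i: "i < I" "e \<in> orb K aE (erep i)" using erep_cov assms by blast
  have "idx e = i" unfolding idx_def using i idx_unique[OF assms] by blast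
  then show "idx e < I" "e \<in> orb K aE (erep (idx e))" using i by auto
qed

lemma idx_eq: "e \<in> qedges \<Gamma> \<Longrightarrow> i < I \<Longrightarrow> e \<in> orb K aE (erep i) \<Longrightarrow> idx e = i"
  using idx idx_unique by blast

lemma idx_erep: "i < I \<Longrightarrow> idx (erep i) = i"
  using idx_eq[of "erep i" i] erep_in orb_mem[of "\<one>\<^bsub>K\<^esub>" "erep i"] aE_one by auto

lemma idx_act: assumes "g \<in> carrier K" "e \<in> qedges \<Gamma>" shows "idx (aE g e) = idx e"
proof -
  have "aE g e \<in> orb K aE (erep (idx e))"
    using orb_trans[OF erep_in[rule_format, OF idx(1)[OF assms(2)]] idx(2)[OF assms(2)] orb_mem[OF assms(1)]] .
  then show ?thesis using idx_eq idx assms act_props(1)[OF act] by blast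
qed

definition hs where "hs e = (SOME h. h \<in> carrier K \<and> aE h (erep (idx e)) = e)"

lemma hs: assumes "e \<in> qedges \<Gamma>" shows "hs e \<in> carrier K" "aE (hs e) (erep (idx e)) = e"
proof -
  have "\<exists>h. h \<in> carrier K \<and> aE h (erep (idx e)) = e" using idx(2)[OF assms] by (auto simp: orb_def)
  from someI_ex[OF this] show "hs e \<in> carrier K" "aE (hs e) (erep (idx e)) = e" unfolding hs_def by auto
qed

definition Wv where "Wv f i c x = (\<Sum>j<dd i. Binv i $$ (j,c) * f (i, j) x)"

definition lift where "lift f = (\<lambda>(e,s) x. \<Sum>c<n. \<rho> (inv\<^bsub>K\<^esub> (hs e)) $$ (c,s) * Wv f (idx e) c x)"

definition proj where "proj F = (\<lambda>(i,j) x. \<Sum>c<n. Bi i $$ (c,j) * F (erep i, c) x)"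

definition eqv where "eqv F \<longleftrightarrow> (\<forall>g\<in>carrier K. \<forall>e\<in>qedges \<Gamma>. \<forall>s<n. \<forall>x.
    F (aE g e, s) x = (\<Sum>c<n. \<rho> (inv\<^bsub>K\<^esub> g) $$ (c,s) * F (e,c) x))"

lemma lift_rep:
  assumes e: "e \<in> qedges \<Gamma>" and h: "h \<in> carrier K" "aE h (erep (idx e)) = e" and s: "s < n"
  shows "lift f (e,s) x = (\<Sum>c<n. \<rho> (inv\<^bsub>K\<^esub> h) $$ (c,s) * Wv f (idx e) c x)"
proof -
  let ?i = "idx e" let ?h0 = "hs e"
  have i: "?i < I" using idx[OF e] by simp
  have ei: "erep ?i \<in> qedges \<Gamma>" using erep_in i by auto
  have h0: "?h0 \<in> carrier K" "aE ?h0 (erep ?i) = e" using hs[OF e] by auto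
  define s0 where "s0 = inv\<^bsub>K\<^esub> h \<otimes>\<^bsub>K\<^esub> ?h0"
  have s0c: "s0 \<in> carrier K" using h h0 by (simp add: s0_def)
  have "aE s0 (erep ?i) = aE (inv\<^bsub>K\<^esub> h) e" using aE_mult h h0 ei by (simp add: s0_def)
  also have "\<dots> = erep ?i" using act_inv_e(1)[OF act h(1) ei] h(2) by simp
  finally have s0st: "s0 \<in> stab K aE (erep ?i)" using s0c by (simp add: stab_def)
  have is0: "inv\<^bsub>K\<^esub> s0 \<in> stab K aE (erep ?i)" using stab_inv[OF ei s0st] .
  have "?h0 = h \<otimes>\<^bsub>K\<^esub> s0" using h h0 by (simp add: s0_def grp.m_assoc[symmetric])
  then have ih0: "inv\<^bsub>K\<^esub> ?h0 = inv\<^bsub>K\<^esub> s0 \<otimes>\<^bsub>K\<^esub> inv\<^bsub>K\<^esub> h" using h s0c by (simp add: grp.inv_mult_group)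
  have "lift f (e,s) x = (\<Sum>c<n. \<rho> (inv\<^bsub>K\<^esub> ?h0) $$ (c,s) * Wv f ?i c x)" by (simp add: lift_def)
  also have "\<dots> = (\<Sum>c<n. (\<Sum>k<n. \<rho> (inv\<^bsub>K\<^esub> s0) $$ (c,k) * \<rho> (inv\<^bsub>K\<^esub> h) $$ (k,s)) * Wv f ?i c x)"
    unfolding ih0 using s0c h s by (intro sum.cong refl) (simp add: rho_mult_entry)
  also have "\<dots> = (\<Sum>k<n. \<Sum>c<n. \<rho> (inv\<^bsub>K\<^esub> s0) $$ (c,k) * \<rho> (inv\<^bsub>K\<^esub> h) $$ (k,s) * Wv f ?i c x)"
    by (rule sum_swap_mult)
  also have "\<dots> = (\<Sum>k<n. \<rho> (inv\<^bsub>K\<^esub> h) $$ (k,s) * (\<Sum>c<n. \<rho> (inv\<^bsub>K\<^esub> s0) $$ (c,k) * Wv f ?i c x))"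
    by (intro sum.cong refl) (simp add: sum_distrib_left mult.commute mult.left_commute)
  also have "\<dots> = (\<Sum>k<n. \<rho> (inv\<^bsub>K\<^esub> h) $$ (k,s) * Wv f ?i k x)"
    using indep[OF i is0] by (intro sum.cong refl) (simp add: Wv_def)
  finally show ?thesis .
qed

lemma lift_eqv: "eqv (lift f)"
  unfolding eqv_def
proof (intro ballI allI impI)
  fix g e s x assume g: "g \<in> carrier K" and e: "e \<in> qedges \<Gamma>" and s: "s < n"
  let ?h0 = "hs e" let ?i = "idx e"
  have h0: "?h0 \<in> carrier K" "aE ?h0 (erep ?i) = e" using hs[OF e] by auto
  have i: "?i < I" using idx[OF e] by simp
  have ei: "erep ?i \<in> qedges \<Gamma>" using erep_in i by auto
  have ge: "aE g e \<in> qedges \<Gamma>" using act_props(1)[OF act g e] .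
  have ig: "idx (aE g e) = ?i" using idx_act[OF g e] .
  have gh: "g \<otimes>\<^bsub>K\<^esub> ?h0 \<in> carrier K" "aE (g \<otimes>\<^bsub>K\<^esub> ?h0) (erep (idx (aE g e))) = aE g e"
    using g h0 ig aE_mult ei by auto
  have "lift f (aE g e, s) x = (\<Sum>c<n. \<rho> (inv\<^bsub>K\<^esub> (g \<otimes>\<^bsub>K\<^esub> ?h0)) $$ (c,s) * Wv f ?i c x)"
    using lift_rep[OF ge gh s] ig by simp
  also have "\<dots> = (\<Sum>c<n. (\<Sum>k<n. \<rho> (inv\<^bsub>K\<^esub> ?h0) $$ (c,k) * \<rho> (inv\<^bsub>K\<^esub> g) $$ (k,s)) * Wv f ?i c x)"
    using g h0 s by (intro sum.cong refl) (simp add: grp.inv_mult_group rho_mult_entry)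
  also have "\<dots> = (\<Sum>k<n. \<Sum>c<n. \<rho> (inv\<^bsub>K\<^esub> ?h0) $$ (c,k) * \<rho> (inv\<^bsub>K\<^esub> g) $$ (k,s) * Wv f ?i c x)"
    by (rule sum_swap_mult)
  also have "\<dots> = (\<Sum>k<n. \<rho> (inv\<^bsub>K\<^esub> g) $$ (k,s) * lift f (e,k) x)"
    by (intro sum.cong refl) (simp add: sum_distrib_left lift_def mult.commute mult.left_commute)
  finally show "lift f (aE g e, s) x = (\<Sum>c<n. \<rho> (inv\<^bsub>K\<^esub> g) $$ (c,s) * lift f (e,c) x)" .
qed

lemma lift_erep: assumes i: "i < I" and c: "c < n" shows "lift f (erep i, c) x = Wv f i c x"
proof -
  have ei: "erep i \<in> qedges \<Gamma>" using erep_in i by auto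
  have "lift f (erep i, c) x = (\<Sum>k<n. \<rho> (inv\<^bsub>K\<^esub> \<one>\<^bsub>K\<^esub>) $$ (k,c) * Wv f i k x)"
    using lift_rep[OF ei _ _ c, of "\<one>\<^bsub>K\<^esub>"] aE_one[OF ei] idx_erep[OF i] by simp
  also have "\<dots> = (\<Sum>k<n. if k = c then Wv f i k x else 0)"
    using c by (intro sum.cong refl) (simp add: rho_one)
  also have "\<dots> = Wv f i c x" using c by simp
  finally show ?thesis .
qed

lemma proj_lift: assumes i: "i < I" and j: "j < dd i" shows "proj (lift f) (i,j) x = f (i,j) x"
proof -
  have ddn: "dd i \<le> n" using dd_le[OF i] .
  have jn: "j < n" using j ddn by simp
  have Bc: "Bi i \<in> carrier_mat n n" using Bi_c[OF i] .
  have Bic: "Binv i \<in> carrier_mat n n" using Binv[OF i] by simp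
  have "proj (lift f) (i,j) x = (\<Sum>c<n. Bi i $$ (c,j) * lift f (erep i, c) x)"
    by (simp add: proj_def)
  also have "\<dots> = (\<Sum>c<n. Bi i $$ (c,j) * Wv f i c x)"
    by (intro sum.cong refl) (simp add: lift_erep[OF i])

  also have "\<dots> = (\<Sum>c<n. \<Sum>j'<dd i. f (i,j') x * (Binv i $$ (j',c) * Bi i $$ (c,j)))"
    unfolding Wv_def by (simp add: sum_distrib_left mult.commute mult.left_commute)
  also have "\<dots> = (\<Sum>j'<dd i. \<Sum>c<n. f (i,j') x * (Binv i $$ (j',c) * Bi i $$ (c,j)))" by (rule sum.swap)
  also have "\<dots> = (\<Sum>j'<dd i. f (i,j') x * (Binv i * Bi i) $$ (j',j))"
  proof (intro sum.cong refl)
    fix j' assume "j' \<in> {..<dd i}" then have j': "j' < n" using ddn by simp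
    show "(\<Sum>c<n. f (i,j') x * (Binv i $$ (j',c) * Bi i $$ (c,j))) = f (i,j') x * (Binv i * Bi i) $$ (j',j)"
      using mult_entry[OF Bic Bc j' jn] by (simp add: sum_distrib_left)
  qed
  also have "\<dots> = (\<Sum>j'<dd i. if j' = j then f (i,j') x else 0)"
    using Binv(3)[OF i] ddn jn by (intro sum.cong refl) auto

  also have "\<dots> = f (i,j) x" using j by simp
  finally show ?thesis .
qed

lemma lift_proj:
  assumes F: "eqv F" and e: "e \<in> qedges \<Gamma>" and s: "s < n"
  shows "lift (proj F) (e,s) x = F (e,s) x"
proof -
  let ?i = "idx e" let ?h = "hs e"
  have i: "?i < I" using idx[OF e] by simp
  have ei: "erep ?i \<in> qedges \<Gamma>" using erep_in i by auto
  have h: "?h \<in> carrier K" "aE ?h (erep ?i) = e" using hs[OF e] by auto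
  have ddn: "dd ?i \<le> n" using dd_le[OF i] .
  have Bc: "Bi ?i \<in> carrier_mat n n" using Bi_c[OF i] .
  have Bic: "Binv ?i \<in> carrier_mat n n" using Binv[OF i] by simp
  define w where "w c = F (erep ?i, c) x" for c
  have winv: "\<forall>s\<in>stab K aE (erep ?i). \<forall>c<n. (\<Sum>c'<n. \<rho> s $$ (c',c) * w c') = w c"
  proof (intro ballI allI impI)
    fix s0 c assume s0: "s0 \<in> stab K aE (erep ?i)" and c: "c < n"
    have is0: "inv\<^bsub>K\<^esub> s0 \<in> carrier K" "aE (inv\<^bsub>K\<^esub> s0) (erep ?i) = erep ?i"
      using stab_inv[OF ei s0] by (auto simp: stab_def)
    have s0c: "s0 \<in> carrier K" using s0 stab_sub by auto
    have "w c = F (aE (inv\<^bsub>K\<^esub> s0) (erep ?i), c) x" using is0 by (simp add: w_def)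
    also have "\<dots> = (\<Sum>c'<n. \<rho> (inv\<^bsub>K\<^esub> (inv\<^bsub>K\<^esub> s0)) $$ (c',c) * F (erep ?i, c') x)"
      using F is0(1) ei c unfolding eqv_def by blast
    finally show "(\<Sum>c'<n. \<rho> s0 $$ (c',c) * w c') = w c" using s0c by (simp add: w_def)
  qed
  have z: "(\<Sum>c'<n. Bi ?i $$ (c',j) * w c') = 0" if "dd ?i \<le> j" "j < n" for j
    using nontriv_zero[OF i winv that] .
  have Wvc: "Wv (proj F) ?i c x = w c" if c: "c < n" for c
  proof -
    have "Wv (proj F) ?i c x = (\<Sum>j<dd ?i. Binv ?i $$ (j,c) * (\<Sum>c'<n. Bi ?i $$ (c',j) * w c'))"
      by (simp add: Wv_def proj_def w_def)
    also have "\<dots> = (\<Sum>j<n. Binv ?i $$ (j,c) * (\<Sum>c'<n. Bi ?i $$ (c',j) * w c'))"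
      by (rule sum.mono_neutral_left) (use ddn z in auto)
    also have "\<dots> = (\<Sum>c'<n. \<Sum>j<n. w c' * (Bi ?i $$ (c',j) * Binv ?i $$ (j,c)))"
      by (subst sum.swap) (simp add: sum_distrib_left mult.commute mult.left_commute)
    also have "\<dots> = (\<Sum>c'<n. w c' * (Bi ?i * Binv ?i) $$ (c',c))"
    proof (intro sum.cong refl)
      fix c' assume "c' \<in> {..<n}" then have c': "c' < n" by simp
      show "(\<Sum>j<n. w c' * (Bi ?i $$ (c',j) * Binv ?i $$ (j,c))) = w c' * (Bi ?i * Binv ?i) $$ (c',c)"
        using mult_entry[OF Bc Bic c' c] by (simp add: sum_distrib_left)
    qed
    also have "\<dots> = (\<Sum>c'<n. if c' = c then w c' else 0)"
      using Binv(2)[OF i] c by (intro sum.cong refl) auto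
    also have "\<dots> = w c" using c by simp
    finally show ?thesis .
  qed
  have "lift (proj F) (e,s) x = (\<Sum>c<n. \<rho> (inv\<^bsub>K\<^esub> ?h) $$ (c,s) * w c)"
    using Wvc by (simp add: lift_def)
  also have "\<dots> = F (aE ?h (erep ?i), s) x"
    using F h(1) ei s unfolding eqv_def w_def by simp
  finally show ?thesis using h by simp
qed

end

(* ---- part 7 ---- *)
context quot begin

lemma vorb_sym: assumes "x \<in> qverts \<Gamma>" "y \<in> orb K aV x" shows "x \<in> orb K aV y"
proof -
  from assms(2) obtain g where g: "g \<in> carrier K" "y = aV g x" by (auto simp: orb_def)
  then have "aV (inv\<^bsub>K\<^esub> g) y = x" using act_inv_v(1)[OF act g(1) assms(1)] by simp
  then show ?thesis using g by (auto simp: orb_def intro!: exI[of _ "inv\<^bsub>K\<^esub> g"])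
qed

lemma vorb_trans: assumes "x \<in> qverts \<Gamma>" "y \<in> orb K aV x" "z \<in> orb K aV y" shows "z \<in> orb K aV x"
proof -
  from assms(2) obtain g where g: "g \<in> carrier K" "y = aV g x" by (auto simp: orb_def)
  from assms(3) obtain h where h: "h \<in> carrier K" "z = aV h y" by (auto simp: orb_def)
  have "z = aV (h \<otimes>\<^bsub>K\<^esub> g) x" using g h aV_mult assms(1) by simp
  then show ?thesis using g h by (auto simp: orb_def)
qed

lemma vorb_vert: "x \<in> qverts \<Gamma> \<Longrightarrow> y \<in> orb K aV x \<Longrightarrow> y \<in> qverts \<Gamma>"
  using act_props(2)[OF act] by (auto simp: orb_def)

lemma vrep_same: assumes "k < N" "k' < N" "x \<in> qverts \<Gamma>" "x \<in> orb K aV (vrep k)" "x \<in> orb K aV (vrep k')"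
  shows "k = k'"
proof -
  have vk: "vrep k \<in> qverts \<Gamma>" "vrep k' \<in> qverts \<Gamma>" using vrep_in assms by auto
  have "vrep k' \<in> orb K aV x" using vorb_sym[OF vk(2) assms(5)] .
  then have "vrep k' \<in> orb K aV (vrep k)" using vorb_trans[OF vk(1) assms(4)] by simp
  then show ?thesis using vrep_uniq assms by blast
qed

lemma edge_ends: "e \<in> qedges \<Gamma> \<Longrightarrow> qsrc \<Gamma> e \<in> qverts \<Gamma> \<and> qtgt \<Gamma> e \<in> qverts \<Gamma>"
  using wf by (simp add: qgraph_wf_def)

lemma vq:
  assumes k: "k < N" and e: "e \<in> inc \<Gamma> (vrep k)" and j: "j < dd (idx e)"
  shows "(idx e, j) \<in> inc Q k" "(qsrc Q (idx e, j) = k) = (qsrc \<Gamma> e = vrep k)"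
    "qlen Q (idx e, j) = qlen \<Gamma> e"
proof -
  let ?i = "idx e" let ?g = "hs e"
  have eE: "e \<in> qedges \<Gamma>" using e by (simp add: inc_def)
  have i: "?i < I" using idx[OF eE] by simp
  have ei: "erep ?i \<in> qedges \<Gamma>" using erep_in i by auto
  have g: "?g \<in> carrier K" "aE ?g (erep ?i) = e" using hs[OF eE] by auto
  have src: "qsrc \<Gamma> e = aV ?g (qsrc \<Gamma> (erep ?i))" and tgt: "qtgt \<Gamma> e = aV ?g (qtgt \<Gamma> (erep ?i))"
    using act_props(3,4)[OF act g(1) ei] g(2) by auto
  have se: "qsrc \<Gamma> (erep ?i) \<in> qverts \<Gamma>" "qtgt \<Gamma> (erep ?i) \<in> qverts \<Gamma>" using edge_ends[OF ei] by auto
  define ks where "ks = qsrc Q (?i, j)" define kt where "kt = qtgt Q (?i, j)"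
  have kst: "ks < N" "qsrc \<Gamma> (erep ?i) \<in> orb K aV (vrep ks)" "kt < N" "qtgt \<Gamma> (erep ?i) \<in> orb K aV (vrep kt)"
    and len: "qlen Q (?i, j) = qlen \<Gamma> (erep ?i)"
    using Qse i j unfolding ks_def kt_def by blast+
  have vk: "vrep k \<in> qverts \<Gamma>" using vrep_in k by auto
  have A: "ks = k" if "qsrc \<Gamma> e = vrep k"
  proof -
    have "vrep k \<in> orb K aV (qsrc \<Gamma> (erep ?i))" using that src g(1) by (auto simp: orb_def intro!: exI[of _ "hs e"])
    then have "vrep k \<in> orb K aV (vrep ks)"
      using vorb_trans[OF _ kst(2)] vrep_in kst(1) by blast
    then show ?thesis using vrep_uniq kst(1) k by blast
  qed
  have B: "kt = k" if "qtgt \<Gamma> e = vrep k"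
  proof -
    have "vrep k \<in> orb K aV (qtgt \<Gamma> (erep ?i))" using that tgt g(1) by (auto simp: orb_def intro!: exI[of _ "hs e"])
    then have "vrep k \<in> orb K aV (vrep kt)"
      using vorb_trans[OF _ kst(4)] vrep_in kst(3) by blast
    then show ?thesis using vrep_uniq kst(3) k by blast
  qed
  have C: "ks \<noteq> k" if ns: "qsrc \<Gamma> e \<noteq> vrep k"
  proof
    assume ksk: "ks = k"
    have "qtgt \<Gamma> e = vrep k" using e ns by (simp add: inc_def)
    then have ktk: "kt = k" using B by simp
    have s1: "qsrc \<Gamma> (erep ?i) \<in> orb K aV (vrep k)" using kst(2) ksk by simp
    have t1: "qtgt \<Gamma> (erep ?i) \<in> orb K aV (vrep k)" using kst(4) ktk by simp
    have "vrep k \<in> orb K aV (qsrc \<Gamma> (erep ?i))" using vorb_sym[OF vk s1] .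
    then have "qtgt \<Gamma> (erep ?i) \<in> orb K aV (qsrc \<Gamma> (erep ?i))" using vorb_trans[OF se(1) _ t1] by simp
    then obtain a where "a \<in> carrier K" "aV a (qsrc \<Gamma> (erep ?i)) = qtgt \<Gamma> (erep ?i)" by (auto simp: orb_def)
    then show False using noadj ei by (auto simp: no_adjacent_move_def)
  qed
  have inQ: "(?i, j) \<in> qedges Q" using QE i j by simp
  show "(qsrc Q (?i, j) = k) = (qsrc \<Gamma> e = vrep k)" using A C unfolding ks_def by blast
  show "(?i, j) \<in> inc Q k"
  proof (cases "qsrc \<Gamma> e = vrep k")
    case True then show ?thesis using A inQ by (simp add: inc_def ks_def)
  next
    case False
    then have "qtgt \<Gamma> e = vrep k" using e by (simp add: inc_def)
    then show ?thesis using B inQ by (simp add: inc_def kt_def)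
  qed
  show "qlen Q (?i, j) = qlen \<Gamma> e" using len act_props(5)[OF act g(1) ei] g(2) by simp
qed

lemma coord_eq:
  assumes i: "i < I" and M: "M \<in> carrier_mat n n"
  shows "coord_mat n (Bi i) M Bg = Binv i * (M * Bg)"
  unfolding coord_mat_def
proof (rule the_equality)
  have Bc: "Bi i \<in> carrier_mat n n" using Bi_c[OF i] .
  have Bic: "Binv i \<in> carrier_mat n n" using Binv[OF i] by simp
  have MB: "M * Bg \<in> carrier_mat n n" using M Bg by simp
  show "Binv i * (M * Bg) \<in> carrier_mat n n \<and> Bi i * (Binv i * (M * Bg)) = M * Bg"
    using Bic MB Bc Binv(2)[OF i] left_mult_one_mat[OF MB] by (simp add: assoc_mult_mat[symmetric, OF Bc Bic MB])
  fix X assume X: "X \<in> carrier_mat n n \<and> Bi i * X = M * Bg"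
  have "X = (Binv i * Bi i) * X" using Binv(3)[OF i] X left_mult_one_mat[of X n n] by simp

  also have "\<dots> = Binv i * (Bi i * X)" using assoc_mult_mat[OF Bic Bc] X by blast
  finally show "X = Binv i * (M * Bg)" using X by simp
qed

lemma identI:
  assumes i: "i < I" and g: "g \<in> carrier K" and t: "t < n"
  shows "(\<Sum>j<dd i. coord_mat n (Bi i) (\<rho> (inv\<^bsub>K\<^esub> g)) Bg $$ (j,t) * F j)
       = (\<Sum>s<n. Bg $$ (s,t) * (\<Sum>c<n. \<rho> (inv\<^bsub>K\<^esub> g) $$ (c,s) * (\<Sum>j<dd i. Binv i $$ (j,c) * F j)))"
proof -
  let ?R = "\<rho> (inv\<^bsub>K\<^esub> g)"
  have R: "?R \<in> carrier_mat n n" using rho_carrier g by simp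
  have Bic: "Binv i \<in> carrier_mat n n" using Binv[OF i] by simp
  have ddn: "dd i \<le> n" using dd_le[OF i] .
  have X: "coord_mat n (Bi i) ?R Bg $$ (j,t) = (\<Sum>c<n. \<Sum>s<n. Binv i $$ (j,c) * (?R $$ (c,s) * Bg $$ (s,t)))"
    if j: "j < dd i" for j
  proof -
    have jn: "j < n" using j ddn by simp
    have RB: "?R * Bg \<in> carrier_mat n n" using R Bg by simp
    have "coord_mat n (Bi i) ?R Bg $$ (j,t) = (\<Sum>c<n. Binv i $$ (j,c) * (?R * Bg) $$ (c,t))"
      using coord_eq[OF i R] mult_entry[OF Bic RB jn t] by simp
    also have "\<dots> = (\<Sum>c<n. Binv i $$ (j,c) * (\<Sum>s<n. ?R $$ (c,s) * Bg $$ (s,t)))"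
      using mult_entry[OF R Bg(1) _ t] by (intro sum.cong refl) simp
    finally show ?thesis by (simp add: sum_distrib_left)
  qed
  have "(\<Sum>j<dd i. coord_mat n (Bi i) ?R Bg $$ (j,t) * F j)
      = (\<Sum>j<dd i. \<Sum>c<n. \<Sum>s<n. Binv i $$ (j,c) * ?R $$ (c,s) * Bg $$ (s,t) * F j)"
    using X by (simp add: sum_distrib_right mult.assoc)
  also have "\<dots> = (\<Sum>c<n. \<Sum>j<dd i. \<Sum>s<n. Binv i $$ (j,c) * ?R $$ (c,s) * Bg $$ (s,t) * F j)"
    by (rule sum.swap)
  also have "\<dots> = (\<Sum>c<n. \<Sum>s<n. \<Sum>j<dd i. Binv i $$ (j,c) * ?R $$ (c,s) * Bg $$ (s,t) * F j)"
    by (rule sum.cong[OF refl]) (rule sum.swap)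

  also have "\<dots> = (\<Sum>s<n. \<Sum>c<n. \<Sum>j<dd i. Binv i $$ (j,c) * ?R $$ (c,s) * Bg $$ (s,t) * F j)"
    by (rule sum.swap)
  also have "\<dots> = (\<Sum>s<n. Bg $$ (s,t) * (\<Sum>c<n. ?R $$ (c,s) * (\<Sum>j<dd i. Binv i $$ (j,c) * F j)))"
    by (simp add: sum_distrib_left mult.commute mult.left_commute)
  finally show ?thesis .
qed

end

(* ---- part 8 ---- *)
context quot begin

lemma finE: "finite (qedges \<Gamma>)" using wf by (simp add: qgraph_wf_def)
lemma finInc: "finite (inc \<Gamma> v)" using finE by (simp add: inc_def)
lemma finQE: "finite (qedges Q)"
proof -
  have "qedges Q \<subseteq> Sigma {..<I} (\<lambda>i. {..<dd i})" using QE by auto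
  then show ?thesis by (rule finite_subset) auto
qed
lemma finIncQ: "finite (inc Q k)" using finQE by (simp add: inc_def)

lemma gsel_props: assumes k: "k < N" and e: "e \<in> inc \<Gamma> (vrep k)"
  shows "gsel k e \<in> carrier K" "aE (gsel k e) (erep (idx e)) = e"
proof -
  have eE: "e \<in> qedges \<Gamma>" using e by (simp add: inc_def)
  show "gsel k e \<in> carrier K" "aE (gsel k e) (erep (idx e)) = e"
    using gsel k idx[OF eE] e by blast+
qed

lemma regroup:
  assumes k: "k < N"
  shows "(\<Sum>p\<in>inc Q k. \<Sum>e\<in>{e \<in> inc \<Gamma> (vrep k). e \<in> orb K aE (erep (fst p))}. G p e)
       = (\<Sum>e\<in>inc \<Gamma> (vrep k). \<Sum>j<dd (idx e). G (idx e, j) e)"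
proof -
  let ?P = "inc Q k" let ?E = "inc \<Gamma> (vrep k)"
  have "(\<Sum>p\<in>?P. \<Sum>e\<in>{e \<in> ?E. e \<in> orb K aE (erep (fst p))}. G p e)
      = (\<Sum>p\<in>?P. \<Sum>e\<in>?E. if e \<in> orb K aE (erep (fst p)) then G p e else 0)"
    using finInc by (simp add: sum.inter_filter)
  also have "\<dots> = (\<Sum>p\<in>?P. \<Sum>e\<in>?E. if fst p = idx e then G p e else 0)"
  proof (intro sum.cong refl)
    fix p e assume p: "p \<in> ?P" and e: "e \<in> ?E"
    have pi: "fst p < I" using p QE by (auto simp: inc_def)
    have eE: "e \<in> qedges \<Gamma>" using e by (simp add: inc_def)
    have "(e \<in> orb K aE (erep (fst p))) = (fst p = idx e)"
      using idx_eq[OF eE pi] idx[OF eE] by auto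
    then show "(if e \<in> orb K aE (erep (fst p)) then G p e else 0) = (if fst p = idx e then G p e else 0)" by simp
  qed
  also have "\<dots> = (\<Sum>e\<in>?E. \<Sum>p\<in>?P. if fst p = idx e then G p e else 0)" by (rule sum.swap)
  also have "\<dots> = (\<Sum>e\<in>?E. \<Sum>p\<in>{p \<in> ?P. fst p = idx e}. G p e)"
    using finIncQ by (simp add: sum.inter_filter)
  also have "\<dots> = (\<Sum>e\<in>?E. \<Sum>j<dd (idx e). G (idx e, j) e)"
  proof (intro sum.cong refl)
    fix e assume e: "e \<in> ?E"
    have "{p \<in> ?P. fst p = idx e} = (\<lambda>j. (idx e, j)) ` {..<dd (idx e)}"
    proof
      show "{p \<in> ?P. fst p = idx e} \<subseteq> (\<lambda>j. (idx e, j)) ` {..<dd (idx e)}"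
        using QE by (auto simp: inc_def)
      show "(\<lambda>j. (idx e, j)) ` {..<dd (idx e)} \<subseteq> {p \<in> ?P. fst p = idx e}"
        using vq(1)[OF k e] by auto
    qed
    moreover have "inj_on (\<lambda>j. (idx e, j)) {..<dd (idx e)}" by (auto simp: inj_on_def)
    ultimately show "(\<Sum>p\<in>{p \<in> ?P. fst p = idx e}. G p e) = (\<Sum>j<dd (idx e). G (idx e, j) e)"
      by (simp add: sum.reindex)
  qed
  finally show ?thesis .
qed

abbreviation CM where "CM k i e \<equiv> coord_mat n (Bi i) (\<rho> (inv\<^bsub>K\<^esub> (gsel k e))) Bg"

lemma ident_e:
  assumes k: "k < N" and e: "e \<in> inc \<Gamma> (vrep k)" and t: "t < n"
  shows "(\<Sum>j<dd (idx e). CM k (idx e) e $$ (j,t) * F (idx e, j) y) = (\<Sum>s<n. Bg $$ (s,t) * lift F (e,s) y)"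
proof -
  have eE: "e \<in> qedges \<Gamma>" using e by (simp add: inc_def)
  have i: "idx e < I" using idx[OF eE] by simp
  note g = gsel_props[OF k e]
  have "(\<Sum>j<dd (idx e). CM k (idx e) e $$ (j,t) * F (idx e, j) y)
     = (\<Sum>s<n. Bg $$ (s,t) * (\<Sum>c<n. \<rho> (inv\<^bsub>K\<^esub> (gsel k e)) $$ (c,s) * (\<Sum>j<dd (idx e). Binv (idx e) $$ (j,c) * F (idx e, j) y)))"
    by (rule identI[OF i g(1) t])
  also have "\<dots> = (\<Sum>s<n. Bg $$ (s,t) * lift F (e,s) y)"
    by (intro sum.cong refl) (simp add: lift_rep[OF eE g] Wv_def)
  finally show ?thesis .
qed

lemma vval_ident:
  assumes k: "k < N" and e: "e \<in> inc \<Gamma> (vrep k)" and t: "t < n"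
  shows "(\<Sum>j<dd (idx e). CM k (idx e) e $$ (j,t) * vval Q f k (idx e, j))
       = (\<Sum>s<n. Bg $$ (s,t) * vval \<Gamma> (\<lambda>e. lift f (e,s)) (vrep k) e)"
    "(\<Sum>j<dd (idx e). CM k (idx e) e $$ (j,t) * vdval Q f k (idx e, j))
       = (\<Sum>s<n. Bg $$ (s,t) * vdval \<Gamma> (\<lambda>e. lift f (e,s)) (vrep k) e)"
proof -
  define y where "y = (if qsrc \<Gamma> e = vrep k then 0 else qlen \<Gamma> e)"
  have v1: "vval Q f k (idx e, j) = f (idx e, j) y" if "j < dd (idx e)" for j
    using vq[OF k e that] by (simp add: vval_def y_def)
  have v2: "vval \<Gamma> (\<lambda>e. lift f (e,s)) (vrep k) e = lift f (e,s) y" for s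
    by (simp add: vval_def y_def)
  show "(\<Sum>j<dd (idx e). CM k (idx e) e $$ (j,t) * vval Q f k (idx e, j))
       = (\<Sum>s<n. Bg $$ (s,t) * vval \<Gamma> (\<lambda>e. lift f (e,s)) (vrep k) e)"
    using ident_e[OF k e t, of f y] v1 v2 by simp
  define sg :: complex where "sg = (if qsrc \<Gamma> e = vrep k then 1 else -1)"
  have d1: "vdval Q f k (idx e, j) = sg * f (idx e, j) y" if "j < dd (idx e)" for j
    using vq[OF k e that] by (simp add: vdval_def y_def sg_def)
  have d2: "vdval \<Gamma> (\<lambda>e. lift f (e,s)) (vrep k) e = sg * lift f (e,s) y" for s
    by (simp add: vdval_def y_def sg_def)
  have "(\<Sum>j<dd (idx e). CM k (idx e) e $$ (j,t) * vdval Q f k (idx e, j))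
      = sg * (\<Sum>j<dd (idx e). CM k (idx e) e $$ (j,t) * f (idx e, j) y)"
    using d1 by (simp add: sum_distrib_left mult.left_commute)
  also have "\<dots> = sg * (\<Sum>s<n. Bg $$ (s,t) * lift f (e,s) y)" by (simp only: ident_e[OF k e t])
  also have "\<dots> = (\<Sum>s<n. Bg $$ (s,t) * vdval \<Gamma> (\<lambda>e. lift f (e,s)) (vrep k) e)"
    using d2 by (simp add: sum_distrib_left mult.left_commute)
  finally show "(\<Sum>j<dd (idx e). CM k (idx e) e $$ (j,t) * vdval Q f k (idx e, j))
       = (\<Sum>s<n. Bg $$ (s,t) * vdval \<Gamma> (\<lambda>e. lift f (e,s)) (vrep k) e)" .
qed

definition Rs where "Rs k r f f1 s = (\<Sum>e\<in>inc \<Gamma> (vrep k). qA \<Gamma> (vrep k) r e * vval \<Gamma> (\<lambda>e. lift f (e,s)) (vrep k) e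
                         + qB \<Gamma> (vrep k) r e * vdval \<Gamma> (\<lambda>e. lift f1 (e,s)) (vrep k) e)"

lemma qsum:
  assumes k: "k < N" and r: "r \<in> qrows \<Gamma> (vrep k)" and t: "t < n"
  shows "(\<Sum>p\<in>inc Q k. qA Q k (r,t) p * vval Q f k p + qB Q k (r,t) p * vdval Q f1 k p)
       = (\<Sum>s<n. Bg $$ (s,t) * Rs k r f f1 s)"
proof -
  let ?v = "vrep k"
  define G where "G p e = qA \<Gamma> ?v r e * CM k (fst p) e $$ (snd p, t) * vval Q f k p
                       + qB \<Gamma> ?v r e * CM k (fst p) e $$ (snd p, t) * vdval Q f1 k p" for p e
  have "(\<Sum>p\<in>inc Q k. qA Q k (r,t) p * vval Q f k p + qB Q k (r,t) p * vdval Q f1 k p)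
      = (\<Sum>p\<in>inc Q k. \<Sum>e\<in>{e \<in> inc \<Gamma> ?v. e \<in> orb K aE (erep (fst p))}. G p e)"
  proof (intro sum.cong refl)
    fix p assume p: "p \<in> inc Q k"
    obtain i j where pij: "p = (i,j)" by (cases p)
    have ij: "i < I" "j < dd i" using p QE pij by (auto simp: inc_def)
    have A: "qA Q k (r,t) (i,j) = (\<Sum>e\<in>{e \<in> inc \<Gamma> ?v. e \<in> orb K aE (erep i)}. qA \<Gamma> ?v r e * CM k i e $$ (j,t))"
      and B: "qB Q k (r,t) (i,j) = (\<Sum>e\<in>{e \<in> inc \<Gamma> ?v. e \<in> orb K aE (erep i)}. qB \<Gamma> ?v r e * CM k i e $$ (j,t))"
      using Qrows k r t ij by blast+
    show "qA Q k (r,t) p * vval Q f k p + qB Q k (r,t) p * vdval Q f1 k p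
        = (\<Sum>e\<in>{e \<in> inc \<Gamma> ?v. e \<in> orb K aE (erep (fst p))}. G p e)"
      unfolding pij A B G_def by (simp add: sum.distrib sum_distrib_right)
  qed
  also have "\<dots> = (\<Sum>e\<in>inc \<Gamma> ?v. \<Sum>j<dd (idx e). G (idx e, j) e)" by (rule regroup[OF k])
  also have "\<dots> = (\<Sum>e\<in>inc \<Gamma> ?v. qA \<Gamma> ?v r e * (\<Sum>s<n. Bg $$ (s,t) * vval \<Gamma> (\<lambda>e. lift f (e,s)) ?v e)
                       + qB \<Gamma> ?v r e * (\<Sum>s<n. Bg $$ (s,t) * vdval \<Gamma> (\<lambda>e. lift f1 (e,s)) ?v e))"
  proof (intro sum.cong refl)
    fix e assume e: "e \<in> inc \<Gamma> ?v"
    have "(\<Sum>j<dd (idx e). G (idx e, j) e)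
        = qA \<Gamma> ?v r e * (\<Sum>j<dd (idx e). CM k (idx e) e $$ (j,t) * vval Q f k (idx e, j))
        + qB \<Gamma> ?v r e * (\<Sum>j<dd (idx e). CM k (idx e) e $$ (j,t) * vdval Q f1 k (idx e, j))"
      by (simp add: G_def sum.distrib sum_distrib_left mult.assoc)
    then show "(\<Sum>j<dd (idx e). G (idx e, j) e)
        = qA \<Gamma> ?v r e * (\<Sum>s<n. Bg $$ (s,t) * vval \<Gamma> (\<lambda>e. lift f (e,s)) ?v e)
        + qB \<Gamma> ?v r e * (\<Sum>s<n. Bg $$ (s,t) * vdval \<Gamma> (\<lambda>e. lift f1 (e,s)) ?v e)"
      using vval_ident[OF k e t] by simp
  qed
  also have "\<dots> = (\<Sum>e\<in>inc \<Gamma> ?v. \<Sum>s<n. Bg $$ (s,t) * (qA \<Gamma> ?v r e * vval \<Gamma> (\<lambda>e. lift f (e,s)) ?v e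
                       + qB \<Gamma> ?v r e * vdval \<Gamma> (\<lambda>e. lift f1 (e,s)) ?v e))"
    by (simp add: sum_distrib_left sum.distrib algebra_simps)
  also have "\<dots> = (\<Sum>s<n. \<Sum>e\<in>inc \<Gamma> ?v. Bg $$ (s,t) * (qA \<Gamma> ?v r e * vval \<Gamma> (\<lambda>e. lift f (e,s)) ?v e
                       + qB \<Gamma> ?v r e * vdval \<Gamma> (\<lambda>e. lift f1 (e,s)) ?v e))" by (rule sum.swap)
  also have "\<dots> = (\<Sum>s<n. Bg $$ (s,t) * Rs k r f f1 s)" by (simp add: Rs_def sum_distrib_left)
  finally show ?thesis .
qed

lemma Bg_inj:
  assumes R: "\<forall>t<n. (\<Sum>s<n. Bg $$ (s,t) * R s) = 0" and s: "s' < n"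
  shows "R s' = (0::complex)"
proof -
  obtain Bgi where Bgi: "Bgi \<in> carrier_mat n n" "Bg * Bgi = 1\<^sub>m n" "Bgi * Bg = 1\<^sub>m n"
    using inv_exists[OF Bg(2) Bg(1)] by blast
  have "R s' = (\<Sum>s<n. (if s = s' then R s else 0))" using s by simp
  also have "\<dots> = (\<Sum>s<n. (Bg * Bgi) $$ (s,s') * R s)" using Bgi(2) s by (intro sum.cong refl) auto
  also have "\<dots> = (\<Sum>s<n. \<Sum>t<n. Bgi $$ (t,s') * (Bg $$ (s,t) * R s))"
    by (intro sum.cong refl) (simp add: mult_entry[OF Bg(1) Bgi(1) _ s] sum_distrib_left sum_distrib_right mult.commute mult.left_commute)

  also have "\<dots> = (\<Sum>t<n. \<Sum>s<n. Bgi $$ (t,s') * (Bg $$ (s,t) * R s))" by (rule sum.swap)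
  also have "\<dots> = (\<Sum>t<n. Bgi $$ (t,s') * (\<Sum>s<n. Bg $$ (s,t) * R s))" by (simp add: sum_distrib_left)
  also have "\<dots> = 0" using R by simp
  finally show ?thesis .
qed

lemma qvc_iff:
  assumes k: "k < N"
  shows "vc_holds Q k (vval Q f k) (vdval Q f1 k) \<longleftrightarrow>
    (\<forall>s<n. vc_holds \<Gamma> (vrep k) (vval \<Gamma> (\<lambda>e. lift f (e,s)) (vrep k)) (vdval \<Gamma> (\<lambda>e. lift f1 (e,s)) (vrep k)))"
proof -
  have rows: "qrows Q k = qrows \<Gamma> (vrep k) \<times> {..<n}" using Qrows k by blast
  have "vc_holds Q k (vval Q f k) (vdval Q f1 k) \<longleftrightarrow>
     (\<forall>r\<in>qrows \<Gamma> (vrep k). \<forall>t<n. (\<Sum>s<n. Bg $$ (s,t) * Rs k r f f1 s) = 0)"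
    unfolding vc_holds_def rows using qsum[OF k] by auto
  also have "\<dots> \<longleftrightarrow> (\<forall>r\<in>qrows \<Gamma> (vrep k). \<forall>s<n. Rs k r f f1 s = 0)"
    using Bg_inj by auto
  also have "\<dots> \<longleftrightarrow> (\<forall>s<n. vc_holds \<Gamma> (vrep k) (vval \<Gamma> (\<lambda>e. lift f (e,s)) (vrep k)) (vdval \<Gamma> (\<lambda>e. lift f1 (e,s)) (vrep k)))"
    unfolding vc_holds_def Rs_def by blast
  finally show ?thesis .
qed

end

(* ---- part 9 ---- *)
lemma vval_sum: "vval \<Gamma> (\<lambda>e x. \<Sum>c\<in>S. a c * F c e x) v e = (\<Sum>c\<in>S. a c * vval \<Gamma> (F c) v e)"
  by (simp add: vval_def)
lemma vdval_sum: "vdval \<Gamma> (\<lambda>e x. \<Sum>c\<in>S. a c * F c e x) v e = (\<Sum>c\<in>S. a c * vdval \<Gamma> (F c) v e)"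
  by (simp add: vdval_def sum_negf[symmetric])
lemma vval_cong: "F e = G e \<Longrightarrow> vval \<Gamma> F v e = vval \<Gamma> G v e" by (simp add: vval_def)
lemma vdval_cong: "F e = G e \<Longrightarrow> vdval \<Gamma> F v e = vdval \<Gamma> G v e" by (simp add: vdval_def)

context quot begin

definition allvc where "allvc F F1 \<longleftrightarrow> (\<forall>w\<in>qverts \<Gamma>. \<forall>s<n.
   vc_holds \<Gamma> w (vval \<Gamma> (\<lambda>e. F (e,s)) w) (vdval \<Gamma> (\<lambda>e. F1 (e,s)) w))"

definition qvc where "qvc f f1 \<longleftrightarrow> (\<forall>k\<in>qverts Q. vc_holds Q k (vval Q f k) (vdval Q f1 k))"

lemma eqv_transport:
  assumes F: "eqv F" and F1: "eqv F1" and k: "k < N"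
    and hv: "\<forall>c<n. vc_holds \<Gamma> (vrep k) (vval \<Gamma> (\<lambda>e. F (e,c)) (vrep k)) (vdval \<Gamma> (\<lambda>e. F1 (e,c)) (vrep k))"
    and g: "g \<in> carrier K" and s: "s < n"
  shows "vc_holds \<Gamma> (aV g (vrep k)) (vval \<Gamma> (\<lambda>e. F (e,s)) (aV g (vrep k))) (vdval \<Gamma> (\<lambda>e. F1 (e,s)) (aV g (vrep k)))"
proof -
  let ?v = "vrep k"
  have vk: "?v \<in> qverts \<Gamma>" using vrep_in k by auto
  define a where "a c = \<rho> (inv\<^bsub>K\<^esub> g) $$ (c,s)" for c
  define \<phi> where "\<phi> e x = (\<Sum>c<n. a c * F (e,c) x)" for e x
  define \<phi>1 where "\<phi>1 e x = (\<Sum>c<n. a c * F1 (e,c) x)" for e x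
  have "vc_holds \<Gamma> ?v (\<lambda>e. \<Sum>c<n. a c * vval \<Gamma> (\<lambda>e. F (e,c)) ?v e) (\<lambda>e. \<Sum>c<n. a c * vdval \<Gamma> (\<lambda>e. F1 (e,c)) ?v e)"
    using vc_lin[of "{..<n}" \<Gamma> ?v] hv by simp
  then have "vc_holds \<Gamma> ?v (vval \<Gamma> \<phi> ?v) (vdval \<Gamma> \<phi>1 ?v)"
    unfolding \<phi>_def \<phi>1_def vval_sum vdval_sum .
  then have T: "vc_holds \<Gamma> (aV g ?v) (vval \<Gamma> (\<lambda>e. \<phi> (aE (inv\<^bsub>K\<^esub> g) e)) (aV g ?v))
                     (vdval \<Gamma> (\<lambda>e. \<phi>1 (aE (inv\<^bsub>K\<^esub> g) e)) (aV g ?v))"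
    by (rule vc_transport[OF act wf g vk])
  show ?thesis
  proof (rule iffD1[OF vc_cong T])
    fix e assume e: "e \<in> inc \<Gamma> (aV g ?v)"
    have eE: "e \<in> qedges \<Gamma>" using e by (simp add: inc_def)
    have ig: "inv\<^bsub>K\<^esub> g \<in> carrier K" using g by simp
    have e': "aE (inv\<^bsub>K\<^esub> g) e \<in> qedges \<Gamma>" using act_props(1)[OF act ig eE] .
    have bk: "aE g (aE (inv\<^bsub>K\<^esub> g) e) = e" using act_inv_e(2)[OF act g eE] .
    have "\<phi> (aE (inv\<^bsub>K\<^esub> g) e) = (\<lambda>x. F (e,s) x)"
      using F g e' s bk unfolding eqv_def \<phi>_def a_def by (metis (no_types))
    then show "vval \<Gamma> (\<lambda>e. \<phi> (aE (inv\<^bsub>K\<^esub> g) e)) (aV g ?v) e = vval \<Gamma> (\<lambda>e. F (e,s)) (aV g ?v) e"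
      by (intro vval_cong) simp
    have "\<phi>1 (aE (inv\<^bsub>K\<^esub> g) e) = (\<lambda>x. F1 (e,s) x)"
      using F1 g e' s bk unfolding eqv_def \<phi>1_def a_def by (metis (no_types))
    then show "vdval \<Gamma> (\<lambda>e. \<phi>1 (aE (inv\<^bsub>K\<^esub> g) e)) (aV g ?v) e = vdval \<Gamma> (\<lambda>e. F1 (e,s)) (aV g ?v) e"
      by (intro vdval_cong) simp
  qed
qed

lemma lift_allvc:
  assumes q: "qvc f f1" shows "allvc (lift f) (lift f1)"
  unfolding allvc_def
proof (intro ballI allI impI)
  fix w s assume w: "w \<in> qverts \<Gamma>" and s: "s < n"
  obtain k where k: "k < N" "w \<in> orb K aV (vrep k)" using vrep_cov w by blast
  obtain g where g: "g \<in> carrier K" "w = aV g (vrep k)" using k(2) by (auto simp: orb_def)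
  have "vc_holds Q k (vval Q f k) (vdval Q f1 k)" using q k QV by (simp add: qvc_def)
  then have hv: "\<forall>c<n. vc_holds \<Gamma> (vrep k) (vval \<Gamma> (\<lambda>e. lift f (e,c)) (vrep k)) (vdval \<Gamma> (\<lambda>e. lift f1 (e,c)) (vrep k))"
    using qvc_iff[OF k(1)] by simp
  show "vc_holds \<Gamma> w (vval \<Gamma> (\<lambda>e. lift f (e,s)) w) (vdval \<Gamma> (\<lambda>e. lift f1 (e,s)) w)"
    using eqv_transport[OF lift_eqv lift_eqv k(1) hv g(1) s] g(2) by simp
qed

lemma proj_qvc:
  assumes F: "eqv F" and F1: "eqv F1" and a: "allvc F F1" shows "qvc (proj F) (proj F1)"
  unfolding qvc_def
proof
  fix k assume "k \<in> qverts Q" then have k: "k < N" using QV by simp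
  have vk: "vrep k \<in> qverts \<Gamma>" using vrep_in k by auto
  have "\<forall>s<n. vc_holds \<Gamma> (vrep k) (vval \<Gamma> (\<lambda>e. lift (proj F) (e,s)) (vrep k)) (vdval \<Gamma> (\<lambda>e. lift (proj F1) (e,s)) (vrep k))"
  proof (intro allI impI)
    fix s assume s: "s < n"
    have h: "vc_holds \<Gamma> (vrep k) (vval \<Gamma> (\<lambda>e. F (e,s)) (vrep k)) (vdval \<Gamma> (\<lambda>e. F1 (e,s)) (vrep k))"
      using a vk s by (simp add: allvc_def)
    show "vc_holds \<Gamma> (vrep k) (vval \<Gamma> (\<lambda>e. lift (proj F) (e,s)) (vrep k)) (vdval \<Gamma> (\<lambda>e. lift (proj F1) (e,s)) (vrep k))"
    proof (rule iffD2[OF vc_cong h])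
      fix e assume "e \<in> inc \<Gamma> (vrep k)" then have eE: "e \<in> qedges \<Gamma>" by (simp add: inc_def)
      show "vval \<Gamma> (\<lambda>e. lift (proj F) (e,s)) (vrep k) e = vval \<Gamma> (\<lambda>e. F (e,s)) (vrep k) e"
        by (intro vval_cong) (simp add: fun_eq_iff lift_proj[OF F eE s])
      show "vdval \<Gamma> (\<lambda>e. lift (proj F1) (e,s)) (vrep k) e = vdval \<Gamma> (\<lambda>e. F1 (e,s)) (vrep k) e"
        by (intro vdval_cong) (simp add: fun_eq_iff lift_proj[OF F1 eE s])
    qed
  qed
  then show "vc_holds Q k (vval Q (proj F) k) (vdval Q (proj F1) k)" using qvc_iff[OF k] by simp
qed

end

(* ---- part 10 ---- *)
lemma sum_split:
  fixes f :: "nat \<Rightarrow> 'a::comm_monoid_add"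
  shows "(\<Sum>q<m*d. f q) = (\<Sum>b<m. \<Sum>c<d. f (b*d+c))"
proof -
  have bij: "bij_betw (\<lambda>(b,c). b*d+c) ({..<m} \<times> {..<d}) {..<m*d}"
  proof (rule bij_betwI[where g = "\<lambda>q. (q div d, q mod d)"])
    show "(\<lambda>(b,c). b*d+c) \<in> {..<m} \<times> {..<d} \<rightarrow> {..<m*d}"
    proof
      fix x assume "x \<in> {..<m} \<times> {..<d}"
      then obtain b c where x: "x = (b,c)" "b < m" "c < d" by auto
      have "b*d + c < b*d + d" using x by simp
      also have "\<dots> = (b+1)*d" by simp
      also have "\<dots> \<le> m*d" using x by (intro mult_right_mono) auto
      finally show "(case x of (b,c) \<Rightarrow> b*d+c) \<in> {..<m*d}" using x by simp
    qed
    show "(\<lambda>q. (q div d, q mod d)) \<in> {..<m*d} \<rightarrow> {..<m} \<times> {..<d}"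
    proof
      fix q assume q: "q \<in> {..<m*d}"
      then have d0: "d > 0" by (cases "d = 0") auto
      have "q div d < m" using q d0 by (simp add: div_less_iff_less_mult)
      then show "(q div d, q mod d) \<in> {..<m} \<times> {..<d}" using d0 by simp
    qed
    show "(\<lambda>q. (q div d, q mod d)) (case x of (b,c) \<Rightarrow> b*d+c) = x" if "x \<in> {..<m} \<times> {..<d}" for x
      using that by auto
    show "(case (\<lambda>q. (q div d, q mod d)) y of (b,c) \<Rightarrow> b*d+c) = y" if "y \<in> {..<m*d}" for y
      by (simp add: mult.commute)
  qed
  have "(\<Sum>q<m*d. f q) = (\<Sum>x\<in>{..<m} \<times> {..<d}. f ((\<lambda>(b,c). b*d+c) x))"
    using sum.reindex_bij_betw[OF bij, of f] by simp
  also have "\<dots> = (\<Sum>b<m. \<Sum>c<d. f (b*d+c))" by (simp add: sum.cartesian_product split_def)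
  finally show ?thesis .
qed

locale frob =
  fixes \<Gamma> :: "('v, 'e, 'r) qgraph" and G :: "'g monoid" and H :: "'g set"
    and aV :: "'g \<Rightarrow> 'v \<Rightarrow> 'v" and aE :: "'g \<Rightarrow> 'e \<Rightarrow> 'e"
    and d :: nat and \<rho> :: "'g \<Rightarrow> complex mat" and m :: nat and t :: "nat \<Rightarrow> 'g"
  assumes wf: "qgraph_wf \<Gamma>" and act: "qg_action G \<Gamma> aV aE" and sub: "subgroup H G"
    and rep: "is_rep (G\<lparr>carrier := H\<rparr>) d \<rho>" and tr: "transversal G H m t"
begin

sublocale grp: group G using act by (simp add: qg_action_def)

lemma Hc: "h \<in> H \<Longrightarrow> h \<in> carrier G" using sub by (simp add: subgroup.mem_carrier)
lemma Hmult: "a \<in> H \<Longrightarrow> b \<in> H \<Longrightarrow> a \<otimes>\<^bsub>G\<^esub> b \<in> H" using sub by (simp add: subgroup.m_closed)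
lemma Hinv: "a \<in> H \<Longrightarrow> inv\<^bsub>G\<^esub> a \<in> H" using sub by (simp add: subgroup.m_inv_closed)
lemma Hone: "\<one>\<^bsub>G\<^esub> \<in> H" using sub by (simp add: subgroup.one_closed)

lemma rho_c: "h \<in> H \<Longrightarrow> \<rho> h \<in> carrier_mat d d" using rep by (simp add: is_rep_def)
lemma rho_m: "a \<in> H \<Longrightarrow> b \<in> H \<Longrightarrow> \<rho> (a \<otimes>\<^bsub>G\<^esub> b) = \<rho> a * \<rho> b" using rep by (simp add: is_rep_def)
lemma rho_1: "\<rho> \<one>\<^bsub>G\<^esub> = 1\<^sub>m d" using rep by (simp add: is_rep_def)

lemma t_c: "a < m \<Longrightarrow> t a \<in> carrier G" using tr by (simp add: transversal_def)

lemma tr_uniq: "g \<in> carrier G \<Longrightarrow> b < m \<Longrightarrow> b' < m \<Longrightarrow> inv\<^bsub>G\<^esub> (t b) \<otimes>\<^bsub>G\<^esub> g \<in> H \<Longrightarrow> inv\<^bsub>G\<^esub> (t b') \<otimes>\<^bsub>G\<^esub> g \<in> H \<Longrightarrow> b = b'"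
  using tr unfolding transversal_def by blast
lemma tr_ex: "g \<in> carrier G \<Longrightarrow> \<exists>b<m. inv\<^bsub>G\<^esub> (t b) \<otimes>\<^bsub>G\<^esub> g \<in> H"
  using tr unfolding transversal_def by blast

lemma tt: assumes "a < m" "b < m" shows "inv\<^bsub>G\<^esub> (t b) \<otimes>\<^bsub>G\<^esub> t a \<in> H \<longleftrightarrow> a = b"
proof
  assume "inv\<^bsub>G\<^esub> (t b) \<otimes>\<^bsub>G\<^esub> t a \<in> H"
  moreover have "inv\<^bsub>G\<^esub> (t a) \<otimes>\<^bsub>G\<^esub> t a \<in> H" using t_c[OF assms(1)] Hone by simp
  ultimately show "a = b" using tr_uniq[OF t_c[OF assms(1)] assms(2,1)] by simp
next
  assume "a = b" then show "inv\<^bsub>G\<^esub> (t b) \<otimes>\<^bsub>G\<^esub> t a \<in> H" using t_c[OF assms(1)] Hone by simp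
qed

definition a0 where "a0 = (SOME a. a < m \<and> t a \<in> H)"
lemma a0: "a0 < m" "t a0 \<in> H"
proof -
  obtain b where b: "b < m" "inv\<^bsub>G\<^esub> (t b) \<otimes>\<^bsub>G\<^esub> \<one>\<^bsub>G\<^esub> \<in> H" using tr_ex[of "\<one>\<^bsub>G\<^esub>"] by auto
  then have "inv\<^bsub>G\<^esub> (t b) \<in> H" using t_c[OF b(1)] by simp
  then have "t b \<in> H" using Hinv[of "inv\<^bsub>G\<^esub> (t b)"] t_c[OF b(1)] by simp
  then have "\<exists>a. a < m \<and> t a \<in> H" using b by blast
  from someI_ex[OF this] show "a0 < m" "t a0 \<in> H" unfolding a0_def by auto
qed

abbreviation Ind where "Ind \<equiv> ind_rep G H d \<rho> m t"

lemma ind_entry: "p < m*d \<Longrightarrow> q < m*d \<Longrightarrow> Ind g $$ (p,q) =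
   (if inv\<^bsub>G\<^esub> (t (p div d)) \<otimes>\<^bsub>G\<^esub> g \<otimes>\<^bsub>G\<^esub> t (q div d) \<in> H
    then \<rho> (inv\<^bsub>G\<^esub> (t (p div d)) \<otimes>\<^bsub>G\<^esub> g \<otimes>\<^bsub>G\<^esub> t (q div d)) $$ (p mod d, q mod d) else 0)"
  by (simp add: ind_rep_def Let_def)

lemma divmod: "c < d \<Longrightarrow> (b*d+c) div d = b" "c < d \<Longrightarrow> (b*d+c) mod d = c"
  by auto

lemma bd_less: "b < m \<Longrightarrow> c < d \<Longrightarrow> b*d+c < m*d"
proof -
  assume "b < m" "c < d"
  then have "b*d + c < (b+1)*d" by simp
  also have "\<dots> \<le> m*d" using \<open>b < m\<close> by (intro mult_right_mono) auto
  finally show ?thesis .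
qed

lemma p_split: assumes "p < m*d" shows "p div d < m" "p mod d < d" "p = (p div d)*d + p mod d"
proof -
  have d0: "d > 0" using assms by (cases "d = 0") auto
  show "p div d < m" using assms d0 by (simp add: div_less_iff_less_mult)
  show "p mod d < d" using d0 by simp
  show "p = (p div d)*d + p mod d" by simp
qed

text \<open>Column evaluation: summing a column of Ind g against X.\<close>
lemma ind_col_sum:
  assumes g: "g \<in> carrier G" and p: "p < m*d" and b: "b < m"
    and y: "inv\<^bsub>G\<^esub> (t b) \<otimes>\<^bsub>G\<^esub> g \<otimes>\<^bsub>G\<^esub> t (p div d) \<in> H"
  shows "(\<Sum>q<m*d. Ind g $$ (q,p) * X q)
       = (\<Sum>c<d. \<rho> (inv\<^bsub>G\<^esub> (t b) \<otimes>\<^bsub>G\<^esub> g \<otimes>\<^bsub>G\<^esub> t (p div d)) $$ (c, p mod d) * X (b*d+c))"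
proof -
  let ?a = "p div d"
  have a: "?a < m" using p_split[OF p] by simp
  have gt: "g \<otimes>\<^bsub>G\<^esub> t ?a \<in> carrier G" using g t_c[OF a] by simp
  have "(\<Sum>q<m*d. Ind g $$ (q,p) * X q) = (\<Sum>b'<m. \<Sum>c<d. Ind g $$ (b'*d+c,p) * X (b'*d+c))"
    by (rule sum_split)
  also have "\<dots> = (\<Sum>b'<m. if b' = b then (\<Sum>c<d. \<rho> (inv\<^bsub>G\<^esub> (t b) \<otimes>\<^bsub>G\<^esub> g \<otimes>\<^bsub>G\<^esub> t ?a) $$ (c, p mod d) * X (b*d+c)) else 0)"
  proof (intro sum.cong refl)
    fix b' assume "b' \<in> {..<m}" then have b': "b' < m" by simp
    show "(\<Sum>c<d. Ind g $$ (b'*d+c,p) * X (b'*d+c)) =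
      (if b' = b then (\<Sum>c<d. \<rho> (inv\<^bsub>G\<^esub> (t b) \<otimes>\<^bsub>G\<^esub> g \<otimes>\<^bsub>G\<^esub> t ?a) $$ (c, p mod d) * X (b*d+c)) else 0)"
    proof (cases "b' = b")
      case True
      then show ?thesis using y bd_less[OF b'] p by (simp add: ind_entry divmod)
    next
      case False
      have "inv\<^bsub>G\<^esub> (t b') \<otimes>\<^bsub>G\<^esub> g \<otimes>\<^bsub>G\<^esub> t ?a \<notin> H"
      proof
        assume "inv\<^bsub>G\<^esub> (t b') \<otimes>\<^bsub>G\<^esub> g \<otimes>\<^bsub>G\<^esub> t ?a \<in> H"
        then have "inv\<^bsub>G\<^esub> (t b') \<otimes>\<^bsub>G\<^esub> (g \<otimes>\<^bsub>G\<^esub> t ?a) \<in> H"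
          using g t_c[OF a] t_c[OF b'] by (simp add: grp.m_assoc)
        moreover have "inv\<^bsub>G\<^esub> (t b) \<otimes>\<^bsub>G\<^esub> (g \<otimes>\<^bsub>G\<^esub> t ?a) \<in> H"
          using y g t_c[OF a] t_c[OF b] by (simp add: grp.m_assoc)
        ultimately show False using tr_uniq[OF gt b b'] False by simp
      qed
      then show ?thesis using False bd_less[OF b'] p by (simp add: ind_entry divmod)
    qed
  qed
  also have "\<dots> = (\<Sum>c<d. \<rho> (inv\<^bsub>G\<^esub> (t b) \<otimes>\<^bsub>G\<^esub> g \<otimes>\<^bsub>G\<^esub> t ?a) $$ (c, p mod d) * X (b*d+c))"
    using b by simp
  finally show ?thesis .
qed

end

(* ---- part 11 ---- *)
context frob begin

lemma ind_carrier: "Ind g \<in> carrier_mat (m*d) (m*d)" by (simp add: ind_rep_def)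

lemma ind_one: "Ind \<one>\<^bsub>G\<^esub> = 1\<^sub>m (m*d)"
proof (rule eq_matI)
  fix p q assume "p < dim_row (1\<^sub>m (m*d))" "q < dim_col (1\<^sub>m (m*d))"
  then have p: "p < m*d" and q: "q < m*d" by auto
  note ps = p_split[OF p] and qs = p_split[OF q]
  have "inv\<^bsub>G\<^esub> (t (p div d)) \<otimes>\<^bsub>G\<^esub> \<one>\<^bsub>G\<^esub> \<otimes>\<^bsub>G\<^esub> t (q div d) = inv\<^bsub>G\<^esub> (t (p div d)) \<otimes>\<^bsub>G\<^esub> t (q div d)"
    using t_c ps qs by simp
  moreover have "inv\<^bsub>G\<^esub> (t (p div d)) \<otimes>\<^bsub>G\<^esub> t (q div d) \<in> H \<longleftrightarrow> q div d = p div d" using tt ps qs by blast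
  moreover have "q div d = p div d \<Longrightarrow> inv\<^bsub>G\<^esub> (t (p div d)) \<otimes>\<^bsub>G\<^esub> t (q div d) = \<one>\<^bsub>G\<^esub>" using t_c ps by simp
  moreover have "(p = q) = (p div d = q div d \<and> p mod d = q mod d)" using ps(3) qs(3) by metis
  ultimately show "Ind \<one>\<^bsub>G\<^esub> $$ (p,q) = 1\<^sub>m (m*d) $$ (p,q)"
    using p q ps qs by (auto simp: ind_entry rho_1)
qed (auto simp: ind_rep_def)

lemma ind_mult: assumes g: "g \<in> carrier G" and h: "h \<in> carrier G"
  shows "Ind (g \<otimes>\<^bsub>G\<^esub> h) = Ind g * Ind h"
proof (rule eq_matI)
  show "dim_row (Ind (g \<otimes>\<^bsub>G\<^esub> h)) = dim_row (Ind g * Ind h)" "dim_col (Ind (g \<otimes>\<^bsub>G\<^esub> h)) = dim_col (Ind g * Ind h)"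
    by (auto simp: ind_rep_def)
  fix p r assume "p < dim_row (Ind g * Ind h)" "r < dim_col (Ind g * Ind h)"
  then have p: "p < m*d" and r: "r < m*d" by (auto simp: ind_rep_def)
  let ?a = "p div d" let ?c = "r div d"
  note ps = p_split[OF p] and rs = p_split[OF r]
  have ta: "t ?a \<in> carrier G" and tc: "t ?c \<in> carrier G" using t_c ps rs by auto
  obtain b where b: "b < m" "inv\<^bsub>G\<^esub> (t b) \<otimes>\<^bsub>G\<^esub> (h \<otimes>\<^bsub>G\<^esub> t ?c) \<in> H" using tr_ex[of "h \<otimes>\<^bsub>G\<^esub> t ?c"] h tc by auto
  have tb: "t b \<in> carrier G" using t_c b by auto
  define y where "y = inv\<^bsub>G\<^esub> (t b) \<otimes>\<^bsub>G\<^esub> h \<otimes>\<^bsub>G\<^esub> t ?c"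
  have yH: "y \<in> H" using b h tb tc by (simp add: y_def grp.m_assoc)
  define x1 where "x1 = inv\<^bsub>G\<^esub> (t ?a) \<otimes>\<^bsub>G\<^esub> g \<otimes>\<^bsub>G\<^esub> t b"
  define x where "x = inv\<^bsub>G\<^esub> (t ?a) \<otimes>\<^bsub>G\<^esub> (g \<otimes>\<^bsub>G\<^esub> h) \<otimes>\<^bsub>G\<^esub> t ?c"
  have xx: "x = x1 \<otimes>\<^bsub>G\<^esub> y"
    using ta tb tc g h by (simp add: x_def x1_def y_def grp.m_assoc grp.r_inv_ex)
     (simp add: grp.m_assoc[symmetric] grp.r_inv)
  have x1c: "x1 \<in> carrier G" using ta tb g by (simp add: x1_def)
  have yc: "y \<in> carrier G" using yH Hc by simp
  have "(Ind g * Ind h) $$ (p,r) = (\<Sum>q<m*d. Ind h $$ (q,r) * Ind g $$ (p,q))"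
    using mult_entry[OF ind_carrier ind_carrier p r] by (simp add: mult.commute)
  also have "\<dots> = (\<Sum>c'<d. \<rho> y $$ (c', r mod d) * Ind g $$ (p, b*d+c'))"
    using ind_col_sum[OF h r b(1), of "\<lambda>q. Ind g $$ (p,q)"] yH by (simp add: y_def)
  also have "\<dots> = Ind (g \<otimes>\<^bsub>G\<^esub> h) $$ (p,r)"
  proof (cases "x1 \<in> H")
    case True
    have "(\<Sum>c'<d. \<rho> y $$ (c', r mod d) * Ind g $$ (p, b*d+c')) = (\<Sum>c'<d. \<rho> x1 $$ (p mod d, c') * \<rho> y $$ (c', r mod d))"
    proof (intro sum.cong refl)
      fix c assume "c \<in> {..<d}"
      then have c: "c < d" and q: "b*d+c < m*d" using bd_less[OF b(1)] by auto
      show "\<rho> y $$ (c, r mod d) * Ind g $$ (p, b*d+c) = \<rho> x1 $$ (p mod d, c) * \<rho> y $$ (c, r mod d)"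
        using True c by (simp add: ind_entry[OF p q] divmod x1_def mult.commute)
    qed
    also have "\<dots> = (\<rho> x1 * \<rho> y) $$ (p mod d, r mod d)"
      using mult_entry[OF rho_c[OF True] rho_c[OF yH] ps(2) rs(2)] by simp
    also have "\<dots> = \<rho> x $$ (p mod d, r mod d)" using rho_m[OF True yH] xx by simp
    finally show ?thesis using Hmult[OF True yH] xx p r by (simp add: ind_entry x_def)
  next
    case False
    have "x \<notin> H"
    proof
      assume "x \<in> H"
      then have "x \<otimes>\<^bsub>G\<^esub> inv\<^bsub>G\<^esub> y \<in> H" using Hmult Hinv yH by simp
      moreover have "x \<otimes>\<^bsub>G\<^esub> inv\<^bsub>G\<^esub> y = x1" using xx x1c yc by (simp add: grp.m_assoc)
      ultimately show False using False by simp
    qed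
    moreover have "(\<Sum>c'<d. \<rho> y $$ (c', r mod d) * Ind g $$ (p, b*d+c')) = 0"
    proof (intro sum.neutral ballI)
      fix c assume "c \<in> {..<d}"
      then have c: "c < d" and q: "b*d+c < m*d" using bd_less[OF b(1)] by auto
      show "\<rho> y $$ (c, r mod d) * Ind g $$ (p, b*d+c) = 0"
        using False c by (simp add: ind_entry[OF p q] divmod x1_def)
    qed

    ultimately show ?thesis using p r by (simp add: ind_entry x_def)
  qed
  finally show "Ind (g \<otimes>\<^bsub>G\<^esub> h) $$ (p,r) = (Ind g * Ind h) $$ (p,r)" by simp
qed

lemma ind_rep: "is_rep G (m*d) Ind"
  unfolding is_rep_def using ind_carrier ind_one ind_mult by blast

end

(* ---- part 12 ---- *)
context frob begin

definition eqvH where "eqvH F \<longleftrightarrow> (\<forall>h\<in>H. \<forall>e\<in>qedges \<Gamma>. \<forall>s<d. \<forall>x.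
   F (aE h e, s) x = (\<Sum>c<d. \<rho> (inv\<^bsub>G\<^esub> h) $$ (c,s) * F (e,c) x))"
definition eqvG where "eqvG F \<longleftrightarrow> (\<forall>g\<in>carrier G. \<forall>e\<in>qedges \<Gamma>. \<forall>p<m*d. \<forall>x.
   F (aE g e, p) x = (\<Sum>q<m*d. Ind (inv\<^bsub>G\<^esub> g) $$ (q,p) * F (e,q) x))"
definition IndF where "IndF F = (\<lambda>(e,p) x. F (aE (inv\<^bsub>G\<^esub> (t (p div d))) e, p mod d) x)"
definition ResF where "ResF F = (\<lambda>(e,s) x. F (aE (t a0) e, a0*d + s) x)"

lemma aEm: "g \<in> carrier G \<Longrightarrow> h \<in> carrier G \<Longrightarrow> e \<in> qedges \<Gamma> \<Longrightarrow> aE g (aE h e) = aE (g \<otimes>\<^bsub>G\<^esub> h) e"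
  using act by (simp add: qg_action_def)
lemma aEin: "g \<in> carrier G \<Longrightarrow> e \<in> qedges \<Gamma> \<Longrightarrow> aE g e \<in> qedges \<Gamma>"
  using act_props(1)[OF act] by blast

lemma ind_eqv: assumes F: "eqvH F" shows "eqvG (IndF F)"
  unfolding eqvG_def
proof (intro ballI allI impI)
  fix g e p x assume g: "g \<in> carrier G" and e: "e \<in> qedges \<Gamma>" and p: "p < m*d"
  let ?a = "p div d" let ?s = "p mod d"
  note ps = p_split[OF p]
  have ta: "t ?a \<in> carrier G" using t_c ps by simp
  have ig: "inv\<^bsub>G\<^esub> g \<in> carrier G" using g by simp
  obtain b where b: "b < m" "inv\<^bsub>G\<^esub> (t b) \<otimes>\<^bsub>G\<^esub> (inv\<^bsub>G\<^esub> g \<otimes>\<^bsub>G\<^esub> t ?a) \<in> H"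
    using tr_ex[of "inv\<^bsub>G\<^esub> g \<otimes>\<^bsub>G\<^esub> t ?a"] ig ta by auto
  have tb: "t b \<in> carrier G" using t_c b by simp
  define hh where "hh = inv\<^bsub>G\<^esub> (t b) \<otimes>\<^bsub>G\<^esub> inv\<^bsub>G\<^esub> g \<otimes>\<^bsub>G\<^esub> t ?a"
  have hhH: "hh \<in> H" using b tb ig ta by (simp add: hh_def grp.m_assoc)
  have hhc: "hh \<in> carrier G" using Hc hhH by simp
  have e': "aE (inv\<^bsub>G\<^esub> (t b)) e \<in> qedges \<Gamma>" using aEin tb e by simp
  have ginv: "inv\<^bsub>G\<^esub> (t ?a) \<otimes>\<^bsub>G\<^esub> g = inv\<^bsub>G\<^esub> hh \<otimes>\<^bsub>G\<^esub> inv\<^bsub>G\<^esub> (t b)"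
    using ta tb g by (simp add: hh_def grp.inv_mult_group grp.m_assoc)
  have "IndF F (aE g e, p) x = F (aE (inv\<^bsub>G\<^esub> (t ?a)) (aE g e), ?s) x" by (simp add: IndF_def)
  also have "aE (inv\<^bsub>G\<^esub> (t ?a)) (aE g e) = aE (inv\<^bsub>G\<^esub> hh) (aE (inv\<^bsub>G\<^esub> (t b)) e)"
    using aEm ta tb g e hhc ginv by simp
  also have "F (aE (inv\<^bsub>G\<^esub> hh) (aE (inv\<^bsub>G\<^esub> (t b)) e), ?s) x
      = (\<Sum>c<d. \<rho> hh $$ (c,?s) * F (aE (inv\<^bsub>G\<^esub> (t b)) e, c) x)"
    using F Hinv[OF hhH] e' ps hhc unfolding eqvH_def by simp
  also have "\<dots> = (\<Sum>c<d. \<rho> hh $$ (c,?s) * IndF F (e, b*d+c) x)"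
    by (intro sum.cong refl) (simp add: IndF_def divmod)
  also have "\<dots> = (\<Sum>q<m*d. Ind (inv\<^bsub>G\<^esub> g) $$ (q,p) * IndF F (e,q) x)"
    using ind_col_sum[OF ig p b(1), of "\<lambda>q. IndF F (e,q) x"] hhH by (simp add: hh_def)
  finally show "IndF F (aE g e, p) x = (\<Sum>q<m*d. Ind (inv\<^bsub>G\<^esub> g) $$ (q,p) * IndF F (e,q) x)" .
qed

lemma res_eqv: assumes F: "eqvG F" shows "eqvH (ResF F)"
  unfolding eqvH_def
proof (intro ballI allI impI)
  fix h e s x assume h: "h \<in> H" and e: "e \<in> qedges \<Gamma>" and s: "s < d"
  let ?T = "t a0"
  have TH: "?T \<in> H" and Tc: "?T \<in> carrier G" using a0 Hc by auto
  have hc: "h \<in> carrier G" using Hc h by simp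
  have p0: "a0*d+s < m*d" using bd_less[OF a0(1) s] .
  have Th: "?T \<otimes>\<^bsub>G\<^esub> h \<in> carrier G" using Tc hc by simp
  have iTh: "inv\<^bsub>G\<^esub> (?T \<otimes>\<^bsub>G\<^esub> h) \<in> carrier G" using Th by simp
  have iT: "inv\<^bsub>G\<^esub> ?T \<in> carrier G" using Tc by simp
  have y1: "inv\<^bsub>G\<^esub> (t a0) \<otimes>\<^bsub>G\<^esub> inv\<^bsub>G\<^esub> (?T \<otimes>\<^bsub>G\<^esub> h) \<otimes>\<^bsub>G\<^esub> t ((a0*d+s) div d) = inv\<^bsub>G\<^esub> ?T \<otimes>\<^bsub>G\<^esub> inv\<^bsub>G\<^esub> h"
    using Tc hc s by (simp add: divmod grp.inv_mult_group grp.m_assoc)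
  have y1H: "inv\<^bsub>G\<^esub> ?T \<otimes>\<^bsub>G\<^esub> inv\<^bsub>G\<^esub> h \<in> H" using Hmult Hinv TH h by simp
  have "ResF F (aE h e, s) x = F (aE (?T \<otimes>\<^bsub>G\<^esub> h) e, a0*d+s) x"
    using aEm Tc hc e by (simp add: ResF_def)
  also have "\<dots> = (\<Sum>q<m*d. Ind (inv\<^bsub>G\<^esub> (?T \<otimes>\<^bsub>G\<^esub> h)) $$ (q, a0*d+s) * F (e,q) x)"
    using F Th e p0 unfolding eqvG_def by blast
  also have "\<dots> = (\<Sum>c<d. \<rho> (inv\<^bsub>G\<^esub> ?T \<otimes>\<^bsub>G\<^esub> inv\<^bsub>G\<^esub> h) $$ (c, s) * F (e, a0*d+c) x)"
    using ind_col_sum[OF iTh p0 a0(1), of "\<lambda>q. F (e,q) x"] y1 y1H s by (simp add: divmod)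
  also have "\<dots> = (\<Sum>c<d. \<rho> (inv\<^bsub>G\<^esub> h) $$ (c,s) * ResF F (e,c) x)"
  proof -
    have y2: "inv\<^bsub>G\<^esub> (t a0) \<otimes>\<^bsub>G\<^esub> inv\<^bsub>G\<^esub> ?T \<otimes>\<^bsub>G\<^esub> t ((a0*d+c) div d) = inv\<^bsub>G\<^esub> ?T" if "c < d" for c
      using Tc that by (simp add: divmod grp.m_assoc)
    have R: "ResF F (e,c) x = (\<Sum>c'<d. \<rho> (inv\<^bsub>G\<^esub> ?T) $$ (c', c) * F (e, a0*d+c') x)" if c: "c < d" for c
    proof -
      have "ResF F (e,c) x = F (aE ?T e, a0*d+c) x" by (simp add: ResF_def)
      also have "\<dots> = (\<Sum>q<m*d. Ind (inv\<^bsub>G\<^esub> ?T) $$ (q, a0*d+c) * F (e,q) x)"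
        using F Tc e bd_less[OF a0(1) c] unfolding eqvG_def by blast
      also have "\<dots> = (\<Sum>c'<d. \<rho> (inv\<^bsub>G\<^esub> ?T) $$ (c', c) * F (e, a0*d+c') x)"
        using ind_col_sum[OF iT bd_less[OF a0(1) c] a0(1), of "\<lambda>q. F (e,q) x"] y2[OF c] Hinv[OF TH] c
        by (simp add: divmod)
      finally show ?thesis .
    qed
    have "(\<Sum>c<d. \<rho> (inv\<^bsub>G\<^esub> h) $$ (c,s) * ResF F (e,c) x)
        = (\<Sum>c<d. \<rho> (inv\<^bsub>G\<^esub> h) $$ (c,s) * (\<Sum>c'<d. \<rho> (inv\<^bsub>G\<^esub> ?T) $$ (c', c) * F (e, a0*d+c') x))"
      using R by simp
    also have "\<dots> = (\<Sum>c<d. \<Sum>c'<d. \<rho> (inv\<^bsub>G\<^esub> ?T) $$ (c', c) * \<rho> (inv\<^bsub>G\<^esub> h) $$ (c,s) * F (e, a0*d+c') x)"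
      by (simp add: sum_distrib_left mult.commute mult.left_commute)
    also have "\<dots> = (\<Sum>c'<d. \<Sum>c<d. \<rho> (inv\<^bsub>G\<^esub> ?T) $$ (c', c) * \<rho> (inv\<^bsub>G\<^esub> h) $$ (c,s) * F (e, a0*d+c') x)"
      by (rule sum.swap)
    also have "\<dots> = (\<Sum>c'<d. (\<rho> (inv\<^bsub>G\<^esub> ?T) * \<rho> (inv\<^bsub>G\<^esub> h)) $$ (c', s) * F (e, a0*d+c') x)"
      using mult_entry[OF rho_c[OF Hinv[OF TH]] rho_c[OF Hinv[OF h]] _ s]
      by (intro sum.cong refl) (simp add: sum_distrib_right)
    also have "\<dots> = (\<Sum>c<d. \<rho> (inv\<^bsub>G\<^esub> ?T \<otimes>\<^bsub>G\<^esub> inv\<^bsub>G\<^esub> h) $$ (c, s) * F (e, a0*d+c) x)"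
      using rho_m[OF Hinv[OF TH] Hinv[OF h]] by simp
    finally show ?thesis by simp
  qed
  finally show "ResF F (aE h e, s) x = (\<Sum>c<d. \<rho> (inv\<^bsub>G\<^esub> h) $$ (c,s) * ResF F (e,c) x)" .
qed

lemma res_ind: assumes e: "e \<in> qedges \<Gamma>" and s: "s < d" shows "ResF (IndF F) (e,s) x = F (e,s) x"
  using act_inv_e(1)[OF act t_c[OF a0(1)] e] s by (simp add: ResF_def IndF_def divmod)

lemma ind_res: assumes F: "eqvG F" and e: "e \<in> qedges \<Gamma>" and p: "p < m*d"
  shows "IndF (ResF F) (e,p) x = F (e,p) x"
proof -
  let ?a = "p div d" let ?s = "p mod d" let ?T = "t a0"
  note ps = p_split[OF p]
  have ta: "t ?a \<in> carrier G" using t_c ps by simp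
  have Tc: "?T \<in> carrier G" using a0 Hc by auto
  have g: "?T \<otimes>\<^bsub>G\<^esub> inv\<^bsub>G\<^esub> (t ?a) \<in> carrier G" using Tc ta by simp
  have ig: "inv\<^bsub>G\<^esub> (?T \<otimes>\<^bsub>G\<^esub> inv\<^bsub>G\<^esub> (t ?a)) \<in> carrier G" using g by simp
  have p0: "a0*d + ?s < m*d" using bd_less[OF a0(1) ps(2)] .
  have y: "inv\<^bsub>G\<^esub> (t ?a) \<otimes>\<^bsub>G\<^esub> inv\<^bsub>G\<^esub> (?T \<otimes>\<^bsub>G\<^esub> inv\<^bsub>G\<^esub> (t ?a)) \<otimes>\<^bsub>G\<^esub> t ((a0*d + ?s) div d) = \<one>\<^bsub>G\<^esub>"
    using Tc ta ps by (simp add: divmod grp.inv_mult_group grp.m_assoc)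
  have "IndF (ResF F) (e,p) x = F (aE ?T (aE (inv\<^bsub>G\<^esub> (t ?a)) e), a0*d + ?s) x"
    by (simp add: IndF_def ResF_def)
  also have "\<dots> = F (aE (?T \<otimes>\<^bsub>G\<^esub> inv\<^bsub>G\<^esub> (t ?a)) e, a0*d + ?s) x" using aEm Tc ta e by simp
  also have "\<dots> = (\<Sum>q<m*d. Ind (inv\<^bsub>G\<^esub> (?T \<otimes>\<^bsub>G\<^esub> inv\<^bsub>G\<^esub> (t ?a))) $$ (q, a0*d + ?s) * F (e,q) x)"
    using F g e p0 unfolding eqvG_def by blast
  also have "\<dots> = (\<Sum>c<d. \<rho> \<one>\<^bsub>G\<^esub> $$ (c, ?s) * F (e, ?a*d+c) x)"
    using ind_col_sum[OF ig p0 ps(1), of "\<lambda>q. F (e,q) x"] y Hone ps by (simp add: divmod)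
  also have "\<dots> = (\<Sum>c<d. if c = ?s then F (e, ?a*d+c) x else 0)"
    using ps by (intro sum.cong refl) (simp add: rho_1)
  also have "\<dots> = F (e,p) x" using ps by simp
  finally show ?thesis .
qed

definition allvcH where "allvcH F F1 \<longleftrightarrow> (\<forall>w\<in>qverts \<Gamma>. \<forall>s<d.
   vc_holds \<Gamma> w (vval \<Gamma> (\<lambda>e. F (e,s)) w) (vdval \<Gamma> (\<lambda>e. F1 (e,s)) w))"
definition allvcG where "allvcG F F1 \<longleftrightarrow> (\<forall>w\<in>qverts \<Gamma>. \<forall>p<m*d.
   vc_holds \<Gamma> w (vval \<Gamma> (\<lambda>e. F (e,p)) w) (vdval \<Gamma> (\<lambda>e. F1 (e,p)) w))"

lemma ind_allvc: assumes A: "allvcH F F1" shows "allvcG (IndF F) (IndF F1)"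
  unfolding allvcG_def
proof (intro ballI allI impI)
  fix w p assume w: "w \<in> qverts \<Gamma>" and p: "p < m*d"
  let ?a = "p div d" let ?s = "p mod d"
  note ps = p_split[OF p]
  have ta: "t ?a \<in> carrier G" using t_c ps by simp
  have w': "aV (inv\<^bsub>G\<^esub> (t ?a)) w \<in> qverts \<Gamma>" using act_props(2)[OF act _ w] ta by simp
  have "vc_holds \<Gamma> (aV (inv\<^bsub>G\<^esub> (t ?a)) w) (vval \<Gamma> (\<lambda>e. F (e,?s)) (aV (inv\<^bsub>G\<^esub> (t ?a)) w))
         (vdval \<Gamma> (\<lambda>e. F1 (e,?s)) (aV (inv\<^bsub>G\<^esub> (t ?a)) w))"
    using A w' ps unfolding allvcH_def by blast
  from vc_transport[OF act wf ta w' this]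
  show "vc_holds \<Gamma> w (vval \<Gamma> (\<lambda>e. IndF F (e,p)) w) (vdval \<Gamma> (\<lambda>e. IndF F1 (e,p)) w)"
    using act_inv_v(2)[OF act ta w] by (simp add: IndF_def)
qed

lemma res_allvc: assumes A: "allvcG F F1" shows "allvcH (ResF F) (ResF F1)"
  unfolding allvcH_def
proof (intro ballI allI impI)
  fix w s assume w: "w \<in> qverts \<Gamma>" and s: "s < d"
  let ?T = "t a0"
  have Tc: "?T \<in> carrier G" using a0 Hc by auto
  have iT: "inv\<^bsub>G\<^esub> ?T \<in> carrier G" using Tc by simp
  have w': "aV ?T w \<in> qverts \<Gamma>" using act_props(2)[OF act Tc w] .
  have "vc_holds \<Gamma> (aV ?T w) (vval \<Gamma> (\<lambda>e. F (e,a0*d+s)) (aV ?T w)) (vdval \<Gamma> (\<lambda>e. F1 (e,a0*d+s)) (aV ?T w))"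
    using A w' bd_less[OF a0(1) s] unfolding allvcG_def by blast
  from vc_transport[OF act wf iT w' this]
  show "vc_holds \<Gamma> w (vval \<Gamma> (\<lambda>e. ResF F (e,s)) w) (vdval \<Gamma> (\<lambda>e. ResF F1 (e,s)) w)"
    using act_inv_v(1)[OF act Tc w] Tc by (simp add: ResF_def)
qed

end

(* ---- part 13 ---- *)
lemma qg_action_sub:
  assumes act: "qg_action G \<Gamma> aV aE" and sub: "subgroup H G"
  shows "qg_action (G\<lparr>carrier := H\<rparr>) \<Gamma> aV aE"
proof -
  interpret group G using act by (simp add: qg_action_def)
  have grpH: "group (G\<lparr>carrier := H\<rparr>)" using subgroup.subgroup_is_group[OF sub] group_axioms by blast
  have HG: "H \<subseteq> carrier G" using sub by (simp add: subgroup_def)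
  have finH: "finite H" using act HG finite_subset by (auto simp: qg_action_def)
  have invc: "inv\<^bsub>G\<lparr>carrier := H\<rparr>\<^esub> g = inv\<^bsub>G\<^esub> g" if "g \<in> H" for g using m_inv_consistent[OF sub that] .
  show ?thesis
    using act HG finH grpH invc unfolding qg_action_def
    by (simp add: subset_iff)
qed

lemma no_adj_sub:
  assumes "no_adjacent_move G \<Gamma> aV" "subgroup H G"
  shows "no_adjacent_move (G\<lparr>carrier := H\<rparr>) \<Gamma> aV"
  using assms by (auto simp: no_adjacent_move_def subgroup_def)

context quot begin

definition LK where "LK e s p = (if fst p = idx e then (\<Sum>c<n. \<rho> (inv\<^bsub>K\<^esub> (hs e)) $$ (c,s) * Binv (fst p) $$ (snd p, c)) else 0)"

lemma lift_kernel: assumes e: "e \<in> qedges \<Gamma>"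
  shows "lift f (e,s) x = (\<Sum>p\<in>qedges Q. LK e s p * f p x)"
proof -
  let ?i = "idx e"
  have i: "?i < I" using idx[OF e] by simp
  have set: "{p \<in> qedges Q. fst p = ?i} = (\<lambda>j. (?i, j)) ` {..<dd ?i}" using QE i by auto
  have inj: "inj_on (\<lambda>j. (?i, j)) {..<dd ?i}" by (auto simp: inj_on_def)
  have "(\<Sum>p\<in>qedges Q. LK e s p * f p x)
      = (\<Sum>p\<in>qedges Q. if fst p = ?i then (\<Sum>c<n. \<rho> (inv\<^bsub>K\<^esub> (hs e)) $$ (c,s) * Binv ?i $$ (snd p, c)) * f p x else 0)"
    by (intro sum.cong refl) (simp add: LK_def)
  also have "\<dots> = (\<Sum>p\<in>{p \<in> qedges Q. fst p = ?i}. (\<Sum>c<n. \<rho> (inv\<^bsub>K\<^esub> (hs e)) $$ (c,s) * Binv ?i $$ (snd p, c)) * f p x)"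
    using finQE by (simp add: sum.inter_filter)
  also have "\<dots> = (\<Sum>j<dd ?i. (\<Sum>c<n. \<rho> (inv\<^bsub>K\<^esub> (hs e)) $$ (c,s) * Binv ?i $$ (j, c)) * f (?i,j) x)"
    unfolding set by (simp add: sum.reindex[OF inj])
  also have "\<dots> = (\<Sum>j<dd ?i. \<Sum>c<n. \<rho> (inv\<^bsub>K\<^esub> (hs e)) $$ (c,s) * (Binv ?i $$ (j, c) * f (?i,j) x))"
    by (simp add: sum_distrib_right mult.assoc)
  also have "\<dots> = (\<Sum>c<n. \<Sum>j<dd ?i. \<rho> (inv\<^bsub>K\<^esub> (hs e)) $$ (c,s) * (Binv ?i $$ (j, c) * f (?i,j) x))"
    by (rule sum.swap)
  also have "\<dots> = lift f (e,s) x" by (simp add: lift_def Wv_def sum_distrib_left)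
  finally show ?thesis by simp
qed

lemma LK_len: assumes e: "e \<in> qedges \<Gamma>" and p: "p \<in> qedges Q" and nz: "LK e s p \<noteq> 0"
  shows "qlen Q p = qlen \<Gamma> e"
proof -
  obtain i j where pij: "p = (i,j)" by (cases p)
  have ij: "i < I" "j < dd i" using p QE pij by auto
  have ie: "i = idx e" using nz pij by (auto simp: LK_def split: if_splits)
  have "qlen Q (i,j) = qlen \<Gamma> (erep i)" using Qse ij by blast
  also have "\<dots> = qlen \<Gamma> e" using hs[OF e] ie act_props(5)[OF act, of "hs e" "erep i"] erep_in ij by auto
  finally show ?thesis using pij by simp
qed

lemma lift_cong: assumes e: "e \<in> qedges \<Gamma>" and fg: "\<forall>p\<in>qedges Q. f p = g p"
  shows "lift f (e,s) = lift g (e,s)"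
proof -
  have i: "idx e < I" using idx[OF e] by simp
  have "Wv f (idx e) c x = Wv g (idx e) c x" for c x
    unfolding Wv_def using fg QE i by (intro sum.cong refl) auto
  then show ?thesis by (simp add: lift_def fun_eq_iff)
qed

lemma qvc_cong: assumes "\<forall>p\<in>qedges Q. f p = f' p" "\<forall>p\<in>qedges Q. f1 p = f1' p"
  shows "qvc f f1 = qvc f' f1'"
proof -
  have "vc_holds Q k (vval Q f k) (vdval Q f1 k) = vc_holds Q k (vval Q f' k) (vdval Q f1' k)" for k
    by (rule vc_cong) (use assms in \<open>auto simp: inc_def vval_def vdval_def\<close>)
  then show ?thesis by (simp add: qvc_def)
qed

end

(* ---- part 14 ---- *)
lemma PhiD:
  assumes "f \<in> Phi \<Gamma> lam"
  obtains f1 f2 where "\<forall>e. e \<notin> qedges \<Gamma> \<longrightarrow> f e = (\<lambda>_. 0)"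
    "\<forall>e\<in>qedges \<Gamma>. \<forall>x. x \<notin> {0..qlen \<Gamma> e} \<longrightarrow> f e x = 0"
    "\<forall>e\<in>qedges \<Gamma>. \<forall>x\<in>{0..qlen \<Gamma> e}.
            (f e has_vector_derivative f1 e x) (at x within {0..qlen \<Gamma> e}) \<and>
            (f1 e has_vector_derivative f2 e x) (at x within {0..qlen \<Gamma> e}) \<and>
            - f2 e x = lam * f e x"
    "\<forall>v\<in>qverts \<Gamma>. vc_holds \<Gamma> v (vval \<Gamma> f v) (vdval \<Gamma> f1 v)"
  using assms unfolding Phi_def by blast

lemma PhiI:
  assumes "\<forall>e. e \<notin> qedges \<Gamma> \<longrightarrow> f e = (\<lambda>_. 0)"
    "\<forall>e\<in>qedges \<Gamma>. \<forall>x. x \<notin> {0..qlen \<Gamma> e} \<longrightarrow> f e x = 0"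
    "\<forall>e\<in>qedges \<Gamma>. \<forall>x\<in>{0..qlen \<Gamma> e}.
            (f e has_vector_derivative f1 e x) (at x within {0..qlen \<Gamma> e}) \<and>
            (f1 e has_vector_derivative f2 e x) (at x within {0..qlen \<Gamma> e}) \<and>
            - f2 e x = lam * f e x"
    "\<forall>v\<in>qverts \<Gamma>. vc_holds \<Gamma> v (vval \<Gamma> f v) (vdval \<Gamma> f1 v)"
  shows "f \<in> Phi \<Gamma> lam"
  using assms unfolding Phi_def by blast

lemma sum_nz: "(\<Sum>c\<in>A. g c) \<noteq> (0::complex) \<Longrightarrow> \<exists>c\<in>A. g c \<noteq> 0"
  by (meson sum.neutral)

lemma quot_ex:
  fixes \<Gamma> :: "('v, 'e, 'r) qgraph" and K :: "'g monoid" and aV :: "'g \<Rightarrow> 'v \<Rightarrow> 'v" and aE :: "'g \<Rightarrow> 'e \<Rightarrow> 'e"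
    and n :: nat and \<rho> :: "'g \<Rightarrow> complex mat" and Q :: "(nat, nat \<times> nat, 'r \<times> nat) qgraph"
  assumes "is_quotient \<Gamma> K aV aE n \<rho> Q" "qgraph_wf \<Gamma>" "qg_action K \<Gamma> aV aE" "no_adjacent_move K \<Gamma> aV" "is_rep K n \<rho>"
  shows "\<exists>Bg I erep N vrep Bi dd gsel. quot \<Gamma> K aV aE n \<rho> Q Bg I erep N vrep Bi dd gsel"
  using assms(1) unfolding is_quotient_def
  proof (elim exE conjE)
    fix Bg :: "complex mat" and I :: nat and erep :: "nat \<Rightarrow> 'e" and N :: nat and vrep :: "nat \<Rightarrow> 'v" and Bi :: "nat \<Rightarrow> complex mat" and dd :: "nat \<Rightarrow> nat" and gsel :: "nat \<Rightarrow> 'e \<Rightarrow> 'g"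
    assume A: "Bg \<in> carrier_mat n n" "invertible_mat Bg" "\<forall>i<I. erep i \<in> qedges \<Gamma>"
      "\<forall>i<I. \<forall>i'<I. erep i' \<in> orb K aE (erep i) \<longrightarrow> i = i'"
      "\<forall>e\<in>qedges \<Gamma>. \<exists>i<I. e \<in> orb K aE (erep i)"
      "\<forall>k<N. vrep k \<in> qverts \<Gamma>"
      "\<forall>k<N. \<forall>k'<N. vrep k' \<in> orb K aV (vrep k) \<longrightarrow> k = k'"
      "\<forall>v\<in>qverts \<Gamma>. \<exists>k<N. v \<in> orb K aV (vrep k)"
    assume B: "\<forall>i<I. Bi i \<in> carrier_mat n n \<and> invertible_mat (Bi i) \<and> dd i \<le> n \<and>
        (\<forall>j<dd i. col (Bi i) j \<in> fixed_space n \<rho> (stab K aE (erep i))) \<and>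
        fixed_space n \<rho> (stab K aE (erep i)) \<subseteq> vspan n (col (Bi i) ` {..<dd i}) \<and>
        (\<forall>j. dd i \<le> j \<and> j < n \<longrightarrow> col (Bi i) j \<in> nontriv_iso n \<rho> (stab K aE (erep i))) \<and>
        nontriv_iso n \<rho> (stab K aE (erep i)) \<subseteq> vspan n (col (Bi i) ` {dd i..<n})"
    assume C: "\<forall>k<N. \<forall>i<I. \<forall>e\<in>inc \<Gamma> (vrep k). e \<in> orb K aE (erep i) \<longrightarrow>
        gsel k e \<in> carrier K \<and> aE (gsel k e) (erep i) = e"
      "qverts Q = {..<N}" "qedges Q = {(i, j). i < I \<and> j < dd i}"
    assume D: "\<forall>i<I. \<forall>j<dd i.
        qsrc Q (i, j) < N \<and> qsrc \<Gamma> (erep i) \<in> orb K aV (vrep (qsrc Q (i, j))) \<and>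
        qtgt Q (i, j) < N \<and> qtgt \<Gamma> (erep i) \<in> orb K aV (vrep (qtgt Q (i, j))) \<and>
        qlen Q (i, j) = qlen \<Gamma> (erep i)"
    assume E: "\<forall>k<N. qrows Q k = qrows \<Gamma> (vrep k) \<times> {..<n} \<and>
        (\<forall>r\<in>qrows \<Gamma> (vrep k). \<forall>t<n. \<forall>i<I. \<forall>j<dd i.
           qA Q k (r, t) (i, j) =
             (\<Sum>e\<in>{e \<in> inc \<Gamma> (vrep k). e \<in> orb K aE (erep i)}.
                qA \<Gamma> (vrep k) r e * coord_mat n (Bi i) (\<rho> (inv\<^bsub>K\<^esub> (gsel k e))) Bg $$ (j, t)) \<and>
           qB Q k (r, t) (i, j) =
             (\<Sum>e\<in>{e \<in> inc \<Gamma> (vrep k). e \<in> orb K aE (erep i)}.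
                qB \<Gamma> (vrep k) r e * coord_mat n (Bi i) (\<rho> (inv\<^bsub>K\<^esub> (gsel k e))) Bg $$ (j, t)))"
    have "quot \<Gamma> K aV aE n \<rho> Q Bg I erep N vrep Bi dd gsel"
      by (rule quot.intro[OF assms(2,3,4,5) A B C D E])
    then show ?thesis by blast
  qed



theorem proposition3:
  fixes \<Gamma> :: "('v, 'e, 'r) qgraph"
    and G :: "'g monoid" and H :: "'g set"
    and aV :: "'g \<Rightarrow> 'v \<Rightarrow> 'v" and aE :: "'g \<Rightarrow> 'e \<Rightarrow> 'e"
    and d :: nat and \<rho> :: "'g \<Rightarrow> complex mat"
    and m :: nat and t :: "nat \<Rightarrow> 'g"
    and \<Gamma>1 \<Gamma>2 :: "(nat, nat \<times> nat, 'r \<times> nat) qgraph"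
  assumes "qgraph_wf \<Gamma>"
    and "qg_action G \<Gamma> aV aE"
    and "no_adjacent_move G \<Gamma> aV"
    and "subgroup H G"
    and "is_rep (G\<lparr>carrier := H\<rparr>) d \<rho>"
    and "transversal G H m t"
    and "is_quotient \<Gamma> (G\<lparr>carrier := H\<rparr>) aV aE d \<rho> \<Gamma>1"
    and "is_quotient \<Gamma> G aV aE (m * d) (ind_rep G H d \<rho> m t) \<Gamma>2"
  shows "transplantable \<Gamma>1 \<Gamma>2"
proof -
  interpret fr: frob \<Gamma> G H aV aE d \<rho> m t
    by (rule frob.intro) (rule assms)+
  have act1: "qg_action (G\<lparr>carrier := H\<rparr>) \<Gamma> aV aE" using qg_action_sub assms(2,4) .
  have na1: "no_adjacent_move (G\<lparr>carrier := H\<rparr>) \<Gamma> aV" using no_adj_sub assms(3,4) .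
  have "\<exists>Bg I erep N vrep Bi dd gsel. quot \<Gamma> (G\<lparr>carrier := H\<rparr>) aV aE d \<rho> \<Gamma>1 Bg I erep N vrep Bi dd gsel"
    by (rule quot_ex[OF assms(7,1) act1 na1 assms(5)])
  then obtain Bg1 I1 erep1 N1 vrep1 Bi1 dd1 gsel1 where
    Q1: "quot \<Gamma> (G\<lparr>carrier := H\<rparr>) aV aE d \<rho> \<Gamma>1 Bg1 I1 erep1 N1 vrep1 Bi1 dd1 gsel1" by blast
  have "\<exists>Bg I erep N vrep Bi dd gsel. quot \<Gamma> G aV aE (m*d) (ind_rep G H d \<rho> m t) \<Gamma>2 Bg I erep N vrep Bi dd gsel"
    by (rule quot_ex[OF assms(8,1,2,3) fr.ind_rep])
  then obtain Bg2 I2 erep2 N2 vrep2 Bi2 dd2 gsel2 where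
    Q2: "quot \<Gamma> G aV aE (m*d) (ind_rep G H d \<rho> m t) \<Gamma>2 Bg2 I2 erep2 N2 vrep2 Bi2 dd2 gsel2" by blast
  interpret q1: quot \<Gamma> "G\<lparr>carrier := H\<rparr>" aV aE d \<rho> \<Gamma>1 Bg1 I1 erep1 N1 vrep1 Bi1 dd1 gsel1 by (rule Q1)
  interpret q2: quot \<Gamma> G aV aE "m*d" "ind_rep G H d \<rho> m t" \<Gamma>2 Bg2 I2 erep2 N2 vrep2 Bi2 dd2 gsel2 by (rule Q2)

  have eqv1: "q1.eqv F \<longleftrightarrow> fr.eqvH F" for F :: "'e \<times> nat \<Rightarrow> real \<Rightarrow> complex"
    unfolding q1.eqv_def fr.eqvH_def using fr.grp.m_inv_consistent[OF assms(4)] by simp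
  have eqv2: "q2.eqv F \<longleftrightarrow> fr.eqvG F" for F :: "'e \<times> nat \<Rightarrow> real \<Rightarrow> complex"
    unfolding q2.eqv_def fr.eqvG_def by simp
  have allvc1: "q1.allvc F F1 \<longleftrightarrow> fr.allvcH F F1" for F F1 :: "'e \<times> nat \<Rightarrow> real \<Rightarrow> complex"
    unfolding q1.allvc_def fr.allvcH_def by simp
  have allvc2: "q2.allvc F F1 \<longleftrightarrow> fr.allvcG F F1" for F F1 :: "'e \<times> nat \<Rightarrow> real \<Rightarrow> complex"
    unfolding q2.allvc_def fr.allvcG_def by simp
  define Tm where "Tm f = q2.proj (fr.IndF (q1.lift f))" for f :: "nat \<times> nat \<Rightarrow> real \<Rightarrow> complex"
  define Sm where "Sm f = q1.proj (fr.ResF (q2.lift f))" for f :: "nat \<times> nat \<Rightarrow> real \<Rightarrow> complex"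
  define T where "T e2 e1 = (\<Sum>c<m*d. Bi2 (fst e2) $$ (c, snd e2) *
      q1.LK (aE (inv\<^bsub>G\<^esub> (t (c div d))) (erep2 (fst e2))) (c mod d) e1)" for e2 e1 :: "nat \<times> nat"
  define S where "S e1 e2 = (\<Sum>c<d. Bi1 (fst e1) $$ (c, snd e1) *
      q2.LK (aE (t fr.a0) (erep1 (fst e1))) (fr.a0*d + c) e2)" for e1 e2 :: "nat \<times> nat"
  have edgeT: "aE (inv\<^bsub>G\<^esub> (t (c div d))) (erep2 i) \<in> qedges \<Gamma>" if "i < I2" "c < m*d" for i c
    using act_props(1)[OF assms(2)] fr.t_c fr.p_split[OF that(2)] q2.erep_in that by simp
  have edgeS: "aE (t fr.a0) (erep1 i) \<in> qedges \<Gamma>" if "i < I1" for i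
    using act_props(1)[OF assms(2)] fr.t_c fr.a0 q1.erep_in that by simp
  have TE: "transplant_map \<Gamma>1 \<Gamma>2 T f e2 = Tm f e2" if e2: "e2 \<in> qedges \<Gamma>2" for f e2
  proof
    fix x
    obtain i j where ij: "e2 = (i,j)" by (cases e2)
    have i: "i < I2" using e2 ij q2.QE by simp
    have "Tm f e2 x = (\<Sum>c<m*d. Bi2 i $$ (c,j) * q1.lift f (aE (inv\<^bsub>G\<^esub> (t (c div d))) (erep2 i), c mod d) x)"
      by (simp add: Tm_def q2.proj_def fr.IndF_def ij)
    also have "\<dots> = (\<Sum>c<m*d. Bi2 i $$ (c,j) * (\<Sum>e1\<in>qedges \<Gamma>1. q1.LK (aE (inv\<^bsub>G\<^esub> (t (c div d))) (erep2 i)) (c mod d) e1 * f e1 x))"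
      by (intro sum.cong refl) (simp add: q1.lift_kernel[OF edgeT[OF i]])
    also have "\<dots> = (\<Sum>c<m*d. \<Sum>e1\<in>qedges \<Gamma>1. Bi2 i $$ (c,j) * q1.LK (aE (inv\<^bsub>G\<^esub> (t (c div d))) (erep2 i)) (c mod d) e1 * f e1 x)"
      by (simp add: sum_distrib_left mult.assoc)
    also have "\<dots> = (\<Sum>e1\<in>qedges \<Gamma>1. \<Sum>c<m*d. Bi2 i $$ (c,j) * q1.LK (aE (inv\<^bsub>G\<^esub> (t (c div d))) (erep2 i)) (c mod d) e1 * f e1 x)"
      by (rule sum.swap)
    also have "\<dots> = (\<Sum>e1\<in>qedges \<Gamma>1. T e2 e1 * f e1 x)"
      by (simp add: T_def ij sum_distrib_right)
    finally show "transplant_map \<Gamma>1 \<Gamma>2 T f e2 x = Tm f e2 x" using e2 by (simp add: transplant_map_def)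
  qed
  have SE: "transplant_map \<Gamma>2 \<Gamma>1 S f e1 = Sm f e1" if e1: "e1 \<in> qedges \<Gamma>1" for f e1
  proof
    fix x
    obtain i j where ij: "e1 = (i,j)" by (cases e1)
    have i: "i < I1" using e1 ij q1.QE by simp
    have "Sm f e1 x = (\<Sum>c<d. Bi1 i $$ (c,j) * q2.lift f (aE (t fr.a0) (erep1 i), fr.a0*d + c) x)"
      by (simp add: Sm_def q1.proj_def fr.ResF_def ij)
    also have "\<dots> = (\<Sum>c<d. Bi1 i $$ (c,j) * (\<Sum>e2\<in>qedges \<Gamma>2. q2.LK (aE (t fr.a0) (erep1 i)) (fr.a0*d + c) e2 * f e2 x))"
      by (intro sum.cong refl) (simp add: q2.lift_kernel[OF edgeS[OF i]])

    also have "\<dots> = (\<Sum>c<d. \<Sum>e2\<in>qedges \<Gamma>2. Bi1 i $$ (c,j) * q2.LK (aE (t fr.a0) (erep1 i)) (fr.a0*d + c) e2 * f e2 x)"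
      by (simp add: sum_distrib_left mult.assoc)
    also have "\<dots> = (\<Sum>e2\<in>qedges \<Gamma>2. \<Sum>c<d. Bi1 i $$ (c,j) * q2.LK (aE (t fr.a0) (erep1 i)) (fr.a0*d + c) e2 * f e2 x)"
      by (rule sum.swap)
    also have "\<dots> = (\<Sum>e2\<in>qedges \<Gamma>2. S e1 e2 * f e2 x)"
      by (simp add: S_def ij sum_distrib_right)
    finally show "transplant_map \<Gamma>2 \<Gamma>1 S f e1 x = Sm f e1 x" using e1 by (simp add: transplant_map_def)
  qed
  have lenT: "\<forall>e\<in>qedges \<Gamma>2. \<forall>e'\<in>qedges \<Gamma>1. T e e' \<noteq> 0 \<longrightarrow> qlen \<Gamma>2 e = qlen \<Gamma>1 e'"
  proof (intro ballI impI)
    fix e2 e1 assume e2: "e2 \<in> qedges \<Gamma>2" and e1: "e1 \<in> qedges \<Gamma>1" and nz: "T e2 e1 \<noteq> 0"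
    obtain i j where ij: "e2 = (i,j)" by (cases e2)
    have ij2: "i < I2" "j < dd2 i" using e2 ij q2.QE by auto
    have "(\<Sum>c<m*d. Bi2 i $$ (c, j) * q1.LK (aE (inv\<^bsub>G\<^esub> (t (c div d))) (erep2 i)) (c mod d) e1) \<noteq> 0"
      using nz by (simp add: T_def ij)
    from sum_nz[OF this] obtain c where c: "c < m*d"
      and nzc0: "Bi2 i $$ (c, j) * q1.LK (aE (inv\<^bsub>G\<^esub> (t (c div d))) (erep2 i)) (c mod d) e1 \<noteq> 0" by auto
    then have nzc: "q1.LK (aE (inv\<^bsub>G\<^esub> (t (c div d))) (erep2 i)) (c mod d) e1 \<noteq> 0" by auto
    have "qlen \<Gamma>1 e1 = qlen \<Gamma> (aE (inv\<^bsub>G\<^esub> (t (c div d))) (erep2 i))"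
      using q1.LK_len[OF edgeT[OF ij2(1) c] e1 nzc] .
    also have "\<dots> = qlen \<Gamma> (erep2 i)"
      using act_props(5)[OF assms(2)] fr.t_c fr.p_split[OF c] q2.erep_in ij2 by simp
    also have "\<dots> = qlen \<Gamma>2 (i,j)" using q2.Qse ij2 by simp
    finally show "qlen \<Gamma>2 e2 = qlen \<Gamma>1 e1" using ij by simp
  qed
  have lenS: "\<forall>e\<in>qedges \<Gamma>1. \<forall>e'\<in>qedges \<Gamma>2. S e e' \<noteq> 0 \<longrightarrow> qlen \<Gamma>1 e = qlen \<Gamma>2 e'"
  proof (intro ballI impI)
    fix e1 e2 assume e1: "e1 \<in> qedges \<Gamma>1" and e2: "e2 \<in> qedges \<Gamma>2" and nz: "S e1 e2 \<noteq> 0"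
    obtain i j where ij: "e1 = (i,j)" by (cases e1)
    have ij1: "i < I1" "j < dd1 i" using e1 ij q1.QE by auto
    have "(\<Sum>c<d. Bi1 i $$ (c, j) * q2.LK (aE (t fr.a0) (erep1 i)) (fr.a0*d + c) e2) \<noteq> 0"
      using nz by (simp add: S_def ij)
    from sum_nz[OF this] obtain c where c: "c < d"
      and nzc0: "Bi1 i $$ (c, j) * q2.LK (aE (t fr.a0) (erep1 i)) (fr.a0*d + c) e2 \<noteq> 0" by auto
    then have nzc: "q2.LK (aE (t fr.a0) (erep1 i)) (fr.a0*d + c) e2 \<noteq> 0" by auto

    have "qlen \<Gamma>2 e2 = qlen \<Gamma> (aE (t fr.a0) (erep1 i))"
      using q2.LK_len[OF edgeS[OF ij1(1)] e2 nzc] .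
    also have "\<dots> = qlen \<Gamma> (erep1 i)"
      using act_props(5)[OF assms(2)] fr.t_c fr.a0 q1.erep_in ij1 by simp
    also have "\<dots> = qlen \<Gamma>1 (i,j)" using q1.Qse ij1 by simp
    finally show "qlen \<Gamma>1 e1 = qlen \<Gamma>2 e2" using ij by simp
  qed
  let ?TT = "transplant_map \<Gamma>1 \<Gamma>2 T" let ?SS = "transplant_map \<Gamma>2 \<Gamma>1 S"
  have E1: "q2.eqv (fr.IndF (q1.lift g))" for g :: "nat \<times> nat \<Rightarrow> real \<Rightarrow> complex"
  proof -
    have "fr.eqvH (q1.lift g)" using q1.lift_eqv[of g] eqv1[of "q1.lift g"] by blast
    then have "fr.eqvG (fr.IndF (q1.lift g))" by (rule fr.ind_eqv)
    then show ?thesis using eqv2 by blast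
  qed
  have E2': "fr.eqvG (q2.lift g)" for g :: "nat \<times> nat \<Rightarrow> real \<Rightarrow> complex" using q2.lift_eqv[of g] eqv2[of "q2.lift g"] by blast
  have E2: "q1.eqv (fr.ResF (q2.lift g))" for g :: "nat \<times> nat \<Rightarrow> real \<Rightarrow> complex"
  proof -
    have "fr.eqvH (fr.ResF (q2.lift g))" by (rule fr.res_eqv[OF E2'])
    then show ?thesis using eqv1 by blast
  qed

  have TinPhi: "?TT f \<in> Phi \<Gamma>2 lam" if f: "f \<in> Phi \<Gamma>1 lam" for f lam
  proof -
    obtain f1 f2 where z: "\<forall>e. e \<notin> qedges \<Gamma>1 \<longrightarrow> f e = (\<lambda>_. 0)"
      and sp: "\<forall>e\<in>qedges \<Gamma>1. \<forall>x. x \<notin> {0..qlen \<Gamma>1 e} \<longrightarrow> f e x = 0"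
      and ode: "\<forall>e\<in>qedges \<Gamma>1. \<forall>x\<in>{0..qlen \<Gamma>1 e}.
            (f e has_vector_derivative f1 e x) (at x within {0..qlen \<Gamma>1 e}) \<and>
            (f1 e has_vector_derivative f2 e x) (at x within {0..qlen \<Gamma>1 e}) \<and>
            - f2 e x = lam * f e x"
      and vc: "\<forall>v\<in>qverts \<Gamma>1. vc_holds \<Gamma>1 v (vval \<Gamma>1 f v) (vdval \<Gamma>1 f1 v)"
      by (rule PhiD[OF f])
    note sup = tmap_supp[OF lenT sp]
    note od = tmap_ode[OF lenT ode]
    have qvc1: "q1.qvc f f1" using vc by (simp add: q1.qvc_def)
    have L: "q1.allvc (q1.lift f) (q1.lift f1)" by (rule q1.lift_allvc[OF qvc1])
    have A2: "q2.allvc (fr.IndF (q1.lift f)) (fr.IndF (q1.lift f1))"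
      using fr.ind_allvc L allvc1 allvc2 by simp
    have "q2.qvc (Tm f) (Tm f1)" unfolding Tm_def by (rule q2.proj_qvc[OF E1 E1 A2])
    moreover have "q2.qvc (?TT f) (?TT f1) = q2.qvc (Tm f) (Tm f1)"
      by (rule q2.qvc_cong) (simp_all add: TE)
    ultimately have "q2.qvc (?TT f) (?TT f1)" by simp
    then have vc2: "\<forall>v\<in>qverts \<Gamma>2. vc_holds \<Gamma>2 v (vval \<Gamma>2 (?TT f) v) (vdval \<Gamma>2 (?TT f1) v)"
      by (simp add: q2.qvc_def)
    show ?thesis using sup od vc2 by (intro PhiI) auto
  qed
  have SinPhi: "?SS f \<in> Phi \<Gamma>1 lam" if f: "f \<in> Phi \<Gamma>2 lam" for f lam
  proof -
    obtain f1 f2 where z: "\<forall>e. e \<notin> qedges \<Gamma>2 \<longrightarrow> f e = (\<lambda>_. 0)"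
      and sp: "\<forall>e\<in>qedges \<Gamma>2. \<forall>x. x \<notin> {0..qlen \<Gamma>2 e} \<longrightarrow> f e x = 0"
      and ode: "\<forall>e\<in>qedges \<Gamma>2. \<forall>x\<in>{0..qlen \<Gamma>2 e}.
            (f e has_vector_derivative f1 e x) (at x within {0..qlen \<Gamma>2 e}) \<and>
            (f1 e has_vector_derivative f2 e x) (at x within {0..qlen \<Gamma>2 e}) \<and>
            - f2 e x = lam * f e x"
      and vc: "\<forall>v\<in>qverts \<Gamma>2. vc_holds \<Gamma>2 v (vval \<Gamma>2 f v) (vdval \<Gamma>2 f1 v)"
      by (rule PhiD[OF f])
    note sup = tmap_supp[OF lenS sp]
    note od = tmap_ode[OF lenS ode]
    have qvc2: "q2.qvc f f1" using vc by (simp add: q2.qvc_def)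
    have L: "q2.allvc (q2.lift f) (q2.lift f1)" by (rule q2.lift_allvc[OF qvc2])
    have A1: "q1.allvc (fr.ResF (q2.lift f)) (fr.ResF (q2.lift f1))"
      using fr.res_allvc L allvc1 allvc2 by simp
    have "q1.qvc (Sm f) (Sm f1)" unfolding Sm_def by (rule q1.proj_qvc[OF E2 E2 A1])
    moreover have "q1.qvc (?SS f) (?SS f1) = q1.qvc (Sm f) (Sm f1)"
      by (rule q1.qvc_cong) (simp_all add: SE)
    ultimately have "q1.qvc (?SS f) (?SS f1)" by simp
    then have vc1: "\<forall>v\<in>qverts \<Gamma>1. vc_holds \<Gamma>1 v (vval \<Gamma>1 (?SS f) v) (vdval \<Gamma>1 (?SS f1) v)"
      by (simp add: q1.qvc_def)
    show ?thesis using sup od vc1 by (intro PhiI) auto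
  qed
  have ST: "?SS (?TT f) = f" if f: "f \<in> Phi \<Gamma>1 lam" for f lam
  proof (intro ext)
    fix e1 x
    have z: "\<forall>e. e \<notin> qedges \<Gamma>1 \<longrightarrow> f e = (\<lambda>_. 0)" using f by (simp add: Phi_def)
    show "?SS (?TT f) e1 x = f e1 x"
    proof (cases "e1 \<in> qedges \<Gamma>1")
      case False
      then have "f e1 = (\<lambda>_. 0)" using z by blast
      then show ?thesis using False by (simp add: transplant_map_def)
    next
      case True
      obtain i j where ij: "e1 = (i,j)" by (cases e1)
      have ij1: "i < I1" "j < dd1 i" using True ij q1.QE by auto
      have TTe: "\<forall>p\<in>qedges \<Gamma>2. ?TT f p = Tm f p" using TE by simp
      have "?SS (?TT f) e1 x = (\<Sum>c<d. Bi1 i $$ (c,j) * q2.lift (?TT f) (aE (t fr.a0) (erep1 i), fr.a0*d + c) x)"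
        using SE[OF True] by (simp add: Sm_def q1.proj_def fr.ResF_def ij)
      also have "\<dots> = (\<Sum>c<d. Bi1 i $$ (c,j) * fr.IndF (q1.lift f) (aE (t fr.a0) (erep1 i), fr.a0*d + c) x)"
      proof (intro sum.cong refl)
        fix c assume "c \<in> {..<d}" then have c: "c < d" by simp
        have p: "fr.a0*d + c < m*d" using fr.bd_less[OF fr.a0(1) c] .
        show "Bi1 i $$ (c,j) * q2.lift (?TT f) (aE (t fr.a0) (erep1 i), fr.a0*d + c) x
            = Bi1 i $$ (c,j) * fr.IndF (q1.lift f) (aE (t fr.a0) (erep1 i), fr.a0*d + c) x"
          using q2.lift_cong[OF edgeS[OF ij1(1)] TTe] q2.lift_proj[OF E1 edgeS[OF ij1(1)] p]
          by (simp add: Tm_def)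
      qed
      also have "\<dots> = (\<Sum>c<d. Bi1 i $$ (c,j) * q1.lift f (erep1 i, c) x)"
      proof (intro sum.cong refl)
        fix c assume "c \<in> {..<d}" then have c: "c < d" by simp
        show "Bi1 i $$ (c,j) * fr.IndF (q1.lift f) (aE (t fr.a0) (erep1 i), fr.a0*d + c) x
            = Bi1 i $$ (c,j) * q1.lift f (erep1 i, c) x"
          using fr.res_ind[OF q1.erep_in[rule_format, OF ij1(1)] c, of "q1.lift f" x] by (simp add: fr.ResF_def)
      qed
      also have "\<dots> = q1.proj (q1.lift f) (i,j) x" by (simp add: q1.proj_def)
      also have "\<dots> = f (i,j) x" by (rule q1.proj_lift[OF ij1])
      finally show ?thesis using ij by simp
    qed
  qed
  have TS: "?TT (?SS f) = f" if f: "f \<in> Phi \<Gamma>2 lam" for f lam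
  proof (intro ext)
    fix e2 x
    have z: "\<forall>e. e \<notin> qedges \<Gamma>2 \<longrightarrow> f e = (\<lambda>_. 0)" using f by (simp add: Phi_def)
    show "?TT (?SS f) e2 x = f e2 x"
    proof (cases "e2 \<in> qedges \<Gamma>2")
      case False
      then have "f e2 = (\<lambda>_. 0)" using z by blast
      then show ?thesis using False by (simp add: transplant_map_def)
    next
      case True
      obtain i j where ij: "e2 = (i,j)" by (cases e2)
      have ij2: "i < I2" "j < dd2 i" using True ij q2.QE by auto
      have SSe: "\<forall>p\<in>qedges \<Gamma>1. ?SS f p = Sm f p" using SE by simp
      have "?TT (?SS f) e2 x = (\<Sum>c<m*d. Bi2 i $$ (c,j) * q1.lift (?SS f) (aE (inv\<^bsub>G\<^esub> (t (c div d))) (erep2 i), c mod d) x)"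
        using TE[OF True] by (simp add: Tm_def q2.proj_def fr.IndF_def ij)
      also have "\<dots> = (\<Sum>c<m*d. Bi2 i $$ (c,j) * fr.IndF (fr.ResF (q2.lift f)) (erep2 i, c) x)"
      proof (intro sum.cong refl)
        fix c assume "c \<in> {..<m*d}" then have c: "c < m*d" by simp
        have s: "c mod d < d" using fr.p_split[OF c] by simp
        show "Bi2 i $$ (c,j) * q1.lift (?SS f) (aE (inv\<^bsub>G\<^esub> (t (c div d))) (erep2 i), c mod d) x
            = Bi2 i $$ (c,j) * fr.IndF (fr.ResF (q2.lift f)) (erep2 i, c) x"
          using q1.lift_cong[OF edgeT[OF ij2(1) c] SSe] q1.lift_proj[OF E2 edgeT[OF ij2(1) c] s]
          by (simp add: Sm_def fr.IndF_def)
      qed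
      also have "\<dots> = (\<Sum>c<m*d. Bi2 i $$ (c,j) * q2.lift f (erep2 i, c) x)"
        using fr.ind_res[OF E2' q2.erep_in[rule_format, OF ij2(1)]] by (intro sum.cong refl) simp
      also have "\<dots> = q2.proj (q2.lift f) (i,j) x" by (simp add: q2.proj_def)
      also have "\<dots> = f (i,j) x" by (rule q2.proj_lift[OF ij2])
      finally show ?thesis using ij by simp
    qed
  qed
  show ?thesis unfolding transplantable_def
  proof (intro exI[of _ T] conjI allI)
    show "\<forall>e\<in>qedges \<Gamma>2. \<forall>e'\<in>qedges \<Gamma>1. qlen \<Gamma>2 e \<noteq> qlen \<Gamma>1 e' \<longrightarrow> T e e' = 0"
      using lenT by blast
    fix lam
    show "bij_betw ?TT (Phi \<Gamma>1 lam) (Phi \<Gamma>2 lam)"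
      by (rule bij_betwI[where g = ?SS]) (auto intro: TinPhi SinPhi ST TS)
  qed
qed

end
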